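(* Let $R$ be an arithmetic ring. Then any two pure-composition series of a finitely generated $R$-module, both with cyclic factors and with totally ordered annihilator sequences, are isomorphic.
   Context: All rings are commutative with identity. $R$ is arithmetic if $R_P$ is a valuation ring for every maximal ideal $P$. A pure-composition series of $M$ is a finite chain $\{0\}=M_0\subset\dots\subset M_n=M$ of pure submodules (pure: the inclusion stays injective after tensoring with any module). Its annihilator sequence is $(A_i)$ with $A_i=\mathrm{ann}(M_i/M_{i-1})$; it is totally ordered if $A_i,A_j$ are comparable under inclusion for all $i,j$. Two such series are isomorphic if there is a bijection between their sets of factors $M_i/M_{i-1}$ such that corresponding factors are isomorphic. *)

theory Defs
  imports "HOL-Algebra.Module" "HOL-Algebra.QuotRing"
begin

definition frac_rel :: "('r, 'm) ring_scheme \<Rightarrow> 'r set \<Rightarrow> 'r \<times> 'r \<Rightarrow> 'r \<times> 'r \<Rightarrow> bool" where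
  "frac_rel R S p q \<longleftrightarrow>
     (\<exists>w\<in>S. w \<otimes>\<^bsub>R\<^esub> (fst p \<otimes>\<^bsub>R\<^esub> snd q \<ominus>\<^bsub>R\<^esub> fst q \<otimes>\<^bsub>R\<^esub> snd p) = \<zero>\<^bsub>R\<^esub>)"

definition frac :: "('r, 'm) ring_scheme \<Rightarrow> 'r set \<Rightarrow> 'r \<Rightarrow> 'r \<Rightarrow> ('r \<times> 'r) set" where
  "frac R S a s = {q \<in> carrier R \<times> S. frac_rel R S (a, s) q}"

definition rep :: "'b set \<Rightarrow> 'b" where "rep U = (SOME x. x \<in> U)"

definition localization :: "('r, 'm) ring_scheme \<Rightarrow> 'r set \<Rightarrow> ('r \<times> 'r) set ring" where
  "localization R S =
    \<lparr> carrier = {frac R S a s | a s. a \<in> carrier R \<and> s \<in> S},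
      mult = (\<lambda>U V. frac R S (fst (rep U) \<otimes>\<^bsub>R\<^esub> fst (rep V)) (snd (rep U) \<otimes>\<^bsub>R\<^esub> snd (rep V))),
      one = frac R S \<one>\<^bsub>R\<^esub> \<one>\<^bsub>R\<^esub>,
      zero = frac R S \<zero>\<^bsub>R\<^esub> \<one>\<^bsub>R\<^esub>,
      add = (\<lambda>U V. frac R S (fst (rep U) \<otimes>\<^bsub>R\<^esub> snd (rep V) \<oplus>\<^bsub>R\<^esub> fst (rep V) \<otimes>\<^bsub>R\<^esub> snd (rep U))
                     (snd (rep U) \<otimes>\<^bsub>R\<^esub> snd (rep V))) \<rparr>"

text \<open>Valuation ring (in the sense of the paper, possibly with zero divisors):
  the ideals are totally ordered by inclusion.\<close>
definition valuation_ring :: "('b, 'n) ring_scheme \<Rightarrow> bool" where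
  "valuation_ring L \<longleftrightarrow> (\<forall>I J. ideal I L \<and> ideal J L \<longrightarrow> I \<subseteq> J \<or> J \<subseteq> I)"

definition arithmetic :: "('r, 'm) ring_scheme \<Rightarrow> bool" where
  "arithmetic R \<longleftrightarrow>
     (\<forall>P. maximalideal P R \<longrightarrow> valuation_ring (localization R (carrier R - P)))"

definition fin_gen :: "'r ring \<Rightarrow> ('r, 'a) module \<Rightarrow> bool" where
  "fin_gen R M \<longleftrightarrow> (\<exists>S. finite S \<and> S \<subseteq> carrier M \<and>
      carrier M = \<Inter>{H. submodule H R M \<and> S \<subseteq> H})"

definition quot_mod :: "'r ring \<Rightarrow> ('r, 'a) module \<Rightarrow> 'a set \<Rightarrow> ('r, 'a set) module" where
  "quot_mod R M N =
    \<lparr> carrier = a_rcosets\<^bsub>M\<^esub> N,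
      mult = (\<lambda>U V. N),
      one = N,
      zero = N,
      add = set_add M,
      smult = (\<lambda>r U. N +>\<^bsub>M\<^esub> (r \<odot>\<^bsub>M\<^esub> rep U)) \<rparr>"

definition cyclic_mod :: "'r ring \<Rightarrow> ('r, 'b) module \<Rightarrow> bool" where
  "cyclic_mod R Q \<longleftrightarrow> (\<exists>g\<in>carrier Q. carrier Q = {r \<odot>\<^bsub>Q\<^esub> g | r. r \<in> carrier R})"

definition ann :: "'r ring \<Rightarrow> ('r, 'b) module \<Rightarrow> 'r set" where
  "ann R Q = {r \<in> carrier R. \<forall>x\<in>carrier Q. r \<odot>\<^bsub>Q\<^esub> x = \<zero>\<^bsub>Q\<^esub>}"

definition mod_iso :: "'r ring \<Rightarrow> ('r, 'b) module \<Rightarrow> ('r, 'c) module \<Rightarrow> bool" where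
  "mod_iso R A B \<longleftrightarrow> (\<exists>f. bij_betw f (carrier A) (carrier B) \<and>
      (\<forall>x\<in>carrier A. \<forall>y\<in>carrier A. f (x \<oplus>\<^bsub>A\<^esub> y) = f x \<oplus>\<^bsub>B\<^esub> f y) \<and>
      (\<forall>r\<in>carrier R. \<forall>x\<in>carrier A. f (r \<odot>\<^bsub>A\<^esub> x) = r \<odot>\<^bsub>B\<^esub> f x))"

definition delta :: "'r ring \<Rightarrow> 'p \<Rightarrow> 'p \<Rightarrow> 'r" where
  "delta R q p = (if p = q then \<one>\<^bsub>R\<^esub> else \<zero>\<^bsub>R\<^esub>)"

text \<open>Generators of the relation submodule of the free module on carrier M \<times> carrier U;
  M \<otimes>_R U is the free module modulo their span.  Elements of the free module are
  finitely supported functions  'a \<times> 'x \<Rightarrow> 'r.\<close>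
definition tensor_gens :: "'r ring \<Rightarrow> ('r, 'a) module \<Rightarrow> ('r, 'x) module \<Rightarrow> ('a \<times> 'x \<Rightarrow> 'r) set" where
  "tensor_gens R M U =
     {(\<lambda>p. delta R (m \<oplus>\<^bsub>M\<^esub> m', x) p \<ominus>\<^bsub>R\<^esub> delta R (m, x) p \<ominus>\<^bsub>R\<^esub> delta R (m', x) p)
        | m m' x. m \<in> carrier M \<and> m' \<in> carrier M \<and> x \<in> carrier U}
   \<union> {(\<lambda>p. delta R (m, x \<oplus>\<^bsub>U\<^esub> x') p \<ominus>\<^bsub>R\<^esub> delta R (m, x) p \<ominus>\<^bsub>R\<^esub> delta R (m, x') p)
        | m x x'. m \<in> carrier M \<and> x \<in> carrier U \<and> x' \<in> carrier U}
   \<union> {(\<lambda>p. delta R (r \<odot>\<^bsub>M\<^esub> m, x) p \<ominus>\<^bsub>R\<^esub> r \<otimes>\<^bsub>R\<^esub> delta R (m, x) p)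
        | r m x. r \<in> carrier R \<and> m \<in> carrier M \<and> x \<in> carrier U}
   \<union> {(\<lambda>p. delta R (m, r \<odot>\<^bsub>U\<^esub> x) p \<ominus>\<^bsub>R\<^esub> r \<otimes>\<^bsub>R\<^esub> delta R (m, x) p)
        | r m x. r \<in> carrier R \<and> m \<in> carrier M \<and> x \<in> carrier U}"

inductive_set fun_span :: "'r ring \<Rightarrow> ('p \<Rightarrow> 'r) set \<Rightarrow> ('p \<Rightarrow> 'r) set"
  for R :: "'r ring" and G :: "('p \<Rightarrow> 'r) set" where
  zero: "(\<lambda>_. \<zero>\<^bsub>R\<^esub>) \<in> fun_span R G"
| step: "\<lbrakk>f \<in> fun_span R G; c \<in> carrier R; g \<in> G\<rbrakk>
          \<Longrightarrow> (\<lambda>p. f p \<oplus>\<^bsub>R\<^esub> c \<otimes>\<^bsub>R\<^esub> g p) \<in> fun_span R G"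

text \<open>The element of the free module over carrier M \<times> carrier U represented by f is zero
  in M \<otimes>_R U.\<close>
definition tensor_zero :: "'r ring \<Rightarrow> ('r, 'a) module \<Rightarrow> ('r, 'x) module \<Rightarrow> ('a \<times> 'x \<Rightarrow> 'r) \<Rightarrow> bool" where
  "tensor_zero R M U f \<longleftrightarrow> f \<in> fun_span R (tensor_gens R M U)"

text \<open>N is a pure submodule of M: N \<otimes> U \<rightarrow> M \<otimes> U is injective for every R-module U,
  i.e. every element of N \<otimes> U (represented by a finitely supported f on N \<times> U) that
  becomes zero in M \<otimes> U is already zero in N \<otimes> U.  Test modules U are taken with
  carrier type (nat \<Rightarrow> 'r) set, which contains copies of all finitely presented modules.\<close>
definition pure_sub :: "'r ring \<Rightarrow> ('r, 'a) module \<Rightarrow> 'a set \<Rightarrow> bool" where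
  "pure_sub R M N \<longleftrightarrow> submodule N R M \<and>
     (\<forall>U :: ('r, (nat \<Rightarrow> 'r) set) module. module R U \<longrightarrow>
       (\<forall>f. (\<forall>p. f p \<in> carrier R) \<and> finite {p. f p \<noteq> \<zero>\<^bsub>R\<^esub>} \<and>
            {p. f p \<noteq> \<zero>\<^bsub>R\<^esub>} \<subseteq> N \<times> carrier U \<longrightarrow>
            tensor_zero R M U f \<longrightarrow> tensor_zero R (M\<lparr>carrier := N\<rparr>) U f))"

definition pc_series :: "'r ring \<Rightarrow> ('r, 'a) module \<Rightarrow> nat \<Rightarrow> (nat \<Rightarrow> 'a set) \<Rightarrow> bool" where
  "pc_series R M n Ms \<longleftrightarrow>
     Ms 0 = {\<zero>\<^bsub>M\<^esub>} \<and> Ms n = carrier M \<and>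
     (\<forall>i\<in>{1..n}. Ms (i - 1) \<subset> Ms i) \<and>
     (\<forall>i\<le>n. pure_sub R M (Ms i))"

definition factor :: "'r ring \<Rightarrow> ('r, 'a) module \<Rightarrow> (nat \<Rightarrow> 'a set) \<Rightarrow> nat \<Rightarrow> ('r, 'a set) module" where
  "factor R M Ms i = quot_mod R (M\<lparr>carrier := Ms i\<rparr>) (Ms (i - 1))"

definition ann_tot_ordered :: "'r ring \<Rightarrow> ('r, 'a) module \<Rightarrow> nat \<Rightarrow> (nat \<Rightarrow> 'a set) \<Rightarrow> bool" where
  "ann_tot_ordered R M n Ms \<longleftrightarrow>
     (\<forall>i\<in>{1..n}. \<forall>j\<in>{1..n}. ann R (factor R M Ms i) \<subseteq> ann R (factor R M Ms j)
                            \<or> ann R (factor R M Ms j) \<subseteq> ann R (factor R M Ms i))"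

definition series_iso :: "'r ring \<Rightarrow> ('r, 'a) module \<Rightarrow> nat \<Rightarrow> (nat \<Rightarrow> 'a set) \<Rightarrow> nat \<Rightarrow> (nat \<Rightarrow> 'a set) \<Rightarrow> bool" where
  "series_iso R M n Ms m Ns \<longleftrightarrow>
     (\<exists>\<sigma>. bij_betw \<sigma> {1..n} {1..m} \<and>
        (\<forall>i\<in>{1..n}. mod_iso R (factor R M Ms i) (factor R M Ns (\<sigma> i))))"

end

theory Submission
  imports Defs
begin


locale modlat =
  fixes F :: "'a set set" and jn :: "'a set \<Rightarrow> 'a set \<Rightarrow> 'a set"
  assumes int_closed: "X \<in> F \<Longrightarrow> Y \<in> F \<Longrightarrow> X \<inter> Y \<in> F"
    and jn_closed: "X \<in> F \<Longrightarrow> Y \<in> F \<Longrightarrow> jn X Y \<in> F"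
    and jn_ub1: "X \<in> F \<Longrightarrow> Y \<in> F \<Longrightarrow> X \<subseteq> jn X Y"
    and jn_ub2: "X \<in> F \<Longrightarrow> Y \<in> F \<Longrightarrow> Y \<subseteq> jn X Y"
    and jn_least: "X \<in> F \<Longrightarrow> Y \<in> F \<Longrightarrow> Z \<in> F \<Longrightarrow> X \<subseteq> Z \<Longrightarrow> Y \<subseteq> Z \<Longrightarrow> jn X Y \<subseteq> Z"
    and modular: "X \<in> F \<Longrightarrow> Y \<in> F \<Longrightarrow> Z \<in> F \<Longrightarrow> X \<subseteq> Z \<Longrightarrow> jn X Y \<inter> Z = jn X (Y \<inter> Z)"
begin

definition covers :: "'a set \<Rightarrow> 'a set \<Rightarrow> bool" where
  "covers X Y \<longleftrightarrow> X \<subset> Y \<and> (\<forall>Z\<in>F. X \<subseteq> Z \<and> Z \<subseteq> Y \<longrightarrow> Z = X \<or> Z = Y)"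

definition good :: "(nat \<Rightarrow> 'a set) \<Rightarrow> nat \<Rightarrow> bool" where
  "good T k \<longleftrightarrow> (\<forall>i\<le>k. T i \<in> F) \<and> (\<forall>i<k. T i = T (Suc i) \<or> covers (T i) (T (Suc i)))"

definition cnt :: "(nat \<Rightarrow> 'a set) \<Rightarrow> nat \<Rightarrow> nat" where
  "cnt T k = card {i. i < k \<and> T i \<noteq> T (Suc i)}"

lemma jn_comm: "X \<in> F \<Longrightarrow> Y \<in> F \<Longrightarrow> jn X Y = jn Y X"
  by (meson jn_closed jn_least jn_ub1 jn_ub2 subset_antisym)

lemma jn_absorb: "X \<in> F \<Longrightarrow> Y \<in> F \<Longrightarrow> Y \<subseteq> X \<Longrightarrow> jn X Y = X"
  by (meson jn_least jn_ub1 order_refl subset_antisym)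

lemma good_step: "good T k \<Longrightarrow> i < k \<Longrightarrow> T i \<subseteq> T (Suc i)"
  unfolding good_def covers_def by auto

lemma good_mono: "good T k \<Longrightarrow> i \<le> j \<Longrightarrow> j \<le> k \<Longrightarrow> T i \<subseteq> T j"
proof (induction j)
  case 0 then show ?case by simp
next
  case (Suc j)
  show ?case
  proof (cases "i = Suc j")
    case True then show ?thesis by simp
  next
    case False
    then have "T i \<subseteq> T j" using Suc by simp
    also have "T j \<subseteq> T (Suc j)" using good_step[OF Suc(2)] Suc(4) by simp
    finally show ?thesis .
  qed
qed

lemma good_less: "good T (Suc k) \<Longrightarrow> good T k"
  unfolding good_def by auto

lemma cnt_Suc: "cnt T (Suc k) = cnt T k + (if T k \<noteq> T (Suc k) then 1 else 0)"
proof -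
  have "{i. i < Suc k \<and> T i \<noteq> T (Suc i)} = {i. i < k \<and> T i \<noteq> T (Suc i)} \<union> (if T k \<noteq> T (Suc k) then {k} else {})"
    by (auto simp: less_Suc_eq)
  then show ?thesis unfolding cnt_def by (simp add: card_insert_if)
qed

lemma cnt_const: "(\<forall>i<l. S i = S (Suc i)) \<Longrightarrow> cnt S l = 0"
  unfolding cnt_def by auto

lemma transpose_chain:
  assumes gS: "good S l" and VF: "V \<in> F" and UF: "U \<in> F" and cov: "covers V U"
    and S0: "S 0 \<subseteq> V" and Sl: "S l = U"
  shows "good (\<lambda>j. S j \<inter> V) l \<and> cnt S l = Suc (cnt (\<lambda>j. S j \<inter> V) l)"
proof -
  define W where "W j = S j \<inter> V" for j
  have SF: "\<And>j. j \<le> l \<Longrightarrow> S j \<in> F" using gS unfolding good_def by auto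
  have VU: "V \<subset> U" using cov unfolding covers_def by auto
  have ex: "\<exists>j. \<not> S j \<subseteq> V" using Sl VU by (intro exI[of _ l]) auto
  define j0 where "j0 = (LEAST j. \<not> S j \<subseteq> V)"
  have j0: "\<not> S j0 \<subseteq> V" unfolding j0_def using LeastI_ex[OF ex] .
  have bef: "\<And>j. j < j0 \<Longrightarrow> S j \<subseteq> V" unfolding j0_def using not_less_Least by blast
  have j0l: "j0 \<le> l" unfolding j0_def using Sl VU by (intro Least_le) auto
  have j0pos: "0 < j0" using S0 j0 by (cases j0) auto
  then obtain p where p: "j0 = Suc p" by (cases j0) auto
  have pl: "p < l" using j0l p by simp
  have after: "\<And>j. j0 \<le> j \<Longrightarrow> j \<le> l \<Longrightarrow> \<not> S j \<subseteq> V"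
    using good_mono[OF gS] j0 by blast
  have SU: "\<And>j. j \<le> l \<Longrightarrow> S j \<subseteq> U" using good_mono[OF gS] Sl by auto
  have jnU: "\<And>j. j0 \<le> j \<Longrightarrow> j \<le> l \<Longrightarrow> jn (S j) V = U"
  proof -
    fix j assume a: "j0 \<le> j" "j \<le> l"
    have "V \<subseteq> jn (S j) V" "jn (S j) V \<subseteq> U" "jn (S j) V \<in> F"
      using jn_ub2 jn_least jn_closed SF[OF a(2)] VF UF SU[OF a(2)] VU by auto
    moreover have "jn (S j) V \<noteq> V" using jn_ub1[OF SF[OF a(2)] VF] after[OF a] by auto
    ultimately show "jn (S j) V = U" using cov unfolding covers_def by blast
  qed
  have Sp: "S p \<subseteq> V" using bef p by simp
  have Sneq: "S p \<noteq> S j0" using Sp j0 by auto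
  have covp: "covers (S p) (S j0)" using gS pl Sneq p unfolding good_def by auto
  have Wp: "W p = S p" using Sp unfolding W_def by auto
  have Wj0: "W j0 = S p"
  proof -
    have "S p \<subseteq> S j0 \<inter> V" using Sp good_step[OF gS pl] p by auto
    moreover have "S j0 \<inter> V \<subseteq> S j0" by auto
    moreover have "S j0 \<inter> V \<in> F" using int_closed SF[OF j0l] VF by auto
    moreover have "S j0 \<inter> V \<noteq> S j0" using j0 by auto
    ultimately show ?thesis using covp unfolding covers_def W_def by blast
  qed
  have late: "\<And>j. j0 \<le> j \<Longrightarrow> j < l \<Longrightarrow>
      (S j \<noteq> S (Suc j) \<longleftrightarrow> W j \<noteq> W (Suc j)) \<and> (W j = W (Suc j) \<or> covers (W j) (W (Suc j)))"
  proof -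
    fix j assume a: "j0 \<le> j" "j < l"
    have Sj: "S j \<in> F" and Sj1: "S (Suc j) \<in> F" using SF a by auto
    have sub: "S j \<subseteq> S (Suc j)" using good_step[OF gS a(2)] .
    have WjF: "W j \<in> F" and Wj1F: "W (Suc j) \<in> F" using int_closed Sj Sj1 VF unfolding W_def by auto
    have U1: "jn (S j) V = U" using jnU a by auto
    have eq1: "W j = W (Suc j) \<Longrightarrow> S j = S (Suc j)"
    proof -
      assume e: "W j = W (Suc j)"
      have "S (Suc j) = jn (S j) V \<inter> S (Suc j)" using U1 SU[of "Suc j"] a by auto
      also have "\<dots> = jn (S j) (V \<inter> S (Suc j))" using modular[OF Sj VF Sj1 sub] .
      also have "V \<inter> S (Suc j) = W j" using e unfolding W_def by auto
      also have "jn (S j) (W j) = S j" using jn_absorb[OF Sj WjF] unfolding W_def by auto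
      finally show ?thesis by simp
    qed
    have eq2: "S j = S (Suc j) \<Longrightarrow> W j = W (Suc j)" unfolding W_def by simp
    show "(S j \<noteq> S (Suc j) \<longleftrightarrow> W j \<noteq> W (Suc j)) \<and> (W j = W (Suc j) \<or> covers (W j) (W (Suc j)))"
    proof (cases "S j = S (Suc j)")
      case True then show ?thesis using eq2 by auto
    next
      case False
      then have cv: "covers (S j) (S (Suc j))" using gS a unfolding good_def by auto
      have neq: "W j \<noteq> W (Suc j)" using eq1 False by auto
      have "covers (W j) (W (Suc j))"
        unfolding covers_def
      proof (intro conjI ballI impI)
        show "W j \<subset> W (Suc j)" using neq sub unfolding W_def by auto
        fix Z assume ZF: "Z \<in> F" and Z: "W j \<subseteq> Z \<and> Z \<subseteq> W (Suc j)"
        have ZV: "Z \<subseteq> V" using Z unfolding W_def by auto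
        have ZS: "Z \<subseteq> S (Suc j)" using Z unfolding W_def by auto
        have J: "jn (S j) Z \<in> F" "S j \<subseteq> jn (S j) Z" "jn (S j) Z \<subseteq> S (Suc j)"
          using jn_closed jn_ub1 jn_least Sj ZF Sj1 sub ZS by auto
        then have "jn (S j) Z = S j \<or> jn (S j) Z = S (Suc j)" using cv unfolding covers_def by blast
        then show "Z = W j \<or> Z = W (Suc j)"
        proof
          assume "jn (S j) Z = S j"
          then have "Z \<subseteq> S j" using jn_ub2[OF Sj ZF] by auto
          then show ?thesis using ZV Z unfolding W_def by auto
        next
          assume h: "jn (S j) Z = S (Suc j)"
          have "W (Suc j) = jn Z (S j) \<inter> V" using h jn_comm[OF Sj ZF] unfolding W_def by auto
          also have "\<dots> = jn Z (S j \<inter> V)" using modular[OF ZF Sj VF ZV] .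
          also have "\<dots> = Z" using jn_absorb[OF ZF] int_closed[OF Sj VF] Z unfolding W_def by auto
          finally show ?thesis by simp
        qed
      qed
      then show ?thesis using neq False by auto
    qed
  qed
  have good_W: "good W l"
    unfolding good_def
  proof (intro conjI allI impI)
    fix i assume "i \<le> l" then show "W i \<in> F" using int_closed SF VF unfolding W_def by auto
  next
    fix i assume il: "i < l"
    show "W i = W (Suc i) \<or> covers (W i) (W (Suc i))"
    proof (cases "i < p")
      case True
      then have "W i = S i" "W (Suc i) = S (Suc i)" using bef[of i] bef[of "Suc i"] p True unfolding W_def by auto
      then show ?thesis using gS il unfolding good_def by auto
    next
      case False
      show ?thesis
      proof (cases "i = p")
        case True then show ?thesis using Wp Wj0 p by simp
      next
        case False
        then have "j0 \<le> i" using \<open>\<not> i < p\<close> p by auto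
        then show ?thesis using late il by auto
      qed
    qed
  qed
  have sets: "{i. i < l \<and> S i \<noteq> S (Suc i)} = insert p {i. i < l \<and> W i \<noteq> W (Suc i)}"
  proof (rule Set.set_eqI, rule iffI)
    fix i assume "i \<in> {i. i < l \<and> S i \<noteq> S (Suc i)}"
    then have il: "i < l" and ne: "S i \<noteq> S (Suc i)" by auto
    show "i \<in> insert p {i. i < l \<and> W i \<noteq> W (Suc i)}"
    proof (cases "i < p")
      case True
      then have "W i = S i" "W (Suc i) = S (Suc i)" using bef[of i] bef[of "Suc i"] p True unfolding W_def by auto
      then show ?thesis using il ne by auto
    next
      case False
      then show ?thesis using late[of i] il ne p by (cases "i = p") auto
    qed
  next
    fix i assume "i \<in> insert p {i. i < l \<and> W i \<noteq> W (Suc i)}"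
    then show "i \<in> {i. i < l \<and> S i \<noteq> S (Suc i)}"
    proof
      assume "i = p" then show ?thesis using pl Sneq p by auto
    next
      assume "i \<in> {i. i < l \<and> W i \<noteq> W (Suc i)}"
      then have "i < l" "W i \<noteq> W (Suc i)" by auto
      then show ?thesis unfolding W_def by auto
    qed
  qed
  have pnot: "p \<notin> {i. i < l \<and> W i \<noteq> W (Suc i)}" using Wp Wj0 p by auto
  have "cnt S l = Suc (cnt W l)"
    unfolding cnt_def sets using pnot by (simp add: card_insert_if)
  then show ?thesis using good_W unfolding W_def by simp
qed

theorem jordan_hoelder:
  "good T k \<Longrightarrow> good Q l \<Longrightarrow> T 0 = Q 0 \<Longrightarrow> T k = Q l \<Longrightarrow> cnt T k = cnt Q l"
proof (induction k arbitrary: Q l)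
  case 0
  have "\<forall>i<l. Q i = Q (Suc i)"
  proof (intro allI impI)
    fix i assume "i < l"
    have "Q 0 \<subseteq> Q i" "Q i \<subseteq> Q (Suc i)" "Q (Suc i) \<subseteq> Q l"
      using good_mono[OF "0.prems"(2)] \<open>i < l\<close> by auto
    then show "Q i = Q (Suc i)" using "0.prems" by auto
  qed
  then show ?case using cnt_const[of l Q] by (simp add: cnt_def)
next
  case (Suc k)
  have gk: "good T k" using good_less[OF Suc.prems(1)] .
  show ?case
  proof (cases "T k = T (Suc k)")
    case True
    then have "cnt T (Suc k) = cnt T k" using cnt_Suc by simp
    also have "\<dots> = cnt Q l" using Suc.IH[OF gk Suc.prems(2,3)] Suc.prems(4) True by simp
    finally show ?thesis .
  next
    case False
    have cov: "covers (T k) (T (Suc k))" using Suc.prems(1) False unfolding good_def by auto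
    have TF: "T k \<in> F" "T (Suc k) \<in> F" using Suc.prems(1) unfolding good_def by auto
    have S0: "Q 0 \<subseteq> T k" using good_mono[OF gk, of 0 k] Suc.prems(3) by auto
    have tr: "good (\<lambda>j. Q j \<inter> T k) l \<and> cnt Q l = Suc (cnt (\<lambda>j. Q j \<inter> T k) l)"
      using transpose_chain[OF Suc.prems(2) TF cov S0] Suc.prems(4) by simp
    have e0: "T 0 = Q 0 \<inter> T k" using S0 Suc.prems(3) by auto
    have el: "T k = Q l \<inter> T k" using Suc.prems(4) good_step[OF Suc.prems(1)] by auto
    have "cnt T k = cnt (\<lambda>j. Q j \<inter> T k) l"
      using Suc.IH[OF gk] tr e0 el by auto
    then show ?thesis using tr False cnt_Suc[of T k] by simp
  qed
qed

end


lemma (in ring) chain_union_ideal: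
  assumes ch: "subset.chain {I. ideal I R} C" and ne: "C \<noteq> {}"
  shows "ideal (\<Union>C) R"
proof -
  have CI: "\<And>I. I \<in> C \<Longrightarrow> ideal I R" using ch unfolding pred_on.chain_def by auto
  have two: "\<exists>I\<in>C. x \<in> I \<and> y \<in> I" if "x \<in> \<Union>C" "y \<in> \<Union>C" for x y
  proof -
    from that(1) obtain I where I: "I \<in> C" "x \<in> I" by blast
    from that(2) obtain J where J: "J \<in> C" "y \<in> J" by blast
    have "I \<subseteq> J \<or> J \<subseteq> I" using ch I(1) J(1) unfolding pred_on.chain_def by auto
    then show ?thesis using I J by blast
  qed
  show ?thesis
  proof (rule idealI)
    show "ring R" by (rule ring_axioms)
    show "subgroup (\<Union>C) (add_monoid R)"
    proof
      show "\<Union>C \<subseteq> carrier (add_monoid R)"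
        using CI ideal.axioms(1) additive_subgroup.a_subset by fastforce
      obtain I where I: "I \<in> C" using ne by auto
      then show "\<one>\<^bsub>add_monoid R\<^esub> \<in> \<Union>C"
        using CI[OF I] ideal.axioms(1) additive_subgroup.zero_closed by fastforce
    next
      fix x y assume "x \<in> \<Union>C" "y \<in> \<Union>C"
      then obtain I where I: "I \<in> C" "x \<in> I" "y \<in> I" using two by blast
      have "x \<oplus> y \<in> I" using CI[OF I(1)] I ideal.axioms(1) additive_subgroup.a_closed by fastforce
      then show "x \<otimes>\<^bsub>add_monoid R\<^esub> y \<in> \<Union>C" using I by auto
    next
      fix x assume "x \<in> \<Union>C"
      then obtain I where I: "I \<in> C" "x \<in> I" by auto
      have "\<ominus> x \<in> I" using CI[OF I(1)] I ideal.axioms(1) additive_subgroup.a_inv_closed by fastforce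
      then show "inv\<^bsub>add_monoid R\<^esub> x \<in> \<Union>C" using I by (auto simp: a_inv_def)
    qed
  next
    fix a x assume "a \<in> \<Union>C" "x \<in> carrier R"
    then obtain I where I: "I \<in> C" "a \<in> I" by auto
    have "x \<otimes> a \<in> I" "a \<otimes> x \<in> I"
      using ideal.I_l_closed[OF CI[OF I(1)]] ideal.I_r_closed[OF CI[OF I(1)]] \<open>x \<in> carrier R\<close> I(2) by auto
    then show "x \<otimes> a \<in> \<Union>C" "a \<otimes> x \<in> \<Union>C" using I(1) by blast+
  qed
qed

lemma (in cring) krull:
  assumes B: "ideal B R" and one: "\<one> \<notin> B"
  shows "\<exists>P. maximalideal P R \<and> B \<subseteq> P"
proof -
  define A where "A = {I. ideal I R \<and> B \<subseteq> I \<and> \<one> \<notin> I}"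
  have "\<exists>P\<in>A. \<forall>X\<in>A. P \<subseteq> X \<longrightarrow> X = P"
  proof (rule subset_Zorn_nonempty)
    show "A \<noteq> {}" using B one unfolding A_def by auto
  next
    fix C assume C: "C \<noteq> {}" "subset.chain A C"
    have "subset.chain {I. ideal I R} C" using C(2) unfolding A_def pred_on.chain_def by auto
    then have "ideal (\<Union>C) R" using C(1) by (rule chain_union_ideal)
    moreover have "B \<subseteq> \<Union>C"
    proof -
      obtain I where "I \<in> C" using C(1) by auto
      then show ?thesis using C(2) unfolding A_def pred_on.chain_def by blast
    qed
    moreover have "\<one> \<notin> \<Union>C" using C unfolding A_def pred_on.chain_def by auto
    ultimately show "\<Union>C \<in> A" unfolding A_def by auto
  qed
  then obtain P where P: "P \<in> A" and Pm: "\<And>X. X \<in> A \<Longrightarrow> P \<subseteq> X \<Longrightarrow> X = P" by auto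
  have "maximalideal P R"
  proof (rule maximalidealI)
    show "ideal P R" using P unfolding A_def by auto
    show "carrier R \<noteq> P" using P unfolding A_def by auto
    fix J assume J: "ideal J R" "P \<subseteq> J" "J \<subseteq> carrier R"
    show "J = P \<or> J = carrier R"
    proof (cases "\<one> \<in> J")
      case True then show ?thesis using ideal.one_imp_carrier[OF J(1)] by auto
    next
      case False then have "J \<in> A" using J P unfolding A_def by auto
      then show ?thesis using Pm J by auto
    qed
  qed
  then show ?thesis using P unfolding A_def by auto
qed

lemma (in cring) maximal_inv:
  assumes P: "maximalideal P R" and r: "r \<in> carrier R" "r \<notin> P"
  shows "\<exists>s\<in>carrier R. s \<otimes> r \<ominus> \<one> \<in> P"
proof -
  interpret maximalideal P R by fact
  define Q where "Q = set_add R P (PIdl r)"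
  have Qe: "Q = {p \<oplus> s \<otimes> r | p s. p \<in> P \<and> s \<in> carrier R}"
    unfolding Q_def set_add_def' cgenideal_def by blast
  have I: "ideal Q R" unfolding Q_def using add_ideals[OF is_ideal cgenideal_ideal[OF r(1)]] .
  have sub: "P \<subseteq> Q"
  proof
    fix x assume x: "x \<in> P"
    have xc: "x \<in> carrier R" using x a_subset by auto
    have "x = x \<oplus> \<zero> \<otimes> r" using xc r by simp
    then show "x \<in> Q" unfolding Qe using x by blast
  qed
  have "r = \<zero> \<oplus> \<one> \<otimes> r" using r by simp
  then have "r \<in> Q" unfolding Qe using additive_subgroup.zero_closed[OF ideal.axioms(1)[OF is_ideal]] by blast
  then have ne: "Q \<noteq> P" using r by auto
  have "Q \<subseteq> carrier R" using ideal.axioms(1)[OF I] additive_subgroup.a_subset by blast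
  then have "Q = carrier R" using I_maximal[OF I sub] ne by auto
  then have "\<one> \<in> Q" by simp
  then obtain p s where ps: "p \<in> P" "s \<in> carrier R" "\<one> = p \<oplus> s \<otimes> r"
    unfolding Qe by blast
  have pc: "p \<in> carrier R" using ps a_subset by auto
  have "s \<otimes> r \<ominus> \<one> = \<ominus> p"
  proof -
    have "s \<otimes> r \<ominus> \<one> = s \<otimes> r \<ominus> (p \<oplus> s \<otimes> r)" using ps by simp
    also have "\<dots> = \<ominus> p" using ps pc r by (simp add: minus_eq minus_add a_ac r_neg2 r_neg)
    finally show ?thesis .
  qed
  then have "s \<otimes> r \<ominus> \<one> \<in> P" using ps a_inv_closed by simp
  then show ?thesis using ps(2) by blast
qed



context abelian_group
begin
lemma ag_c1: "x \<in> carrier G \<Longrightarrow> y \<in> carrier G \<Longrightarrow> x \<oplus> y \<ominus> x = y"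
  by (simp add: a_minus_def a_comm r_neg1)
lemma ag_c2: "x \<in> carrier G \<Longrightarrow> y \<in> carrier G \<Longrightarrow> x \<oplus> y \<ominus> y = x"
  by (simp add: a_minus_def a_assoc r_neg)
lemma ag_c3: "x \<in> carrier G \<Longrightarrow> y \<in> carrier G \<Longrightarrow> x \<ominus> y \<oplus> y = x"
  by (simp add: a_minus_def a_assoc l_neg)
lemma ag_c4: "x \<in> carrier G \<Longrightarrow> y \<in> carrier G \<Longrightarrow> y \<oplus> (x \<ominus> y) = x"
  by (metis ag_c3 a_comm minus_closed)
lemma ag_eq_sub: "x \<in> carrier G \<Longrightarrow> y \<in> carrier G \<Longrightarrow> z \<in> carrier G \<Longrightarrow> x = y \<oplus> z \<Longrightarrow> z = x \<ominus> y"
  by (simp add: ag_c1)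
lemma ag_sub_eq: "x \<in> carrier G \<Longrightarrow> y \<in> carrier G \<Longrightarrow> x \<ominus> y = \<zero> \<Longrightarrow> x = y"
  by (metis ag_c3 l_zero)
end

definition msum :: "('a, 'm) ring_scheme \<Rightarrow> 'a set \<Rightarrow> 'a set \<Rightarrow> 'a set" where
  "msum M X Y = {x \<oplus>\<^bsub>M\<^esub> y | x y. x \<in> X \<and> y \<in> Y}"

inductive_set gsub :: "('r, 'a, 'e) module_scheme \<Rightarrow> 'r set \<Rightarrow> 'a set \<Rightarrow> 'a set"
  for M :: "('r, 'a, 'e) module_scheme" and J :: "'r set" and X :: "'a set" where
  gz: "\<zero>\<^bsub>M\<^esub> \<in> gsub M J X"
| gs: "x \<in> gsub M J X \<Longrightarrow> j \<in> J \<Longrightarrow> y \<in> X \<Longrightarrow> x \<oplus>\<^bsub>M\<^esub> j \<odot>\<^bsub>M\<^esub> y \<in> gsub M J X"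

context Module.module
begin

lemma subm:
  assumes "submodule H R M"
  shows "H \<subseteq> carrier M" "\<zero>\<^bsub>M\<^esub> \<in> H" "\<And>a. a \<in> H \<Longrightarrow> \<ominus>\<^bsub>M\<^esub> a \<in> H"
    "\<And>a b. a \<in> carrier R \<Longrightarrow> b \<in> H \<Longrightarrow> a \<odot>\<^bsub>M\<^esub> b \<in> H"
    "\<And>a b. a \<in> H \<Longrightarrow> b \<in> H \<Longrightarrow> a \<oplus>\<^bsub>M\<^esub> b \<in> H"
    "\<And>a b. a \<in> H \<Longrightarrow> b \<in> H \<Longrightarrow> a \<ominus>\<^bsub>M\<^esub> b \<in> H"
proof -
  show "H \<subseteq> carrier M" "\<And>a. a \<in> H \<Longrightarrow> \<ominus>\<^bsub>M\<^esub> a \<in> H"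
    "\<And>a b. a \<in> carrier R \<Longrightarrow> b \<in> H \<Longrightarrow> a \<odot>\<^bsub>M\<^esub> b \<in> H"
    "\<And>a b. a \<in> H \<Longrightarrow> b \<in> H \<Longrightarrow> a \<oplus>\<^bsub>M\<^esub> b \<in> H"
    using submoduleE[OF assms] by auto
  then show "\<And>a b. a \<in> H \<Longrightarrow> b \<in> H \<Longrightarrow> a \<ominus>\<^bsub>M\<^esub> b \<in> H"
    by (simp add: a_minus_def)
  show "\<zero>\<^bsub>M\<^esub> \<in> H"
    using submoduleE(2,4)[OF assms] \<open>H \<subseteq> carrier M\<close> by (metis R.zero_closed ex_in_conv smult_l_null subsetD)
qed

lemma msum_submodule:
  assumes X: "submodule X R M" and Y: "submodule Y R M"
  shows "submodule (msum M X Y) R M"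
proof (rule submoduleI)
  note sx = subm[OF X] and sy = subm[OF Y]
  show "msum M X Y \<subseteq> carrier M" unfolding msum_def using sx(1) sy(1) by auto
  show "\<zero>\<^bsub>M\<^esub> \<in> msum M X Y" unfolding msum_def using sx(2) sy(2)
    by (intro CollectI exI[of _ "\<zero>\<^bsub>M\<^esub>"]) simp
  fix a assume "a \<in> msum M X Y"
  then obtain x y where xy: "a = x \<oplus>\<^bsub>M\<^esub> y" "x \<in> X" "y \<in> Y" unfolding msum_def by auto
  have c: "x \<in> carrier M" "y \<in> carrier M" using xy sx(1) sy(1) by auto
  have "\<ominus>\<^bsub>M\<^esub> a = (\<ominus>\<^bsub>M\<^esub> x) \<oplus>\<^bsub>M\<^esub> (\<ominus>\<^bsub>M\<^esub> y)" using xy c by (simp add: M.minus_add)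
  then show "\<ominus>\<^bsub>M\<^esub> a \<in> msum M X Y" unfolding msum_def using sx(3) sy(3) xy by blast
  fix r assume r: "r \<in> carrier R"
  have "r \<odot>\<^bsub>M\<^esub> a = r \<odot>\<^bsub>M\<^esub> x \<oplus>\<^bsub>M\<^esub> r \<odot>\<^bsub>M\<^esub> y" using xy c r by (simp add: smult_r_distr)
  then show "r \<odot>\<^bsub>M\<^esub> a \<in> msum M X Y" unfolding msum_def using sx(4) sy(4) xy r by blast
next
  note sx = subm[OF X] and sy = subm[OF Y]
  fix a b assume "a \<in> msum M X Y" "b \<in> msum M X Y"
  then obtain x y x' y' where xy: "a = x \<oplus>\<^bsub>M\<^esub> y" "x \<in> X" "y \<in> Y" "b = x' \<oplus>\<^bsub>M\<^esub> y'" "x' \<in> X" "y' \<in> Y"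
    unfolding msum_def by auto
  have c: "x \<in> carrier M" "y \<in> carrier M" "x' \<in> carrier M" "y' \<in> carrier M" using xy sx(1) sy(1) by auto
  have "a \<oplus>\<^bsub>M\<^esub> b = (x \<oplus>\<^bsub>M\<^esub> x') \<oplus>\<^bsub>M\<^esub> (y \<oplus>\<^bsub>M\<^esub> y')" using xy c by (simp add: M.a_ac)
  then show "a \<oplus>\<^bsub>M\<^esub> b \<in> msum M X Y" unfolding msum_def using sx(5) sy(5) xy by blast
qed

lemma msum_ub1: "submodule Y R M \<Longrightarrow> X \<subseteq> carrier M \<Longrightarrow> X \<subseteq> msum M X Y"
proof
  fix x assume Y: "submodule Y R M" and "X \<subseteq> carrier M" "x \<in> X"
  then have "x = x \<oplus>\<^bsub>M\<^esub> \<zero>\<^bsub>M\<^esub>" by auto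
  then show "x \<in> msum M X Y" unfolding msum_def using subm(2)[OF Y] \<open>x \<in> X\<close> by blast
qed

lemma msum_ub2: "submodule X R M \<Longrightarrow> Y \<subseteq> carrier M \<Longrightarrow> Y \<subseteq> msum M X Y"
proof
  fix y assume X: "submodule X R M" and "Y \<subseteq> carrier M" "y \<in> Y"
  then have "y = \<zero>\<^bsub>M\<^esub> \<oplus>\<^bsub>M\<^esub> y" by auto
  then show "y \<in> msum M X Y" unfolding msum_def using subm(2)[OF X] \<open>y \<in> Y\<close> by blast
qed

lemma msum_least: "submodule Z R M \<Longrightarrow> X \<subseteq> Z \<Longrightarrow> Y \<subseteq> Z \<Longrightarrow> msum M X Y \<subseteq> Z"
  unfolding msum_def using subm(5) by blast

lemma msum_modular:
  assumes X: "submodule X R M" and Y: "submodule Y R M" and Z: "submodule Z R M" and XZ: "X \<subseteq> Z"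
  shows "msum M X Y \<inter> Z = msum M X (Y \<inter> Z)"
proof (rule Set.set_eqI, rule iffI)
  fix a assume "a \<in> msum M X Y \<inter> Z"
  then obtain x y where xy: "a = x \<oplus>\<^bsub>M\<^esub> y" "x \<in> X" "y \<in> Y" "a \<in> Z" unfolding msum_def by auto
  have c: "x \<in> carrier M" "y \<in> carrier M" using xy subm(1)[OF X] subm(1)[OF Y] by auto
  have "y = a \<ominus>\<^bsub>M\<^esub> x" using xy c by (simp add: M.ag_c1)
  moreover have "a \<ominus>\<^bsub>M\<^esub> x \<in> Z" using subm(6)[OF Z] xy XZ by auto
  ultimately have "y \<in> Z" by simp
  then show "a \<in> msum M X (Y \<inter> Z)" unfolding msum_def using xy by blast
next
  fix a assume "a \<in> msum M X (Y \<inter> Z)"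
  then obtain x y where xy: "a = x \<oplus>\<^bsub>M\<^esub> y" "x \<in> X" "y \<in> Y" "y \<in> Z" unfolding msum_def by auto
  then have "a \<in> Z" using subm(5)[OF Z] XZ by auto
  then show "a \<in> msum M X Y \<inter> Z" unfolding msum_def using xy by blast
qed

lemma submodule_Int: "submodule X R M \<Longrightarrow> submodule Y R M \<Longrightarrow> submodule (X \<inter> Y) R M"
  by (rule submoduleI) (auto dest: subm)

lemma modlat_submodules: "modlat {X. submodule X R M} (msum M)"
proof
  fix X Y Z assume "X \<in> {X. submodule X R M}" "Y \<in> {X. submodule X R M}"
  then have X: "submodule X R M" and Y: "submodule Y R M" by auto
  show "X \<inter> Y \<in> {X. submodule X R M}" using submodule_Int[OF X Y] by simp
  show "msum M X Y \<in> {X. submodule X R M}" using msum_submodule[OF X Y] by simp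
  show "X \<subseteq> msum M X Y" using msum_ub1[OF Y subm(1)[OF X]] .
  show "Y \<subseteq> msum M X Y" using msum_ub2[OF X subm(1)[OF Y]] .
  assume "Z \<in> {X. submodule X R M}"
  then have Z: "submodule Z R M" by simp
  show "X \<subseteq> Z \<Longrightarrow> Y \<subseteq> Z \<Longrightarrow> msum M X Y \<subseteq> Z" using msum_least[OF Z] by auto
  show "X \<subseteq> Z \<Longrightarrow> msum M X Y \<inter> Z = msum M X (Y \<inter> Z)" using msum_modular[OF X Y Z] by auto
qed

lemma gsub_subset: "submodule X R M \<Longrightarrow> J \<subseteq> carrier R \<Longrightarrow> gsub M J X \<subseteq> X"
proof
  fix x assume X: "submodule X R M" and J: "J \<subseteq> carrier R" and x: "x \<in> gsub M J X"
  from x show "x \<in> X"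
    by (induction rule: gsub.induct) (use J in \<open>auto intro: subm[OF X]\<close>)
qed

lemma gsub_mem: "submodule X R M \<Longrightarrow> j \<in> J \<Longrightarrow> y \<in> X \<Longrightarrow> J \<subseteq> carrier R \<Longrightarrow> j \<odot>\<^bsub>M\<^esub> y \<in> gsub M J X"
proof -
  assume X: "submodule X R M" and "j \<in> J" "y \<in> X" "J \<subseteq> carrier R"
  then have "\<zero>\<^bsub>M\<^esub> \<oplus>\<^bsub>M\<^esub> j \<odot>\<^bsub>M\<^esub> y \<in> gsub M J X" by (intro gs gz)
  moreover have "j \<odot>\<^bsub>M\<^esub> y \<in> carrier M" using subm(1)[OF X] \<open>j \<in> J\<close> \<open>y \<in> X\<close> \<open>J \<subseteq> carrier R\<close> by auto
  ultimately show ?thesis by simp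
qed

lemma gsub_add: "b \<in> gsub M J X \<Longrightarrow> a \<in> gsub M J X \<Longrightarrow> submodule X R M \<Longrightarrow> J \<subseteq> carrier R \<Longrightarrow>
   a \<oplus>\<^bsub>M\<^esub> b \<in> gsub M J X"
proof (induction b rule: gsub.induct)
  case gz
  then show ?case using gsub_subset subm(1) by (metis M.r_zero subsetD)
next
  case (gs x j y)
  have c: "a \<in> carrier M" "x \<in> carrier M" "j \<odot>\<^bsub>M\<^esub> y \<in> carrier M"
    using gs gsub_subset subm(1) subm(4) by (auto, blast+)
  then have "a \<oplus>\<^bsub>M\<^esub> (x \<oplus>\<^bsub>M\<^esub> j \<odot>\<^bsub>M\<^esub> y) = (a \<oplus>\<^bsub>M\<^esub> x) \<oplus>\<^bsub>M\<^esub> j \<odot>\<^bsub>M\<^esub> y" by (simp add: M.a_ac)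
  then show ?case using gs by (auto intro: gsub.gs)
qed

lemma gsub_smult: "a \<in> gsub M J X \<Longrightarrow> ideal J R \<Longrightarrow> submodule X R M \<Longrightarrow> r \<in> carrier R \<Longrightarrow>
   r \<odot>\<^bsub>M\<^esub> a \<in> gsub M J X"
proof (induction a rule: gsub.induct)
  case gz
  then show ?case by (simp add: gsub.gz)
next
  case (gs x j y)
  have Jc: "J \<subseteq> carrier R" using gs(5) ideal.axioms(1) additive_subgroup.a_subset by blast
  have jc: "j \<in> carrier R" using Jc gs by auto
  have c: "x \<in> carrier M" "y \<in> carrier M"
    using gs gsub_subset[OF gs(6) Jc] subm(1)[OF gs(6)] by auto
  have "r \<odot>\<^bsub>M\<^esub> (x \<oplus>\<^bsub>M\<^esub> j \<odot>\<^bsub>M\<^esub> y) = r \<odot>\<^bsub>M\<^esub> x \<oplus>\<^bsub>M\<^esub> (r \<otimes> j) \<odot>\<^bsub>M\<^esub> y"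
    using c jc gs(7) by (simp add: smult_r_distr smult_assoc1)
  moreover have "r \<otimes> j \<in> J" using ideal.I_l_closed[OF gs(5)] gs jc by auto
  ultimately show ?case using gs by (auto intro: gsub.gs)
qed

lemma gsub_submodule: "ideal J R \<Longrightarrow> submodule X R M \<Longrightarrow> submodule (gsub M J X) R M"
proof -
  assume J: "ideal J R" and X: "submodule X R M"
  have Jc: "J \<subseteq> carrier R" using J ideal.axioms(1) additive_subgroup.a_subset by blast
  show ?thesis
  proof (rule submoduleI)
    show "gsub M J X \<subseteq> carrier M" using gsub_subset[OF X Jc] subm(1)[OF X] by auto
    show "\<zero>\<^bsub>M\<^esub> \<in> gsub M J X" by (rule gz)
    fix a assume a: "a \<in> gsub M J X"
    have ac: "a \<in> carrier M" using a gsub_subset[OF X Jc] subm(1)[OF X] by auto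
    have "\<ominus>\<^bsub>M\<^esub> a = (\<ominus> \<one>) \<odot>\<^bsub>M\<^esub> a" using ac by (simp add: smult_l_minus)
    then show "\<ominus>\<^bsub>M\<^esub> a \<in> gsub M J X" using gsub_smult[OF a J X] by simp
    show "\<And>r. r \<in> carrier R \<Longrightarrow> r \<odot>\<^bsub>M\<^esub> a \<in> gsub M J X" using gsub_smult[OF a J X] by simp
    fix b assume "b \<in> gsub M J X"
    then show "a \<oplus>\<^bsub>M\<^esub> b \<in> gsub M J X" using gsub_add a X Jc by blast
  qed
qed

end


definition cst :: "'r \<Rightarrow> nat \<Rightarrow> 'r" where "cst c = (\<lambda>_. c)"

definition cls :: "('r, 'm) ring_scheme \<Rightarrow> 'r set \<Rightarrow> 'r \<Rightarrow> (nat \<Rightarrow> 'r) set" where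
  "cls R J r = {cst (j \<oplus>\<^bsub>R\<^esub> r) | j. j \<in> J}"

definition rho :: "(nat \<Rightarrow> 'r) set \<Rightarrow> 'r" where "rho X = (SOME f. f \<in> X) 0"

definition Umod :: "('r, 'm) ring_scheme \<Rightarrow> 'r set \<Rightarrow> ('r, (nat \<Rightarrow> 'r) set) module" where
  "Umod R J = \<lparr> carrier = cls R J ` carrier R, Group.monoid.mult = (\<lambda>_ _. {}), Group.monoid.one = {},
     zero = cls R J \<zero>\<^bsub>R\<^esub>, add = (\<lambda>X Y. cls R J (rho X \<oplus>\<^bsub>R\<^esub> rho Y)),
     smult = (\<lambda>r X. cls R J (r \<otimes>\<^bsub>R\<^esub> rho X)) \<rparr>"

lemma cst_inj: "cst a = cst b \<longleftrightarrow> a = b"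
  unfolding cst_def by (metis)

context cring
begin

lemma rho_cls:
  assumes J: "ideal J R" and r: "r \<in> carrier R"
  shows "rho (cls R J r) \<in> carrier R \<and> rho (cls R J r) \<ominus> r \<in> J"
proof -
  interpret ideal J R by fact
  have "cst (\<zero> \<oplus> r) \<in> cls R J r" unfolding cls_def using additive_subgroup.zero_closed[OF ideal.axioms(1)[OF J]] by blast
  then have "(SOME f. f \<in> cls R J r) \<in> cls R J r" by (rule someI[where P="\<lambda>f. f \<in> cls R J r"])
  then obtain j where j: "j \<in> J" "(SOME f. f \<in> cls R J r) = cst (j \<oplus> r)" unfolding cls_def by auto
  have jc: "j \<in> carrier R" using j a_subset by auto
  have "rho (cls R J r) = j \<oplus> r" unfolding rho_def j(2) cst_def by simp
  moreover have "j \<oplus> r \<ominus> r = j" using jc r by algebra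
  ultimately show ?thesis using j jc r by auto
qed

lemma cls_eq:
  assumes J: "ideal J R" and r: "r \<in> carrier R" and s: "s \<in> carrier R"
  shows "cls R J r = cls R J s \<longleftrightarrow> r \<ominus> s \<in> J"
proof
  interpret ideal J R by fact
  assume e: "cls R J r = cls R J s"
  have "cst (\<zero> \<oplus> r) \<in> cls R J r" unfolding cls_def using additive_subgroup.zero_closed[OF ideal.axioms(1)[OF J]] by blast
  then have "cst (\<zero> \<oplus> r) \<in> cls R J s" using e by simp
  then obtain j where j: "j \<in> J" "\<zero> \<oplus> r = j \<oplus> s" unfolding cls_def by (auto simp: cst_inj)
  have jc: "j \<in> carrier R" using j a_subset by auto
  have rr: "r = j \<oplus> s" using j(2) r by simp
  have "j \<oplus> s \<ominus> s = j" using jc s by algebra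
  then have "r \<ominus> s = j" using rr by simp
  then show "r \<ominus> s \<in> J" using j by simp
next
  interpret ideal J R by fact
  assume d: "r \<ominus> s \<in> J"
  have dc: "r \<ominus> s \<in> carrier R" using r s by simp
  have A: "cls R J a \<subseteq> cls R J b" if "a \<in> carrier R" "b \<in> carrier R" "a \<ominus> b \<in> J" for a b
  proof
    fix f assume "f \<in> cls R J a"
    then obtain j where j: "j \<in> J" "f = cst (j \<oplus> a)" unfolding cls_def by auto
    have jc: "j \<in> carrier R" using j a_subset by auto
    have "j \<oplus> a = (j \<oplus> (a \<ominus> b)) \<oplus> b" using jc that by algebra
    moreover have "j \<oplus> (a \<ominus> b) \<in> J" using j that by (simp add: a_closed)
    ultimately show "f \<in> cls R J b" unfolding cls_def using j by auto
  qed
  have "s \<ominus> r \<in> J"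
  proof -
    have "s \<ominus> r = \<ominus> (r \<ominus> s)" using r s by algebra
    then show ?thesis using d a_inv_closed by simp
  qed
  then show "cls R J r = cls R J s" using A[of r s] A[of s r] r s d by auto
qed

lemma cls_rho:
  assumes J: "ideal J R" and r: "r \<in> carrier R"
  shows "cls R J (rho (cls R J r)) = cls R J r"
  using rho_cls[OF J r] cls_eq[OF J] r by auto

lemma Umod_add:
  assumes J: "ideal J R" and r: "r \<in> carrier R" and s: "s \<in> carrier R"
  shows "cls R J r \<oplus>\<^bsub>Umod R J\<^esub> cls R J s = cls R J (r \<oplus> s)"
proof -
  interpret ideal J R by fact
  note a = rho_cls[OF J r] and b = rho_cls[OF J s]
  have "rho (cls R J r) \<oplus> rho (cls R J s) \<ominus> (r \<oplus> s)
     = (rho (cls R J r) \<ominus> r) \<oplus> (rho (cls R J s) \<ominus> s)" using a b r s by algebra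
  also have "\<dots> \<in> J" using a b by (simp add: a_closed)
  finally show ?thesis unfolding Umod_def using cls_eq[OF J] a b r s by simp
qed

lemma Umod_smult:
  assumes J: "ideal J R" and r: "r \<in> carrier R" and t: "t \<in> carrier R"
  shows "t \<odot>\<^bsub>Umod R J\<^esub> cls R J r = cls R J (t \<otimes> r)"
proof -
  interpret ideal J R by fact
  note a = rho_cls[OF J r]
  have "t \<otimes> rho (cls R J r) \<ominus> t \<otimes> r = t \<otimes> (rho (cls R J r) \<ominus> r)" using a r t by algebra
  also have "\<dots> \<in> J" using a t by (simp add: I_l_closed)
  finally show ?thesis unfolding Umod_def using cls_eq[OF J] a r t by simp
qed

lemma Umod_carrier: "carrier (Umod R J) = cls R J ` carrier R"
  unfolding Umod_def by simp

lemma Umod_zero: "\<zero>\<^bsub>Umod R J\<^esub> = cls R J \<zero>"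
  unfolding Umod_def by simp

lemma Umod_module:
  assumes J: "ideal J R"
  shows "Module.module R (Umod R J)"
proof (rule moduleI)
  show "cring R" by (rule is_cring)
  show "abelian_group (Umod R J)"
  proof (rule abelian_groupI)
    fix x y z assume x: "x \<in> carrier (Umod R J)" and y: "y \<in> carrier (Umod R J)" and z: "z \<in> carrier (Umod R J)"
    obtain a b c where abc: "a \<in> carrier R" "b \<in> carrier R" "c \<in> carrier R"
      "x = cls R J a" "y = cls R J b" "z = cls R J c" using x y z unfolding Umod_carrier by auto
    show "x \<oplus>\<^bsub>Umod R J\<^esub> y \<in> carrier (Umod R J)" using abc Umod_add[OF J] unfolding Umod_carrier by auto
    show "x \<oplus>\<^bsub>Umod R J\<^esub> y \<oplus>\<^bsub>Umod R J\<^esub> z = x \<oplus>\<^bsub>Umod R J\<^esub> (y \<oplus>\<^bsub>Umod R J\<^esub> z)"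
      using abc by (simp add: Umod_add[OF J] a_assoc)
    show "x \<oplus>\<^bsub>Umod R J\<^esub> y = y \<oplus>\<^bsub>Umod R J\<^esub> x"
      using abc by (simp add: Umod_add[OF J] a_comm)
  next
    show "\<zero>\<^bsub>Umod R J\<^esub> \<in> carrier (Umod R J)" unfolding Umod_carrier Umod_zero by auto
  next
    fix x assume x: "x \<in> carrier (Umod R J)"
    obtain a where a: "a \<in> carrier R" "x = cls R J a" using x unfolding Umod_carrier by auto
    show "\<zero>\<^bsub>Umod R J\<^esub> \<oplus>\<^bsub>Umod R J\<^esub> x = x" using a by (simp add: Umod_zero Umod_add[OF J])
    have "cls R J (\<ominus> a) \<oplus>\<^bsub>Umod R J\<^esub> x = \<zero>\<^bsub>Umod R J\<^esub>" using a by (simp add: Umod_zero Umod_add[OF J] l_neg)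
    then show "\<exists>y\<in>carrier (Umod R J). y \<oplus>\<^bsub>Umod R J\<^esub> x = \<zero>\<^bsub>Umod R J\<^esub>" using a unfolding Umod_carrier by blast
  qed
next
  fix a b x y assume a: "a \<in> carrier R" and b: "b \<in> carrier R" and x: "x \<in> carrier (Umod R J)" and y: "y \<in> carrier (Umod R J)"
  obtain c d where cd: "c \<in> carrier R" "d \<in> carrier R" "x = cls R J c" "y = cls R J d"
    using x y unfolding Umod_carrier by auto
  show "a \<odot>\<^bsub>Umod R J\<^esub> x \<in> carrier (Umod R J)" using a cd by (simp add: Umod_smult[OF J] Umod_carrier)
  show "(a \<oplus> b) \<odot>\<^bsub>Umod R J\<^esub> x = a \<odot>\<^bsub>Umod R J\<^esub> x \<oplus>\<^bsub>Umod R J\<^esub> b \<odot>\<^bsub>Umod R J\<^esub> x"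
    using a b cd by (simp add: Umod_smult[OF J] Umod_add[OF J] l_distr)
  show "a \<odot>\<^bsub>Umod R J\<^esub> (x \<oplus>\<^bsub>Umod R J\<^esub> y) = a \<odot>\<^bsub>Umod R J\<^esub> x \<oplus>\<^bsub>Umod R J\<^esub> a \<odot>\<^bsub>Umod R J\<^esub> y"
    using a cd by (simp add: Umod_smult[OF J] Umod_add[OF J] r_distr)
  show "(a \<otimes> b) \<odot>\<^bsub>Umod R J\<^esub> x = a \<odot>\<^bsub>Umod R J\<^esub> (b \<odot>\<^bsub>Umod R J\<^esub> x)"
    using a b cd by (simp add: Umod_smult[OF J] m_assoc)
next
  fix x assume x: "x \<in> carrier (Umod R J)"
  obtain c where c: "c \<in> carrier R" "x = cls R J c" using x unfolding Umod_carrier by auto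
  show "\<one> \<odot>\<^bsub>Umod R J\<^esub> x = x" using c by (simp add: Umod_smult[OF J])
qed

end

lemma span_vals:
  assumes "ring R" "\<forall>g\<in>G. \<forall>p. g p \<in> carrier R" "f \<in> fun_span R G"
  shows "f p \<in> carrier R"
  using assms(3)
proof (induction rule: fun_span.induct)
  case zero then show ?case using ring.ring_simprules(2)[OF assms(1)] by simp
next
  case (step f c g) then show ?case using assms(1,2) by (simp add: ring.ring_simprules(1,5)[OF assms(1)])
qed

lemma span_add:
  assumes R: "ring R" and G: "\<forall>g\<in>G. \<forall>p. g p \<in> carrier R"
    and h: "h \<in> fun_span R G" and f: "f \<in> fun_span R G"
  shows "(\<lambda>p. f p \<oplus>\<^bsub>R\<^esub> h p) \<in> fun_span R G"
  using h
proof (induction rule: fun_span.induct)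
  case zero
  interpret ring R by fact
  have "(\<lambda>p. f p \<oplus>\<^bsub>R\<^esub> \<zero>\<^bsub>R\<^esub>) = f" using span_vals[OF R G f] by auto
  then show ?case using f by simp
next
  case (step h c g)
  interpret ring R by fact
  have "(\<lambda>p. (f p \<oplus>\<^bsub>R\<^esub> h p) \<oplus>\<^bsub>R\<^esub> c \<otimes>\<^bsub>R\<^esub> g p) \<in> fun_span R G"
    by (rule fun_span.step[OF step.IH step.hyps(2,3)])
  moreover have "(\<lambda>p. (f p \<oplus>\<^bsub>R\<^esub> h p) \<oplus>\<^bsub>R\<^esub> c \<otimes>\<^bsub>R\<^esub> g p) = (\<lambda>p. f p \<oplus>\<^bsub>R\<^esub> (h p \<oplus>\<^bsub>R\<^esub> c \<otimes>\<^bsub>R\<^esub> g p))"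
  proof
    fix p
    have "f p \<in> carrier R" "h p \<in> carrier R" "g p \<in> carrier R"
      using span_vals[OF R G f] span_vals[OF R G step.hyps(1)] G step.hyps(3) by auto
    then show "(f p \<oplus>\<^bsub>R\<^esub> h p) \<oplus>\<^bsub>R\<^esub> c \<otimes>\<^bsub>R\<^esub> g p = f p \<oplus>\<^bsub>R\<^esub> (h p \<oplus>\<^bsub>R\<^esub> c \<otimes>\<^bsub>R\<^esub> g p)"
      using step.hyps(2) by algebra
  qed
  ultimately show ?case by simp
qed

lemma span_smult:
  assumes R: "ring R" and G: "\<forall>g\<in>G. \<forall>p. g p \<in> carrier R"
    and f: "f \<in> fun_span R G" and c: "c \<in> carrier R"
  shows "(\<lambda>p. c \<otimes>\<^bsub>R\<^esub> f p) \<in> fun_span R G"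
  using f
proof (induction rule: fun_span.induct)
  case zero
  interpret ring R by fact
  have e: "(\<lambda>p. c \<otimes>\<^bsub>R\<^esub> \<zero>\<^bsub>R\<^esub>) = (\<lambda>_. \<zero>\<^bsub>R\<^esub>)" using c by auto
  show ?case unfolding e by (rule fun_span.zero)
next
  case (step f d g)
  interpret ring R by fact
  have "(\<lambda>p. c \<otimes>\<^bsub>R\<^esub> f p \<oplus>\<^bsub>R\<^esub> (c \<otimes>\<^bsub>R\<^esub> d) \<otimes>\<^bsub>R\<^esub> g p) \<in> fun_span R G"
    using step c by (intro fun_span.step) auto
  moreover have "(\<lambda>p. c \<otimes>\<^bsub>R\<^esub> f p \<oplus>\<^bsub>R\<^esub> (c \<otimes>\<^bsub>R\<^esub> d) \<otimes>\<^bsub>R\<^esub> g p) = (\<lambda>p. c \<otimes>\<^bsub>R\<^esub> (f p \<oplus>\<^bsub>R\<^esub> d \<otimes>\<^bsub>R\<^esub> g p))"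
  proof
    fix p
    have "f p \<in> carrier R" "g p \<in> carrier R"
      using span_vals[OF R G step.hyps(1)] G step.hyps(3) by auto
    then show "c \<otimes>\<^bsub>R\<^esub> f p \<oplus>\<^bsub>R\<^esub> (c \<otimes>\<^bsub>R\<^esub> d) \<otimes>\<^bsub>R\<^esub> g p = c \<otimes>\<^bsub>R\<^esub> (f p \<oplus>\<^bsub>R\<^esub> d \<otimes>\<^bsub>R\<^esub> g p)"
      using step.hyps(2) c by algebra
  qed
  ultimately show ?case by simp
qed

lemma span_gen:
  assumes R: "ring R" and G: "\<forall>g\<in>G. \<forall>p. g p \<in> carrier R" and g: "g \<in> G"
  shows "g \<in> fun_span R G"
proof -
  have "(\<lambda>p. \<zero>\<^bsub>R\<^esub> \<oplus>\<^bsub>R\<^esub> \<one>\<^bsub>R\<^esub> \<otimes>\<^bsub>R\<^esub> g p) \<in> fun_span R G"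
    using g ring.ring_simprules(6)[OF R] by (intro fun_span.step fun_span.zero) auto
  moreover have "(\<lambda>p. \<zero>\<^bsub>R\<^esub> \<oplus>\<^bsub>R\<^esub> \<one>\<^bsub>R\<^esub> \<otimes>\<^bsub>R\<^esub> g p) = g"
    using G g by (auto simp: ring.ring_simprules(8,12)[OF R] ring.ring_simprules(5,6)[OF R])
  ultimately show ?thesis by simp
qed

lemma span_cong: "f \<in> fun_span R G \<Longrightarrow> (\<And>p. f p = h p) \<Longrightarrow> h \<in> fun_span R G"
proof -
  assume "f \<in> fun_span R G" "\<And>p. f p = h p"
  moreover have "f = h" using \<open>\<And>p. f p = h p\<close> by auto
  ultimately show ?thesis by simp
qed

lemma delta_closed: "ring R \<Longrightarrow> delta R q p \<in> carrier R"
  unfolding delta_def using ring.ring_simprules(2,6) by auto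

lemma gens_vals:
  assumes R: "ring R" and g: "g \<in> tensor_gens R A U"
  shows "g p \<in> carrier R"
proof -
  interpret ring R by fact
  show ?thesis using g
    unfolding tensor_gens_def by (auto intro!: minus_closed m_closed delta_closed[OF R])
qed

lemma gens_vals': "ring R \<Longrightarrow> \<forall>g\<in>tensor_gens R A U. \<forall>p. g p \<in> carrier R"
  using gens_vals by blast


locale mymod = Module.module R M for R :: "'r ring" (structure) and M :: "('r, 'a) module" (structure)

lemma mymodI: "Module.module R M \<Longrightarrow> mymod R M"
  unfolding mymod_def .

context mymod
begin

lemma tz_gsub:
  assumes J: "ideal J R" and x: "x \<in> gsub M J (carrier M)"
  shows "(\<lambda>p. delta R (x, cls R J \<one>\<^bsub>R\<^esub>) p) \<in> fun_span R (tensor_gens R M (Umod R J))"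
proof -
  interpret ideal J R by fact
  define U where "U = Umod R J"
  define u0 where "u0 = cls R J \<one>"
  define G where "G = tensor_gens R M U"
  have Gv: "\<forall>g\<in>G. \<forall>p. g p \<in> carrier R" unfolding G_def by (rule gens_vals'[OF ring_axioms])
  have UM: "Module.module R U" unfolding U_def by (rule Umod_module[OF J])
  interpret U: Module.module R U by fact
  have u0c: "u0 \<in> carrier U" unfolding u0_def U_def Umod_carrier by auto
  have dc: "\<And>q p. delta R q p \<in> carrier R" by (rule delta_closed[OF ring_axioms])
  have D0: "(\<lambda>p. delta R (y, \<zero>\<^bsub>U\<^esub>) p) \<in> fun_span R G" if y: "y \<in> carrier M" for y
  proof -
    have "(\<lambda>p. delta R (y, \<zero>\<^bsub>U\<^esub> \<oplus>\<^bsub>U\<^esub> \<zero>\<^bsub>U\<^esub>) p \<ominus> delta R (y, \<zero>\<^bsub>U\<^esub>) p \<ominus> delta R (y, \<zero>\<^bsub>U\<^esub>) p) \<in> G"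
      unfolding G_def tensor_gens_def using y by blast
    then have g: "(\<lambda>p. delta R (y, \<zero>\<^bsub>U\<^esub>) p \<ominus> delta R (y, \<zero>\<^bsub>U\<^esub>) p \<ominus> delta R (y, \<zero>\<^bsub>U\<^esub>) p) \<in> G"
      by simp
    have "(\<lambda>p. (\<ominus> \<one>) \<otimes> (delta R (y, \<zero>\<^bsub>U\<^esub>) p \<ominus> delta R (y, \<zero>\<^bsub>U\<^esub>) p \<ominus> delta R (y, \<zero>\<^bsub>U\<^esub>) p)) \<in> fun_span R G"
      by (rule span_smult[OF ring_axioms Gv span_gen[OF ring_axioms Gv g]]) simp
    then show ?thesis
    proof (rule span_cong)
      fix p
      have "delta R (y, \<zero>\<^bsub>U\<^esub>) p \<in> carrier R" by (rule dc)
      then show "(\<ominus> \<one>) \<otimes> (delta R (y, \<zero>\<^bsub>U\<^esub>) p \<ominus> delta R (y, \<zero>\<^bsub>U\<^esub>) p \<ominus> delta R (y, \<zero>\<^bsub>U\<^esub>) p) = delta R (y, \<zero>\<^bsub>U\<^esub>) p"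
        by algebra
    qed
  qed
  have Dz: "(\<lambda>p. delta R (\<zero>\<^bsub>M\<^esub>, u0) p) \<in> fun_span R G"
  proof -
    have "(\<lambda>p. delta R (\<zero>\<^bsub>M\<^esub> \<oplus>\<^bsub>M\<^esub> \<zero>\<^bsub>M\<^esub>, u0) p \<ominus> delta R (\<zero>\<^bsub>M\<^esub>, u0) p \<ominus> delta R (\<zero>\<^bsub>M\<^esub>, u0) p) \<in> G"
      unfolding G_def tensor_gens_def using u0c by blast
    then have g: "(\<lambda>p. delta R (\<zero>\<^bsub>M\<^esub>, u0) p \<ominus> delta R (\<zero>\<^bsub>M\<^esub>, u0) p \<ominus> delta R (\<zero>\<^bsub>M\<^esub>, u0) p) \<in> G"
      by simp
    have "(\<lambda>p. (\<ominus> \<one>) \<otimes> (delta R (\<zero>\<^bsub>M\<^esub>, u0) p \<ominus> delta R (\<zero>\<^bsub>M\<^esub>, u0) p \<ominus> delta R (\<zero>\<^bsub>M\<^esub>, u0) p)) \<in> fun_span R G"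
      by (rule span_smult[OF ring_axioms Gv span_gen[OF ring_axioms Gv g]]) simp
    then show ?thesis
    proof (rule span_cong)
      fix p
      have "delta R (\<zero>\<^bsub>M\<^esub>, u0) p \<in> carrier R" by (rule dc)
      then show "(\<ominus> \<one>) \<otimes> (delta R (\<zero>\<^bsub>M\<^esub>, u0) p \<ominus> delta R (\<zero>\<^bsub>M\<^esub>, u0) p \<ominus> delta R (\<zero>\<^bsub>M\<^esub>, u0) p) = delta R (\<zero>\<^bsub>M\<^esub>, u0) p"
        by algebra
    qed
  qed
  have ju0: "j \<odot>\<^bsub>U\<^esub> u0 = \<zero>\<^bsub>U\<^esub>" if j: "j \<in> J" for j
  proof -
    have jc: "j \<in> carrier R" using j a_subset by auto
    have "j \<odot>\<^bsub>U\<^esub> u0 = cls R J (j \<otimes> \<one>)" unfolding U_def u0_def using Umod_smult[OF J] jc by simp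
    also have "\<dots> = cls R J \<zero>" using cls_eq[OF J] jc j by (simp add: a_minus_def minus_zero)
    finally show ?thesis unfolding U_def Umod_zero .
  qed
  from x show ?thesis
  proof (induction rule: gsub.induct)
    case gz
    then show ?case using Dz unfolding u0_def G_def U_def by simp
  next
    case (gs x j y)
    have jc: "j \<in> carrier R" using gs a_subset by auto
    have xc: "x \<in> carrier M" using gs.hyps(1) gsub_subset[OF carrier_is_submodule a_subset] by auto
    have yc: "y \<in> carrier M" using gs by auto
    have jyc: "j \<odot>\<^bsub>M\<^esub> y \<in> carrier M" using jc yc by simp
    define a where "a = x \<oplus>\<^bsub>M\<^esub> j \<odot>\<^bsub>M\<^esub> y"
    have g1: "(\<lambda>p. delta R (a, u0) p \<ominus> delta R (x, u0) p \<ominus> delta R (j \<odot>\<^bsub>M\<^esub> y, u0) p) \<in> G"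
      unfolding G_def tensor_gens_def a_def using xc jyc u0c by blast
    have g3: "(\<lambda>p. delta R (j \<odot>\<^bsub>M\<^esub> y, u0) p \<ominus> j \<otimes> delta R (y, u0) p) \<in> G"
      unfolding G_def tensor_gens_def using jc yc u0c by blast
    have g4': "(\<lambda>p. delta R (y, j \<odot>\<^bsub>U\<^esub> u0) p \<ominus> j \<otimes> delta R (y, u0) p) \<in> G"
      unfolding G_def tensor_gens_def using jc yc u0c by blast
    have g4: "(\<lambda>p. delta R (y, \<zero>\<^bsub>U\<^esub>) p \<ominus> j \<otimes> delta R (y, u0) p) \<in> G"
      using g4' ju0[OF gs.hyps(2)] by simp
    have S1: "(\<lambda>p. delta R (x, u0) p) \<in> fun_span R G" using gs.IH unfolding u0_def G_def U_def .
    have S2: "(\<lambda>p. (\<ominus> \<one>) \<otimes> (delta R (y, \<zero>\<^bsub>U\<^esub>) p \<ominus> j \<otimes> delta R (y, u0) p)) \<in> fun_span R G"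
      by (rule span_smult[OF ring_axioms Gv span_gen[OF ring_axioms Gv g4]]) simp
    have S3: "(\<lambda>p. (\<ominus> \<one>) \<otimes> (delta R (y, \<zero>\<^bsub>U\<^esub>) p \<ominus> j \<otimes> delta R (y, u0) p) \<oplus> delta R (y, \<zero>\<^bsub>U\<^esub>) p) \<in> fun_span R G"
      by (rule span_add[OF ring_axioms Gv D0[OF yc] S2])
    have S4: "(\<lambda>p. (delta R (j \<odot>\<^bsub>M\<^esub> y, u0) p \<ominus> j \<otimes> delta R (y, u0) p) \<oplus>
        ((\<ominus> \<one>) \<otimes> (delta R (y, \<zero>\<^bsub>U\<^esub>) p \<ominus> j \<otimes> delta R (y, u0) p) \<oplus> delta R (y, \<zero>\<^bsub>U\<^esub>) p)) \<in> fun_span R G"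
      by (rule span_add[OF ring_axioms Gv S3 span_gen[OF ring_axioms Gv g3]])
    have S5: "(\<lambda>p. (delta R (a, u0) p \<ominus> delta R (x, u0) p \<ominus> delta R (j \<odot>\<^bsub>M\<^esub> y, u0) p) \<oplus> delta R (x, u0) p) \<in> fun_span R G"
      by (rule span_add[OF ring_axioms Gv S1 span_gen[OF ring_axioms Gv g1]])
    have S6: "(\<lambda>p. ((delta R (a, u0) p \<ominus> delta R (x, u0) p \<ominus> delta R (j \<odot>\<^bsub>M\<^esub> y, u0) p) \<oplus> delta R (x, u0) p) \<oplus>
        ((delta R (j \<odot>\<^bsub>M\<^esub> y, u0) p \<ominus> j \<otimes> delta R (y, u0) p) \<oplus>
        ((\<ominus> \<one>) \<otimes> (delta R (y, \<zero>\<^bsub>U\<^esub>) p \<ominus> j \<otimes> delta R (y, u0) p) \<oplus> delta R (y, \<zero>\<^bsub>U\<^esub>) p))) \<in> fun_span R G"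
      by (rule span_add[OF ring_axioms Gv S4 S5])
    have "(\<lambda>p. delta R (a, u0) p) \<in> fun_span R G"
      using S6
    proof (rule span_cong)
      fix p
      have "delta R (a, u0) p \<in> carrier R" "delta R (x, u0) p \<in> carrier R" "delta R (j \<odot>\<^bsub>M\<^esub> y, u0) p \<in> carrier R"
        "delta R (y, u0) p \<in> carrier R" "delta R (y, \<zero>\<^bsub>U\<^esub>) p \<in> carrier R" by (rule dc)+
      then show "((delta R (a, u0) p \<ominus> delta R (x, u0) p \<ominus> delta R (j \<odot>\<^bsub>M\<^esub> y, u0) p) \<oplus> delta R (x, u0) p) \<oplus>
        ((delta R (j \<odot>\<^bsub>M\<^esub> y, u0) p \<ominus> j \<otimes> delta R (y, u0) p) \<oplus>
        ((\<ominus> \<one>) \<otimes> (delta R (y, \<zero>\<^bsub>U\<^esub>) p \<ominus> j \<otimes> delta R (y, u0) p) \<oplus> delta R (y, \<zero>\<^bsub>U\<^esub>) p)) = delta R (a, u0) p"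
        using jc by algebra
    qed
    then show ?case unfolding a_def u0_def G_def U_def .
  qed
qed


end

definition PhiS :: "'r ring \<Rightarrow> ('r, 'a) module \<Rightarrow> ('a \<times> (nat \<Rightarrow> 'r) set) set \<Rightarrow> ('a \<times> (nat \<Rightarrow> 'r) set \<Rightarrow> 'r) \<Rightarrow> 'a" where
  "PhiS R M S f = finsum M (\<lambda>p. (f p \<otimes>\<^bsub>R\<^esub> rho (snd p)) \<odot>\<^bsub>M\<^esub> fst p) S"

context mymod
begin

lemma rhoU: "ideal J R \<Longrightarrow> u \<in> carrier (Umod R J) \<Longrightarrow> rho u \<in> carrier R"
  unfolding Umod_carrier using rho_cls by auto

lemma smult_minus_l: "a \<in> carrier R \<Longrightarrow> b \<in> carrier R \<Longrightarrow> m \<in> carrier M \<Longrightarrow>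
   (a \<ominus> b) \<odot>\<^bsub>M\<^esub> m = a \<odot>\<^bsub>M\<^esub> m \<ominus>\<^bsub>M\<^esub> b \<odot>\<^bsub>M\<^esub> m"
  by (simp add: a_minus_def a_minus_def smult_l_distr smult_l_minus)

lemma Phi_term_closed:
  assumes J: "ideal J R" and S: "S \<subseteq> carrier M \<times> carrier (Umod R J)" and f: "\<forall>p. f p \<in> carrier R"
  shows "(\<lambda>p. (f p \<otimes> rho (snd p)) \<odot>\<^bsub>M\<^esub> fst p) \<in> S \<rightarrow> carrier M"
  using S f rhoU[OF J] by auto

lemma Phi_closed:
  assumes J: "ideal J R" and S: "S \<subseteq> carrier M \<times> carrier (Umod R J)" and f: "\<forall>p. f p \<in> carrier R"
  shows "PhiS R M S f \<in> carrier M"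
  unfolding PhiS_def using Phi_term_closed[OF J S f] by (rule M.finsum_closed)

lemma Phi_add:
  assumes J: "ideal J R" and S: "S \<subseteq> carrier M \<times> carrier (Umod R J)"
    and f: "\<forall>p. f p \<in> carrier R" and g: "\<forall>p. g p \<in> carrier R"
  shows "PhiS R M S (\<lambda>p. f p \<oplus> g p) = PhiS R M S f \<oplus>\<^bsub>M\<^esub> PhiS R M S g"
proof -
  have "PhiS R M S (\<lambda>p. f p \<oplus> g p) = finsum M (\<lambda>p. (f p \<otimes> rho (snd p)) \<odot>\<^bsub>M\<^esub> fst p \<oplus>\<^bsub>M\<^esub> (g p \<otimes> rho (snd p)) \<odot>\<^bsub>M\<^esub> fst p) S"
    unfolding PhiS_def
  proof (rule M.finsum_cong')
    show "(\<lambda>p. (f p \<otimes> rho (snd p)) \<odot>\<^bsub>M\<^esub> fst p \<oplus>\<^bsub>M\<^esub> (g p \<otimes> rho (snd p)) \<odot>\<^bsub>M\<^esub> fst p) \<in> S \<rightarrow> carrier M"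
      using Phi_term_closed[OF J S f] Phi_term_closed[OF J S g] by auto
    fix p assume p: "p \<in> S"
    then have "rho (snd p) \<in> carrier R" "fst p \<in> carrier M" using S rhoU[OF J] by auto
    then show "((f p \<oplus> g p) \<otimes> rho (snd p)) \<odot>\<^bsub>M\<^esub> fst p = (f p \<otimes> rho (snd p)) \<odot>\<^bsub>M\<^esub> fst p \<oplus>\<^bsub>M\<^esub> (g p \<otimes> rho (snd p)) \<odot>\<^bsub>M\<^esub> fst p"
    proof -
      have "f p \<in> carrier R" "g p \<in> carrier R" using f g by blast+
      then show ?thesis using \<open>rho (snd p) \<in> carrier R\<close> \<open>fst p \<in> carrier M\<close> by (simp add: l_distr smult_l_distr)
    qed
  qed simp
  also have "\<dots> = PhiS R M S f \<oplus>\<^bsub>M\<^esub> PhiS R M S g"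
    unfolding PhiS_def using Phi_term_closed[OF J S f] Phi_term_closed[OF J S g] by (rule M.finsum_addf)
  finally show ?thesis .
qed

lemma Phi_smult:
  assumes J: "ideal J R" and S: "S \<subseteq> carrier M \<times> carrier (Umod R J)" and fin: "finite S"
    and f: "\<forall>p. f p \<in> carrier R" and c: "c \<in> carrier R"
  shows "PhiS R M S (\<lambda>p. c \<otimes> f p) = c \<odot>\<^bsub>M\<^esub> PhiS R M S f"
proof -
  have "PhiS R M S (\<lambda>p. c \<otimes> f p) = finsum M (\<lambda>p. c \<odot>\<^bsub>M\<^esub> ((f p \<otimes> rho (snd p)) \<odot>\<^bsub>M\<^esub> fst p)) S"
    unfolding PhiS_def
  proof (rule M.finsum_cong')
    show "(\<lambda>p. c \<odot>\<^bsub>M\<^esub> ((f p \<otimes> rho (snd p)) \<odot>\<^bsub>M\<^esub> fst p)) \<in> S \<rightarrow> carrier M"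
      using Phi_term_closed[OF J S f] c by auto
    fix p assume p: "p \<in> S"
    then have "rho (snd p) \<in> carrier R" "fst p \<in> carrier M" using S rhoU[OF J] by auto
    then show "((c \<otimes> f p) \<otimes> rho (snd p)) \<odot>\<^bsub>M\<^esub> fst p = c \<odot>\<^bsub>M\<^esub> ((f p \<otimes> rho (snd p)) \<odot>\<^bsub>M\<^esub> fst p)"
    proof -
      have "f p \<in> carrier R" using f by blast
      then show ?thesis using \<open>rho (snd p) \<in> carrier R\<close> \<open>fst p \<in> carrier M\<close> c by (simp add: m_assoc smult_assoc1)
    qed
  qed simp
  also have "\<dots> = c \<odot>\<^bsub>M\<^esub> PhiS R M S f"
    unfolding PhiS_def using finsum_smult_ldistr[OF fin c Phi_term_closed[OF J S f]] by simp
  finally show ?thesis .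
qed

lemma Phi_minus:
  assumes J: "ideal J R" and S: "S \<subseteq> carrier M \<times> carrier (Umod R J)" and fin: "finite S"
    and f: "\<forall>p. f p \<in> carrier R" and g: "\<forall>p. g p \<in> carrier R"
  shows "PhiS R M S (\<lambda>p. f p \<ominus> g p) = PhiS R M S f \<ominus>\<^bsub>M\<^esub> PhiS R M S g"
proof -
  have g': "\<forall>p. \<ominus> \<one> \<otimes> g p \<in> carrier R" using g by simp
  have "(\<lambda>p. f p \<ominus> g p) = (\<lambda>p. f p \<oplus> (\<ominus> \<one> \<otimes> g p))"
    using g by (auto simp: a_minus_def l_minus)
  then have "PhiS R M S (\<lambda>p. f p \<ominus> g p) = PhiS R M S f \<oplus>\<^bsub>M\<^esub> PhiS R M S (\<lambda>p. \<ominus> \<one> \<otimes> g p)"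
    using Phi_add[OF J S f g'] by simp
  also have "PhiS R M S (\<lambda>p. \<ominus> \<one> \<otimes> g p) = (\<ominus> \<one>) \<odot>\<^bsub>M\<^esub> PhiS R M S g"
    using Phi_smult[OF J S fin g] by simp
  also have "\<dots> = \<ominus>\<^bsub>M\<^esub> PhiS R M S g"
    using Phi_closed[OF J S g] by (simp add: smult_l_minus)
  finally show ?thesis by (simp add: a_minus_def)
qed

lemma Phi_delta:
  assumes J: "ideal J R" and S: "S \<subseteq> carrier M \<times> carrier (Umod R J)" and fin: "finite S" and q: "q \<in> S"
  shows "PhiS R M S (\<lambda>p. delta R q p) = rho (snd q) \<odot>\<^bsub>M\<^esub> fst q"
proof -
  have "PhiS R M S (\<lambda>p. delta R q p) = finsum M (\<lambda>p. if q = p then rho (snd p) \<odot>\<^bsub>M\<^esub> fst p else \<zero>\<^bsub>M\<^esub>) S"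
    unfolding PhiS_def
  proof (rule M.finsum_cong')
    show "(\<lambda>p. if q = p then rho (snd p) \<odot>\<^bsub>M\<^esub> fst p else \<zero>\<^bsub>M\<^esub>) \<in> S \<rightarrow> carrier M"
      using S rhoU[OF J] by auto
    fix p assume p: "p \<in> S"
    then have "rho (snd p) \<in> carrier R" "fst p \<in> carrier M" using S rhoU[OF J] by auto
    then show "(delta R q p \<otimes> rho (snd p)) \<odot>\<^bsub>M\<^esub> fst p = (if q = p then rho (snd p) \<odot>\<^bsub>M\<^esub> fst p else \<zero>\<^bsub>M\<^esub>)"
      unfolding delta_def by auto
  qed simp
  also have "\<dots> = rho (snd q) \<odot>\<^bsub>M\<^esub> fst q"
  proof -
    have "(\<lambda>p. rho (snd p) \<odot>\<^bsub>M\<^esub> fst p) \<in> S \<rightarrow> carrier M" using S rhoU[OF J] by auto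
    from M.finsum_singleton[OF q fin this] show ?thesis .
  qed
  finally show ?thesis .
qed

lemma Phi_ext:
  assumes J: "ideal J R" and S: "S' \<subseteq> carrier M \<times> carrier (Umod R J)" and fin: "finite S'" and sub: "S \<subseteq> S'"
    and f: "\<forall>p. f p \<in> carrier R" and z: "\<forall>p\<in>S' - S. f p = \<zero>"
  shows "PhiS R M S f = PhiS R M S' f"
proof -
  have e: "S' = S \<union> (S' - S)" using sub by auto
  have fS: "finite S" using fin sub finite_subset by auto
  have T: "(\<lambda>p. (f p \<otimes> rho (snd p)) \<odot>\<^bsub>M\<^esub> fst p) \<in> S' \<rightarrow> carrier M" using Phi_term_closed[OF J S f] .
  have "PhiS R M S' f = PhiS R M S f \<oplus>\<^bsub>M\<^esub> finsum M (\<lambda>p. (f p \<otimes> rho (snd p)) \<odot>\<^bsub>M\<^esub> fst p) (S' - S)"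
    unfolding PhiS_def
    by (subst e, rule M.finsum_Un_disjoint) (use fS fin T sub in auto)
  also have "finsum M (\<lambda>p. (f p \<otimes> rho (snd p)) \<odot>\<^bsub>M\<^esub> fst p) (S' - S) = finsum M (\<lambda>p. \<zero>\<^bsub>M\<^esub>) (S' - S)"
  proof (rule M.finsum_cong')
    fix p assume "p \<in> S' - S"
    then show "(f p \<otimes> rho (snd p)) \<odot>\<^bsub>M\<^esub> fst p = \<zero>\<^bsub>M\<^esub>" using z S rhoU[OF J] by auto
  qed auto
  also have "\<dots> = \<zero>\<^bsub>M\<^esub>" by simp
  finally show ?thesis using Phi_closed[OF J _ f, of S] S sub by auto
qed

end


context mymod
begin

lemma Umod_add_def: "u \<oplus>\<^bsub>Umod R J\<^esub> u' = cls R J (rho u \<oplus> rho u')"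
  unfolding Umod_def by simp

lemma Umod_smult_def: "r \<odot>\<^bsub>Umod R J\<^esub> u = cls R J (r \<otimes> rho u)"
  unfolding Umod_def by simp

lemma Phi3:
  assumes J: "ideal J R" and S: "S \<subseteq> carrier M \<times> carrier (Umod R J)" and fin: "finite S"
    and q: "q1 \<in> S" "q2 \<in> S" "q3 \<in> S"
  shows "PhiS R M S (\<lambda>p. delta R q1 p \<ominus> delta R q2 p \<ominus> delta R q3 p)
     = rho (snd q1) \<odot>\<^bsub>M\<^esub> fst q1 \<ominus>\<^bsub>M\<^esub> rho (snd q2) \<odot>\<^bsub>M\<^esub> fst q2 \<ominus>\<^bsub>M\<^esub> rho (snd q3) \<odot>\<^bsub>M\<^esub> fst q3"
proof -
  have dc: "\<And>q. \<forall>p. delta R q p \<in> carrier R" using delta_closed[OF ring_axioms] by auto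
  have dc2: "\<forall>p. delta R q1 p \<ominus> delta R q2 p \<in> carrier R"
  proof
    fix p show "delta R q1 p \<ominus> delta R q2 p \<in> carrier R"
      using delta_closed[OF ring_axioms, of q1 p] delta_closed[OF ring_axioms, of q2 p] by simp
  qed
  show ?thesis
    using Phi_minus[OF J S fin dc2 dc] Phi_minus[OF J S fin dc dc] Phi_delta[OF J S fin] q by simp
qed

lemma Phi2:
  assumes J: "ideal J R" and S: "S \<subseteq> carrier M \<times> carrier (Umod R J)" and fin: "finite S"
    and q: "q1 \<in> S" "q2 \<in> S" and r: "r \<in> carrier R"
  shows "PhiS R M S (\<lambda>p. delta R q1 p \<ominus> r \<otimes> delta R q2 p)
     = rho (snd q1) \<odot>\<^bsub>M\<^esub> fst q1 \<ominus>\<^bsub>M\<^esub> r \<odot>\<^bsub>M\<^esub> (rho (snd q2) \<odot>\<^bsub>M\<^esub> fst q2)"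
proof -
  have dc: "\<And>q. \<forall>p. delta R q p \<in> carrier R" using delta_closed[OF ring_axioms] by auto
  have dc2: "\<forall>p. r \<otimes> delta R q2 p \<in> carrier R"
  proof
    fix p show "r \<otimes> delta R q2 p \<in> carrier R"
      using delta_closed[OF ring_axioms, of q2 p] r by simp
  qed
  show ?thesis
    using Phi_minus[OF J S fin dc dc2] Phi_smult[OF J S fin dc r] Phi_delta[OF J S fin] q by simp
qed

lemma gen_inv:
  assumes N: "submodule N R M" and J: "ideal J R"
    and g: "g \<in> tensor_gens R (M\<lparr>carrier := N\<rparr>) (Umod R J)"
  shows "\<exists>Q. finite Q \<and> Q \<subseteq> N \<times> carrier (Umod R J) \<and> (\<forall>p. p \<notin> Q \<longrightarrow> g p = \<zero>) \<and>
     (\<forall>S. finite S \<and> Q \<subseteq> S \<and> S \<subseteq> N \<times> carrier (Umod R J) \<longrightarrow> PhiS R M S g \<in> gsub M J N)"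
proof -
  interpret J: ideal J R by fact
  let ?U = "Umod R J"
  have NM: "N \<subseteq> carrier M" using subm(1)[OF N] .
  have Jc: "J \<subseteq> carrier R" using J.a_subset .
  have sub: "\<And>S. S \<subseteq> N \<times> carrier ?U \<Longrightarrow> S \<subseteq> carrier M \<times> carrier ?U" using NM by auto
  have rU: "\<And>u. u \<in> carrier ?U \<Longrightarrow> rho u \<in> carrier R" using rhoU[OF J] .
  have jm: "\<And>j m. j \<in> J \<Longrightarrow> m \<in> N \<Longrightarrow> j \<odot>\<^bsub>M\<^esub> m \<in> gsub M J N"
    using gsub_mem[OF N _ _ Jc] by blast
  from g consider
    (g1) m m' u where "g = (\<lambda>p. delta R (m \<oplus>\<^bsub>M\<^esub> m', u) p \<ominus> delta R (m, u) p \<ominus> delta R (m', u) p)"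
      "m \<in> N" "m' \<in> N" "u \<in> carrier ?U"
  | (g2) m u u' where "g = (\<lambda>p. delta R (m, u \<oplus>\<^bsub>?U\<^esub> u') p \<ominus> delta R (m, u) p \<ominus> delta R (m, u') p)"
      "m \<in> N" "u \<in> carrier ?U" "u' \<in> carrier ?U"
  | (g3) r m u where "g = (\<lambda>p. delta R (r \<odot>\<^bsub>M\<^esub> m, u) p \<ominus> r \<otimes> delta R (m, u) p)"
      "r \<in> carrier R" "m \<in> N" "u \<in> carrier ?U"
  | (g4) r m u where "g = (\<lambda>p. delta R (m, r \<odot>\<^bsub>?U\<^esub> u) p \<ominus> r \<otimes> delta R (m, u) p)"
      "r \<in> carrier R" "m \<in> N" "u \<in> carrier ?U"
    unfolding tensor_gens_def by auto
  then show ?thesis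
  proof cases
    case g1
    have mm: "m \<oplus>\<^bsub>M\<^esub> m' \<in> N" using subm(5)[OF N] g1 by auto
    let ?Q = "{(m \<oplus>\<^bsub>M\<^esub> m', u), (m, u), (m', u)}"
    show ?thesis
    proof (intro exI conjI allI impI)
      show "finite ?Q" by simp
      show "?Q \<subseteq> N \<times> carrier ?U" using g1 mm by auto
      fix p assume "p \<notin> ?Q" then show "g p = \<zero>" using g1(1) unfolding delta_def by (auto simp: a_minus_def)
    next
      fix S assume S: "finite S \<and> ?Q \<subseteq> S \<and> S \<subseteq> N \<times> carrier ?U"
      have mc: "m \<in> carrier M" "m' \<in> carrier M" using g1 NM by auto
      have ru: "rho u \<in> carrier R" using rU g1 by auto
      have "PhiS R M S g = rho u \<odot>\<^bsub>M\<^esub> (m \<oplus>\<^bsub>M\<^esub> m') \<ominus>\<^bsub>M\<^esub> rho u \<odot>\<^bsub>M\<^esub> m \<ominus>\<^bsub>M\<^esub> rho u \<odot>\<^bsub>M\<^esub> m'"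
        unfolding g1(1) using Phi3[OF J sub] S by auto
      also have "\<dots> = \<zero>\<^bsub>M\<^esub>"
      proof -
        have c: "rho u \<odot>\<^bsub>M\<^esub> m \<in> carrier M" "rho u \<odot>\<^bsub>M\<^esub> m' \<in> carrier M" using mc ru by auto
        have "rho u \<odot>\<^bsub>M\<^esub> (m \<oplus>\<^bsub>M\<^esub> m') = rho u \<odot>\<^bsub>M\<^esub> m \<oplus>\<^bsub>M\<^esub> rho u \<odot>\<^bsub>M\<^esub> m'"
          using mc ru by (simp add: smult_r_distr)
        moreover have "rho u \<odot>\<^bsub>M\<^esub> m \<oplus>\<^bsub>M\<^esub> rho u \<odot>\<^bsub>M\<^esub> m' \<ominus>\<^bsub>M\<^esub> rho u \<odot>\<^bsub>M\<^esub> m = rho u \<odot>\<^bsub>M\<^esub> m'"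
          using c by (rule M.ag_c1)
        moreover have "rho u \<odot>\<^bsub>M\<^esub> m' \<ominus>\<^bsub>M\<^esub> rho u \<odot>\<^bsub>M\<^esub> m' = \<zero>\<^bsub>M\<^esub>"
          using c by (simp add: a_minus_def M.r_neg)
        ultimately show ?thesis by simp
      qed
      finally show "PhiS R M S g \<in> gsub M J N" by (simp add: gsub.gz)
    qed
  next
    case g2
    have uu: "u \<oplus>\<^bsub>?U\<^esub> u' \<in> carrier ?U" unfolding Umod_add_def Umod_carrier using rU g2 by auto
    let ?Q = "{(m, u \<oplus>\<^bsub>?U\<^esub> u'), (m, u), (m, u')}"
    show ?thesis
    proof (intro exI conjI allI impI)
      show "finite ?Q" by simp
      show "?Q \<subseteq> N \<times> carrier ?U" using g2 uu by auto
      fix p assume "p \<notin> ?Q" then show "g p = \<zero>" using g2(1) unfolding delta_def by (auto simp: a_minus_def)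
    next
      fix S assume S: "finite S \<and> ?Q \<subseteq> S \<and> S \<subseteq> N \<times> carrier ?U"
      have mc: "m \<in> carrier M" using g2 NM by auto
      have ru: "rho u \<in> carrier R" "rho u' \<in> carrier R" "rho (u \<oplus>\<^bsub>?U\<^esub> u') \<in> carrier R" using rU g2 uu by auto
      have "PhiS R M S g = rho (u \<oplus>\<^bsub>?U\<^esub> u') \<odot>\<^bsub>M\<^esub> m \<ominus>\<^bsub>M\<^esub> rho u \<odot>\<^bsub>M\<^esub> m \<ominus>\<^bsub>M\<^esub> rho u' \<odot>\<^bsub>M\<^esub> m"
        unfolding g2(1) using Phi3[OF J sub] S by auto
      also have "\<dots> = (rho (u \<oplus>\<^bsub>?U\<^esub> u') \<ominus> rho u \<ominus> rho u') \<odot>\<^bsub>M\<^esub> m"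
        using ru mc by (simp add: smult_minus_l)
      finally have e: "PhiS R M S g = (rho (u \<oplus>\<^bsub>?U\<^esub> u') \<ominus> rho u \<ominus> rho u') \<odot>\<^bsub>M\<^esub> m" .
      have "rho (u \<oplus>\<^bsub>?U\<^esub> u') \<ominus> (rho u \<oplus> rho u') \<in> J"
        unfolding Umod_add_def using rho_cls[OF J, of "rho u \<oplus> rho u'"] ru by auto
      moreover have "rho (u \<oplus>\<^bsub>?U\<^esub> u') \<ominus> (rho u \<oplus> rho u') = rho (u \<oplus>\<^bsub>?U\<^esub> u') \<ominus> rho u \<ominus> rho u'"
        using ru by algebra
      ultimately show "PhiS R M S g \<in> gsub M J N" using e jm g2 by auto
    qed
  next
    case g3
    have rm: "r \<odot>\<^bsub>M\<^esub> m \<in> N" using subm(4)[OF N] g3 by auto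
    let ?Q = "{(r \<odot>\<^bsub>M\<^esub> m, u), (m, u)}"
    show ?thesis
    proof (intro exI conjI allI impI)
      show "finite ?Q" by simp
      show "?Q \<subseteq> N \<times> carrier ?U" using g3 rm by auto
      fix p assume "p \<notin> ?Q" then show "g p = \<zero>" using g3(1,2) unfolding delta_def by (auto simp: a_minus_def)
    next
      fix S assume S: "finite S \<and> ?Q \<subseteq> S \<and> S \<subseteq> N \<times> carrier ?U"
      have mc: "m \<in> carrier M" using g3 NM by auto
      have ru: "rho u \<in> carrier R" using rU g3 by auto
      have "PhiS R M S g = rho u \<odot>\<^bsub>M\<^esub> (r \<odot>\<^bsub>M\<^esub> m) \<ominus>\<^bsub>M\<^esub> r \<odot>\<^bsub>M\<^esub> (rho u \<odot>\<^bsub>M\<^esub> m)"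
        unfolding g3(1) using Phi2[OF J sub] S g3 by auto
      also have "\<dots> = \<zero>\<^bsub>M\<^esub>" using mc ru g3(2)
        by (simp add: smult_assoc1[symmetric] m_comm M.r_neg a_minus_def)
      finally show "PhiS R M S g \<in> gsub M J N" by (simp add: gsub.gz)
    qed
  next
    case g4
    have ru0: "rho u \<in> carrier R" using rU g4 by auto
    have uu: "r \<odot>\<^bsub>?U\<^esub> u \<in> carrier ?U" unfolding Umod_smult_def Umod_carrier using rU g4 by auto
    let ?Q = "{(m, r \<odot>\<^bsub>?U\<^esub> u), (m, u)}"
    show ?thesis
    proof (intro exI conjI allI impI)
      show "finite ?Q" by simp
      show "?Q \<subseteq> N \<times> carrier ?U" using g4 uu by auto
      fix p assume "p \<notin> ?Q" then show "g p = \<zero>" using g4(1,2) unfolding delta_def by (auto simp: a_minus_def)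
    next
      fix S assume S: "finite S \<and> ?Q \<subseteq> S \<and> S \<subseteq> N \<times> carrier ?U"
      have mc: "m \<in> carrier M" using g4 NM by auto
      have ru: "rho u \<in> carrier R" "rho (r \<odot>\<^bsub>?U\<^esub> u) \<in> carrier R" using rU g4 uu by auto
      have "PhiS R M S g = rho (r \<odot>\<^bsub>?U\<^esub> u) \<odot>\<^bsub>M\<^esub> m \<ominus>\<^bsub>M\<^esub> r \<odot>\<^bsub>M\<^esub> (rho u \<odot>\<^bsub>M\<^esub> m)"
        unfolding g4(1) using Phi2[OF J sub] S g4 by auto
      also have "\<dots> = (rho (r \<odot>\<^bsub>?U\<^esub> u) \<ominus> r \<otimes> rho u) \<odot>\<^bsub>M\<^esub> m"
        using ru mc g4(2) by (simp add: smult_minus_l smult_assoc1)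
      finally have e: "PhiS R M S g = (rho (r \<odot>\<^bsub>?U\<^esub> u) \<ominus> r \<otimes> rho u) \<odot>\<^bsub>M\<^esub> m" .
      have "rho (r \<odot>\<^bsub>?U\<^esub> u) \<ominus> r \<otimes> rho u \<in> J"
        unfolding Umod_smult_def using rho_cls[OF J, of "r \<otimes> rho u"] ru g4(2) by auto
      then show "PhiS R M S g \<in> gsub M J N" using e jm g4 by auto
    qed
  qed
qed


lemma phi_inv:
  assumes N: "submodule N R M" and J: "ideal J R"
    and f: "f \<in> fun_span R (tensor_gens R (M\<lparr>carrier := N\<rparr>) (Umod R J))"
  shows "(\<exists>S0. finite S0 \<and> S0 \<subseteq> N \<times> carrier (Umod R J) \<and> (\<forall>p. p \<notin> S0 \<longrightarrow> f p = \<zero>)) \<and>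
    (\<forall>S. finite S \<and> S \<subseteq> N \<times> carrier (Umod R J) \<and> (\<forall>p. p \<notin> S \<longrightarrow> f p = \<zero>) \<longrightarrow> PhiS R M S f \<in> gsub M J N)"
  using f
proof (induction rule: fun_span.induct)
  case zero
  show ?case
  proof (intro conjI allI impI exI)
    show "finite {}" "{} \<subseteq> N \<times> carrier (Umod R J)" by auto
  next
    fix S assume S: "finite S \<and> S \<subseteq> N \<times> carrier (Umod R J) \<and> (\<forall>p. p \<notin> S \<longrightarrow> \<zero> = \<zero>)"
    have "PhiS R M S (\<lambda>_. \<zero>) = PhiS R M S (\<lambda>p. \<zero> \<otimes> \<zero>)" by simp
    also have "\<dots> = \<zero> \<odot>\<^bsub>M\<^esub> PhiS R M S (\<lambda>_. \<zero>)"
      using S subm(1)[OF N] by (intro Phi_smult[OF J]) auto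
    also have "\<dots> = \<zero>\<^bsub>M\<^esub>"
    proof -
      have "S \<subseteq> carrier M \<times> carrier (Umod R J)" using S subm(1)[OF N] by auto
      then have "PhiS R M S (\<lambda>_. \<zero>) \<in> carrier M" using Phi_closed[OF J, of S "\<lambda>_. \<zero>"] by auto
      then show ?thesis by simp
    qed
    finally show "PhiS R M S (\<lambda>_. \<zero>) \<in> gsub M J N" by (simp add: gsub.gz)
  qed simp
next
  case (step f c g)
  let ?U = "Umod R J"
  have Gv: "\<forall>g\<in>tensor_gens R (M\<lparr>carrier := N\<rparr>) ?U. \<forall>p. g p \<in> carrier R" by (rule gens_vals'[OF ring_axioms])
  have fv: "\<forall>p. f p \<in> carrier R" using span_vals[OF ring_axioms Gv step.hyps(1)] by blast
  have gv: "\<forall>p. g p \<in> carrier R" using gens_vals[OF ring_axioms step.hyps(3)] by blast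
  have cgv: "\<forall>p. c \<otimes> g p \<in> carrier R" using gv step.hyps(2) by blast
  from conjunct1[OF step.IH] obtain S0 where S0: "finite S0" "S0 \<subseteq> N \<times> carrier ?U" "\<forall>p. p \<notin> S0 \<longrightarrow> f p = \<zero>"
    by (elim exE conjE) simp
  have IH2: "PhiS R M S f \<in> gsub M J N" if "finite S" "S \<subseteq> N \<times> carrier ?U" "\<forall>p. p \<notin> S \<longrightarrow> f p = \<zero>" for S
    using spec[OF conjunct2[OF step.IH], of S] that by simp
  from gen_inv[OF N J step.hyps(3)] obtain Q where Q: "finite Q" "Q \<subseteq> N \<times> carrier ?U" "\<forall>p. p \<notin> Q \<longrightarrow> g p = \<zero>"
    and Q4: "\<forall>S. finite S \<and> Q \<subseteq> S \<and> S \<subseteq> N \<times> carrier ?U \<longrightarrow> PhiS R M S g \<in> gsub M J N"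
    by (elim exE conjE) simp
  have NM: "N \<times> carrier ?U \<subseteq> carrier M \<times> carrier ?U" using subm(1)[OF N] by auto
  have Jc: "J \<subseteq> carrier R" using ideal.axioms(1)[OF J] additive_subgroup.a_subset by blast
  show ?case
  proof (intro conjI allI impI exI)
    show "finite (S0 \<union> Q)" "S0 \<union> Q \<subseteq> N \<times> carrier ?U" using S0 Q by auto
    fix p assume "p \<notin> S0 \<union> Q"
    then have "f p = \<zero>" "g p = \<zero>" using S0(3) Q(3) by blast+
    then show "f p \<oplus> c \<otimes> g p = \<zero>" using step.hyps(2) by simp
  next
    fix S assume S: "finite S \<and> S \<subseteq> N \<times> carrier ?U \<and> (\<forall>p. p \<notin> S \<longrightarrow> f p \<oplus> c \<otimes> g p = \<zero>)"
    define S' where "S' = S \<union> S0 \<union> Q"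
    have S': "finite S'" "S' \<subseteq> N \<times> carrier ?U" using S S0 Q unfolding S'_def by auto
    have fgv: "\<forall>p. f p \<oplus> c \<otimes> g p \<in> carrier R" using fv cgv by blast
    have "PhiS R M S (\<lambda>p. f p \<oplus> c \<otimes> g p) = PhiS R M S' (\<lambda>p. f p \<oplus> c \<otimes> g p)"
    proof -
      have S'M: "S' \<subseteq> carrier M \<times> carrier ?U" using S'(2) NM by blast
      have sub: "S \<subseteq> S'" unfolding S'_def by blast
      have z: "\<forall>p\<in>S' - S. f p \<oplus> c \<otimes> g p = \<zero>" using S by blast
      show ?thesis by (rule Phi_ext[OF J S'M S'(1) sub fgv z])
    qed
    also have "\<dots> = PhiS R M S' f \<oplus>\<^bsub>M\<^esub> PhiS R M S' (\<lambda>p. c \<otimes> g p)"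
      using Phi_add[OF J _ fv cgv] S' NM by blast
    also have "PhiS R M S' (\<lambda>p. c \<otimes> g p) = c \<odot>\<^bsub>M\<^esub> PhiS R M S' g"
      using Phi_smult[OF J _ _ gv step.hyps(2)] S' NM by blast
    finally have e: "PhiS R M S (\<lambda>p. f p \<oplus> c \<otimes> g p) = PhiS R M S' f \<oplus>\<^bsub>M\<^esub> c \<odot>\<^bsub>M\<^esub> PhiS R M S' g" .
    have a: "PhiS R M S' f \<in> gsub M J N" by (rule IH2[OF S']) (use S0 in \<open>auto simp: S'_def\<close>)
    have QS: "Q \<subseteq> S'" unfolding S'_def by blast
    have b: "PhiS R M S' g \<in> gsub M J N" using spec[OF Q4, of S'] S' QS by simp
    have "c \<odot>\<^bsub>M\<^esub> PhiS R M S' g \<in> gsub M J N" using gsub_smult[OF b J N step.hyps(2)] .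
    then show "PhiS R M S (\<lambda>p. f p \<oplus> c \<otimes> g p) \<in> gsub M J N"
      unfolding e by (rule gsub_add[OF _ a N Jc])
  qed
qed

lemma pure_gsub:
  assumes P: "pure_sub R M N" and J: "ideal J R" and xN: "x \<in> N" and xJ: "x \<in> gsub M J (carrier M)"
  shows "x \<in> gsub M J N"
proof -
  interpret J: ideal J R by fact
  let ?U = "Umod R J"
  define u0 where "u0 = cls R J \<one>"
  have N: "submodule N R M" using P unfolding pure_sub_def by auto
  have UM: "Module.module R ?U" by (rule Umod_module[OF J])
  have u0c: "u0 \<in> carrier ?U" unfolding u0_def Umod_carrier by auto
  define f0 where "f0 = (\<lambda>p. delta R (x, u0) p)"
  have tz: "tensor_zero R M ?U f0" unfolding tensor_zero_def f0_def u0_def using tz_gsub[OF J xJ] .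
  have f0v: "\<forall>p. f0 p \<in> carrier R" unfolding f0_def using delta_closed[OF ring_axioms] by auto
  have supp: "{p. f0 p \<noteq> \<zero>} \<subseteq> {(x, u0)}" unfolding f0_def delta_def by auto
  then have fin: "finite {p. f0 p \<noteq> \<zero>}" using finite_subset by auto
  have supp2: "{p. f0 p \<noteq> \<zero>} \<subseteq> N \<times> carrier ?U" using supp xN u0c by auto
  have "tensor_zero R (M\<lparr>carrier := N\<rparr>) ?U f0"
    using P UM f0v fin supp2 tz unfolding pure_sub_def by blast
  then have sp: "f0 \<in> fun_span R (tensor_gens R (M\<lparr>carrier := N\<rparr>) ?U)" unfolding tensor_zero_def .
  have "PhiS R M {(x, u0)} f0 \<in> gsub M J N"
    using phi_inv[OF N J sp] xN u0c unfolding f0_def delta_def by auto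
  moreover have "PhiS R M {(x, u0)} f0 = rho u0 \<odot>\<^bsub>M\<^esub> x"
    unfolding f0_def using Phi_delta[OF J, of "{(x, u0)}" "(x, u0)"] xN u0c subm(1)[OF N] by auto
  ultimately have A: "rho u0 \<odot>\<^bsub>M\<^esub> x \<in> gsub M J N" by simp
  have r0: "rho u0 \<in> carrier R" "rho u0 \<ominus> \<one> \<in> J" unfolding u0_def using rho_cls[OF J] by auto
  have xc: "x \<in> carrier M" using xN subm(1)[OF N] by auto
  have B: "(rho u0 \<ominus> \<one>) \<odot>\<^bsub>M\<^esub> x \<in> gsub M J N" using gsub_mem[OF N r0(2) xN J.a_subset] .
  have "x = rho u0 \<odot>\<^bsub>M\<^esub> x \<ominus>\<^bsub>M\<^esub> (rho u0 \<ominus> \<one>) \<odot>\<^bsub>M\<^esub> x"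
  proof -
    have "(rho u0 \<ominus> \<one>) \<odot>\<^bsub>M\<^esub> x = rho u0 \<odot>\<^bsub>M\<^esub> x \<ominus>\<^bsub>M\<^esub> x" using smult_minus_l[OF r0(1) _ xc] xc by simp
    moreover have "rho u0 \<odot>\<^bsub>M\<^esub> x \<ominus>\<^bsub>M\<^esub> (rho u0 \<odot>\<^bsub>M\<^esub> x \<ominus>\<^bsub>M\<^esub> x) = x"
      using r0(1) xc by (simp add: a_minus_def M.minus_add M.a_ac M.r_neg1 M.minus_minus M.r_neg)
    ultimately show ?thesis by simp
  qed
  moreover have G: "submodule (gsub M J N) R M" by (rule gsub_submodule[OF J N])
  have "rho u0 \<odot>\<^bsub>M\<^esub> x \<ominus>\<^bsub>M\<^esub> (rho u0 \<ominus> \<one>) \<odot>\<^bsub>M\<^esub> x \<in> gsub M J N" by (rule subm(6)[OF G A B])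
  ultimately show ?thesis by simp
qed

end


definition cyc :: "'r ring \<Rightarrow> ('r, 'a) module \<Rightarrow> 'a \<Rightarrow> 'a set" where
  "cyc R M g = {r \<odot>\<^bsub>M\<^esub> g | r. r \<in> carrier R}"

definition smul :: "('r, 'a) module \<Rightarrow> 'r \<Rightarrow> 'a set \<Rightarrow> 'a set" where
  "smul M a X = {a \<odot>\<^bsub>M\<^esub> x | x. x \<in> X}"

definition aP :: "'r ring \<Rightarrow> 'r \<Rightarrow> 'r set \<Rightarrow> 'r set" where
  "aP R a P = {a \<otimes>\<^bsub>R\<^esub> p | p. p \<in> P}"

definition Tf :: "'r ring \<Rightarrow> ('r, 'a) module \<Rightarrow> 'r \<Rightarrow> 'r set \<Rightarrow> 'a set \<Rightarrow> 'a set" where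
  "Tf R M a P X = msum M (smul M a X) (gsub M (aP R a P) (carrier M))"

sublocale mymod \<subseteq> L: modlat "{X. submodule X R M}" "msum M"
  by (rule modlat_submodules)

context mymod
begin

lemma cyc_sub: "g \<in> carrier M \<Longrightarrow> submodule (cyc R M g) R M"
proof (rule submoduleI)
  assume g: "g \<in> carrier M"
  show "cyc R M g \<subseteq> carrier M" unfolding cyc_def using g by auto
  have "\<zero>\<^bsub>M\<^esub> = \<zero> \<odot>\<^bsub>M\<^esub> g" using g by simp
  then show "\<zero>\<^bsub>M\<^esub> \<in> cyc R M g" unfolding cyc_def by blast
  fix x assume "x \<in> cyc R M g"
  then obtain r where r: "r \<in> carrier R" "x = r \<odot>\<^bsub>M\<^esub> g" unfolding cyc_def by auto
  have "\<ominus>\<^bsub>M\<^esub> x = (\<ominus> r) \<odot>\<^bsub>M\<^esub> g" using r g by (simp add: smult_l_minus)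
  then show "\<ominus>\<^bsub>M\<^esub> x \<in> cyc R M g" unfolding cyc_def using r by blast
  fix s assume s: "s \<in> carrier R"
  have "s \<odot>\<^bsub>M\<^esub> x = (s \<otimes> r) \<odot>\<^bsub>M\<^esub> g" using r g s by (simp add: smult_assoc1)
  then show "s \<odot>\<^bsub>M\<^esub> x \<in> cyc R M g" unfolding cyc_def using r s by blast
next
  fix x y assume g: "g \<in> carrier M" and "x \<in> cyc R M g" "y \<in> cyc R M g"
  then obtain r s where r: "r \<in> carrier R" "x = r \<odot>\<^bsub>M\<^esub> g" "s \<in> carrier R" "y = s \<odot>\<^bsub>M\<^esub> g" unfolding cyc_def by auto
  have "x \<oplus>\<^bsub>M\<^esub> y = (r \<oplus> s) \<odot>\<^bsub>M\<^esub> g" using r g by (simp add: smult_l_distr)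
  then show "x \<oplus>\<^bsub>M\<^esub> y \<in> cyc R M g" unfolding cyc_def using r by blast
qed

lemma cyc_mem: "g \<in> carrier M \<Longrightarrow> g \<in> cyc R M g"
  unfolding cyc_def by (metis (mono_tags, lifting) R.one_closed mem_Collect_eq smult_one)

lemma smul_sub: "a \<in> carrier R \<Longrightarrow> submodule X R M \<Longrightarrow> submodule (smul M a X) R M"
proof (rule submoduleI)
  assume a: "a \<in> carrier R" and X: "submodule X R M"
  note sx = subm[OF X]
  show "smul M a X \<subseteq> carrier M" unfolding smul_def using a sx(1) by auto
  have "\<zero>\<^bsub>M\<^esub> = a \<odot>\<^bsub>M\<^esub> \<zero>\<^bsub>M\<^esub>" using a by simp
  then show "\<zero>\<^bsub>M\<^esub> \<in> smul M a X" unfolding smul_def using sx(2) by blast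
  fix x assume "x \<in> smul M a X"
  then obtain y where y: "y \<in> X" "x = a \<odot>\<^bsub>M\<^esub> y" unfolding smul_def by auto
  have yc: "y \<in> carrier M" using y sx(1) by auto
  have "\<ominus>\<^bsub>M\<^esub> x = a \<odot>\<^bsub>M\<^esub> (\<ominus>\<^bsub>M\<^esub> y)" using y yc a by (simp add: smult_r_minus)
  then show "\<ominus>\<^bsub>M\<^esub> x \<in> smul M a X" unfolding smul_def using sx(3) y by blast
  fix s assume s: "s \<in> carrier R"
  have "s \<odot>\<^bsub>M\<^esub> x = a \<odot>\<^bsub>M\<^esub> (s \<odot>\<^bsub>M\<^esub> y)" using y yc a s by (simp add: smult_assoc1[symmetric] m_comm)
  then show "s \<odot>\<^bsub>M\<^esub> x \<in> smul M a X" unfolding smul_def using sx(4) y s by blast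
next
  fix x x' assume a: "a \<in> carrier R" and X: "submodule X R M" and "x \<in> smul M a X" "x' \<in> smul M a X"
  note sx = subm[OF X]
  then obtain y y' where y: "y \<in> X" "x = a \<odot>\<^bsub>M\<^esub> y" "y' \<in> X" "x' = a \<odot>\<^bsub>M\<^esub> y'"
    using \<open>x \<in> smul M a X\<close> \<open>x' \<in> smul M a X\<close> unfolding smul_def by auto
  have yc: "y \<in> carrier M" "y' \<in> carrier M" using y sx(1) by auto
  have "x \<oplus>\<^bsub>M\<^esub> x' = a \<odot>\<^bsub>M\<^esub> (y \<oplus>\<^bsub>M\<^esub> y')" using y yc a by (simp add: smult_r_distr)
  then show "x \<oplus>\<^bsub>M\<^esub> x' \<in> smul M a X" unfolding smul_def using sx(5) y by blast
qed

lemma aP_ideal: "ideal P R \<Longrightarrow> a \<in> carrier R \<Longrightarrow> ideal (aP R a P) R"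
proof -
  assume P: "ideal P R" and a: "a \<in> carrier R"
  interpret P: ideal P R by fact
  show ?thesis
  proof (rule idealI)
    show "ring R" by (rule ring_axioms)
    show "subgroup (aP R a P) (add_monoid R)"
    proof
      show "aP R a P \<subseteq> carrier (add_monoid R)" unfolding aP_def using a P.a_subset by auto
      have "\<one>\<^bsub>add_monoid R\<^esub> = a \<otimes> \<zero>" using a by simp
      then show "\<one>\<^bsub>add_monoid R\<^esub> \<in> aP R a P" unfolding aP_def using P.zero_closed by blast
      fix x y assume "x \<in> aP R a P" "y \<in> aP R a P"
      then obtain p q where pq: "p \<in> P" "x = a \<otimes> p" "q \<in> P" "y = a \<otimes> q" unfolding aP_def by auto
      have c: "p \<in> carrier R" "q \<in> carrier R" using pq P.a_subset by auto
      have "x \<otimes>\<^bsub>add_monoid R\<^esub> y = a \<otimes> (p \<oplus> q)" using pq c a by (simp add: r_distr)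
      then show "x \<otimes>\<^bsub>add_monoid R\<^esub> y \<in> aP R a P" unfolding aP_def using pq P.a_closed by blast
    next
      fix x assume "x \<in> aP R a P"
      then obtain p where p: "p \<in> P" "x = a \<otimes> p" unfolding aP_def by auto
      have c: "p \<in> carrier R" using p P.a_subset by auto
      have "inv\<^bsub>add_monoid R\<^esub> x = \<ominus> x" by (simp add: a_inv_def)
      also have "\<ominus> x = a \<otimes> (\<ominus> p)" using p c a by (simp add: r_minus)
      finally have "inv\<^bsub>add_monoid R\<^esub> x = a \<otimes> (\<ominus> p)" .
      then show "inv\<^bsub>add_monoid R\<^esub> x \<in> aP R a P" unfolding aP_def using p P.a_inv_closed by blast
    qed
  next
    fix x r assume "x \<in> aP R a P" and r: "r \<in> carrier R"
    then obtain p where p: "p \<in> P" "x = a \<otimes> p" unfolding aP_def by auto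
    have c: "p \<in> carrier R" using p P.a_subset by auto
    have "r \<otimes> x = a \<otimes> (r \<otimes> p)" using p c a r by (simp add: m_lcomm)
    then show "r \<otimes> x \<in> aP R a P" unfolding aP_def using p P.I_l_closed r by blast
    have "x \<otimes> r = a \<otimes> (r \<otimes> p)" using p c a r by (simp add: m_ac)
    then show "x \<otimes> r \<in> aP R a P" unfolding aP_def using p P.I_l_closed r by blast
  qed
qed

lemma Tf_sub: "ideal P R \<Longrightarrow> a \<in> carrier R \<Longrightarrow> submodule X R M \<Longrightarrow> submodule (Tf R M a P X) R M"
  unfolding Tf_def
  by (intro msum_submodule smul_sub gsub_submodule aP_ideal carrier_is_submodule)


lemma sub_diff_mem: "submodule N R M \<Longrightarrow> x \<in> carrier M \<Longrightarrow> x \<ominus>\<^bsub>M\<^esub> y \<in> N \<Longrightarrow> y \<in> N \<Longrightarrow> x \<in> N"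
proof -
  assume N: "submodule N R M" and x: "x \<in> carrier M" and d: "x \<ominus>\<^bsub>M\<^esub> y \<in> N" and y: "y \<in> N"
  have yc: "y \<in> carrier M" using y subm(1)[OF N] by auto
  have "x = (x \<ominus>\<^bsub>M\<^esub> y) \<oplus>\<^bsub>M\<^esub> y" using x yc by (simp add: M.ag_c3)
  then show ?thesis using subm(5)[OF N d y] by simp
qed

lemma msum_cyc_eq: "submodule L R M \<Longrightarrow> y \<in> carrier M \<Longrightarrow> msum M L (cyc R M y) = L \<longleftrightarrow> y \<in> L"
proof
  assume L: "submodule L R M" and y: "y \<in> carrier M"
  assume "msum M L (cyc R M y) = L"
  moreover have "y \<in> msum M L (cyc R M y)" using msum_ub2[OF L] cyc_sub[OF y] subm(1) cyc_mem[OF y] by blast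
  ultimately show "y \<in> L" by simp
next
  assume L: "submodule L R M" and y: "y \<in> carrier M" and yL: "y \<in> L"
  have "cyc R M y \<subseteq> L" unfolding cyc_def using subm(4)[OF L] yL by auto
  then have "msum M L (cyc R M y) \<subseteq> L" using msum_least[OF L] by auto
  moreover have "L \<subseteq> msum M L (cyc R M y)" using msum_ub1[OF cyc_sub[OF y] subm(1)[OF L]] .
  ultimately show "msum M L (cyc R M y) = L" by auto
qed

lemma cover:
  assumes P: "maximalideal P R" and L: "submodule L R M" and y: "y \<in> carrier M"
    and Py: "\<forall>p\<in>P. p \<odot>\<^bsub>M\<^esub> y \<in> L"
  shows "msum M L (cyc R M y) = L \<or> L.covers L (msum M L (cyc R M y))"
proof (cases "y \<in> L")
  case True then show ?thesis using msum_cyc_eq[OF L y] by simp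
next
  case False
  interpret P: maximalideal P R by fact
  let ?K = "msum M L (cyc R M y)"
  have K: "submodule ?K R M" using msum_submodule[OF L cyc_sub[OF y]] .
  have LK: "L \<subseteq> ?K" using msum_ub1[OF cyc_sub[OF y] subm(1)[OF L]] .
  have yK: "y \<in> ?K" using msum_ub2[OF L] cyc_sub[OF y] subm(1) cyc_mem[OF y] by blast
  have "L.covers L ?K"
    unfolding L.covers_def
  proof (intro conjI ballI impI)
    show "L \<subset> ?K" using LK yK False by auto
    fix Z assume Z: "Z \<in> {X. submodule X R M}" and LZ: "L \<subseteq> Z \<and> Z \<subseteq> ?K"
    have Zs: "submodule Z R M" using Z by simp
    show "Z = L \<or> Z = ?K"
    proof (cases "Z = L")
      case True then show ?thesis by simp
    next
      case False
      then obtain z where z: "z \<in> Z" "z \<notin> L" using LZ by auto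
      then obtain l r where lr: "l \<in> L" "r \<in> carrier R" "z = l \<oplus>\<^bsub>M\<^esub> r \<odot>\<^bsub>M\<^esub> y"
        using LZ unfolding msum_def cyc_def by blast
      have lc: "l \<in> carrier M" using lr subm(1)[OF L] by auto
      have rP: "r \<notin> P"
      proof
        assume "r \<in> P"
        then have "r \<odot>\<^bsub>M\<^esub> y \<in> L" using Py by auto
        then have "z \<in> L" using lr subm(5)[OF L] by auto
        then show False using z by simp
      qed
      obtain s where s: "s \<in> carrier R" "s \<otimes> r \<ominus> \<one> \<in> P" using maximal_inv[OF P lr(2) rP] by blast
      have spc: "s \<otimes> r \<ominus> \<one> \<in> carrier R" using s lr by simp
      have e1: "s \<odot>\<^bsub>M\<^esub> z = s \<odot>\<^bsub>M\<^esub> l \<oplus>\<^bsub>M\<^esub> (s \<otimes> r) \<odot>\<^bsub>M\<^esub> y"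
        using lr lc s y by (simp add: smult_r_distr smult_assoc1)
      have e2: "(s \<otimes> r) \<odot>\<^bsub>M\<^esub> y = s \<odot>\<^bsub>M\<^esub> z \<ominus>\<^bsub>M\<^esub> s \<odot>\<^bsub>M\<^esub> l"
        using M.ag_eq_sub[OF _ _ _ e1] lr lc s y by simp
      have e3: "y = (s \<otimes> r) \<odot>\<^bsub>M\<^esub> y \<ominus>\<^bsub>M\<^esub> (s \<otimes> r \<ominus> \<one>) \<odot>\<^bsub>M\<^esub> y"
      proof -
        have "(s \<otimes> r) \<odot>\<^bsub>M\<^esub> y \<ominus>\<^bsub>M\<^esub> (s \<otimes> r \<ominus> \<one>) \<odot>\<^bsub>M\<^esub> y = ((s \<otimes> r) \<ominus> (s \<otimes> r \<ominus> \<one>)) \<odot>\<^bsub>M\<^esub> y"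
          using smult_minus_l[OF _ spc y] s lr by simp
        also have "(s \<otimes> r) \<ominus> (s \<otimes> r \<ominus> \<one>) = \<one>" using s lr by algebra
        finally show ?thesis using y by simp
      qed
      have zc: "z \<in> carrier M" using z subm(1)[OF Zs] by auto
      have "s \<odot>\<^bsub>M\<^esub> z \<in> Z" "s \<odot>\<^bsub>M\<^esub> l \<in> Z" using subm(4)[OF Zs] z s lr LZ by auto
      then have "(s \<otimes> r) \<odot>\<^bsub>M\<^esub> y \<in> Z" using e2 subm(6)[OF Zs] by simp
      moreover have "(s \<otimes> r \<ominus> \<one>) \<odot>\<^bsub>M\<^esub> y \<in> Z" using Py s LZ by auto
      ultimately have "y \<in> Z" using e3 subm(6)[OF Zs] by metis
      then have "cyc R M y \<subseteq> Z" unfolding cyc_def using subm(4)[OF Zs] by auto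
      then have "?K \<subseteq> Z" using msum_least[OF Zs] LZ by auto
      then show ?thesis using LZ by auto
    qed
  qed
  then show ?thesis by simp
qed


lemma gsub_PIdl:
  assumes N: "submodule N R M" and a: "a \<in> carrier R" and x: "x \<in> gsub M (PIdl a) N"
  shows "\<exists>n\<in>N. x = a \<odot>\<^bsub>M\<^esub> n"
  using x
proof (induction rule: gsub.induct)
  case gz
  have "\<zero>\<^bsub>M\<^esub> = a \<odot>\<^bsub>M\<^esub> \<zero>\<^bsub>M\<^esub>" using a by simp
  then show ?case using subm(2)[OF N] by blast
next
  case (gs x j y)
  obtain n where n: "n \<in> N" "x = a \<odot>\<^bsub>M\<^esub> n" using gs.IH by blast
  obtain s where js: "s \<in> carrier R" "j = s \<otimes> a" using gs.hyps(2) unfolding cgenideal_def by auto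
  have c: "n \<in> carrier M" "y \<in> carrier M" using n gs.hyps(3) subm(1)[OF N] by auto
  have "x \<oplus>\<^bsub>M\<^esub> j \<odot>\<^bsub>M\<^esub> y = a \<odot>\<^bsub>M\<^esub> (n \<oplus>\<^bsub>M\<^esub> s \<odot>\<^bsub>M\<^esub> y)"
    using n js c a by (simp add: smult_r_distr smult_assoc1[symmetric] m_comm)
  moreover have "n \<oplus>\<^bsub>M\<^esub> s \<odot>\<^bsub>M\<^esub> y \<in> N" using subm(4,5)[OF N] n js gs.hyps(3) by auto
  ultimately show ?case by blast
qed

lemma gsub_aP_cyc:
  assumes N: "submodule N R M" and P: "ideal P R" and a: "a \<in> carrier R" and g: "g \<in> carrier M"
    and w: "w \<in> gsub M (aP R a P) (msum M N (cyc R M g))"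
  shows "\<exists>p\<in>P. w \<ominus>\<^bsub>M\<^esub> (a \<otimes> p) \<odot>\<^bsub>M\<^esub> g \<in> N"
  using w
proof (induction rule: gsub.induct)
  case gz
  interpret P: ideal P R by fact
  have "\<zero>\<^bsub>M\<^esub> \<ominus>\<^bsub>M\<^esub> (a \<otimes> \<zero>) \<odot>\<^bsub>M\<^esub> g = \<zero>\<^bsub>M\<^esub>" using a g by (simp add: a_minus_def)
  then show ?case using subm(2)[OF N] P.zero_closed by metis
next
  case (gs w j y)
  interpret P: ideal P R by fact
  obtain p where p: "p \<in> P" "w \<ominus>\<^bsub>M\<^esub> (a \<otimes> p) \<odot>\<^bsub>M\<^esub> g \<in> N" using gs.IH by blast
  obtain p' where p': "p' \<in> P" "j = a \<otimes> p'" using gs.hyps(2) unfolding aP_def by auto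
  obtain n r where nr: "n \<in> N" "r \<in> carrier R" "y = n \<oplus>\<^bsub>M\<^esub> r \<odot>\<^bsub>M\<^esub> g" using gs.hyps(3) unfolding msum_def cyc_def by auto
  have pc: "p \<in> carrier R" "p' \<in> carrier R" using p p' P.a_subset by auto
  have nc: "n \<in> carrier M" using nr subm(1)[OF N] by auto
  have wc: "w \<in> carrier M"
  proof -
    have "submodule (msum M N (cyc R M g)) R M" using msum_submodule[OF N cyc_sub[OF g]] .
    then show ?thesis using gsub_subset[of "msum M N (cyc R M g)" "aP R a P"] gs.hyps(1) subm(1)
      aP_ideal[OF P a] ideal.axioms(1) additive_subgroup.a_subset by blast
  qed
  define q where "q = p \<oplus> p' \<otimes> r"
  have q: "q \<in> P" unfolding q_def using p p' nr P.I_r_closed P.a_closed by auto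
  have qc: "q \<in> carrier R" using q P.a_subset by auto
  let ?d = "w \<ominus>\<^bsub>M\<^esub> (a \<otimes> p) \<odot>\<^bsub>M\<^esub> g"
  have "w \<oplus>\<^bsub>M\<^esub> j \<odot>\<^bsub>M\<^esub> y \<ominus>\<^bsub>M\<^esub> (a \<otimes> q) \<odot>\<^bsub>M\<^esub> g = ?d \<oplus>\<^bsub>M\<^esub> j \<odot>\<^bsub>M\<^esub> n"
  proof -
    have jy: "j \<odot>\<^bsub>M\<^esub> y = j \<odot>\<^bsub>M\<^esub> n \<oplus>\<^bsub>M\<^esub> (a \<otimes> p' \<otimes> r) \<odot>\<^bsub>M\<^esub> g"
      using nr nc g p' pc a by (simp add: smult_r_distr smult_assoc1)
    have aq: "(a \<otimes> q) \<odot>\<^bsub>M\<^esub> g = (a \<otimes> p) \<odot>\<^bsub>M\<^esub> g \<oplus>\<^bsub>M\<^esub> (a \<otimes> p' \<otimes> r) \<odot>\<^bsub>M\<^esub> g"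
    proof -
      have "a \<otimes> q = a \<otimes> p \<oplus> a \<otimes> p' \<otimes> r" unfolding q_def using a pc nr by algebra
      then show ?thesis using a pc nr g by (simp add: smult_l_distr)
    qed
    have c1: "j \<odot>\<^bsub>M\<^esub> n \<in> carrier M" "(a \<otimes> p' \<otimes> r) \<odot>\<^bsub>M\<^esub> g \<in> carrier M" "(a \<otimes> p) \<odot>\<^bsub>M\<^esub> g \<in> carrier M"
      using nc p' pc a nr g by auto
    show ?thesis unfolding jy aq using c1 wc
      by (simp add: a_minus_def M.minus_add M.a_ac M.r_neg1 M.r_neg2 M.r_neg)
  qed
  moreover have "?d \<oplus>\<^bsub>M\<^esub> j \<odot>\<^bsub>M\<^esub> n \<in> N"
  proof -
    have "j \<odot>\<^bsub>M\<^esub> n \<in> N" using subm(4)[OF N] nr(1) p' pc a by simp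
    then show ?thesis using subm(5)[OF N] p(2) by blast
  qed
  ultimately have "w \<oplus>\<^bsub>M\<^esub> j \<odot>\<^bsub>M\<^esub> y \<ominus>\<^bsub>M\<^esub> (a \<otimes> q) \<odot>\<^bsub>M\<^esub> g \<in> N" by simp
  then show ?case using q by blast
qed

lemma step_T:
  assumes P: "maximalideal P R" and a: "a \<in> carrier R"
    and N: "pure_sub R M N" and N': "pure_sub R M N'" and g: "g \<in> carrier M"
    and eq: "N' = msum M N (cyc R M g)"
  shows "Tf R M a P N' = msum M (Tf R M a P N) (cyc R M (a \<odot>\<^bsub>M\<^esub> g))"
    and "\<forall>p\<in>P. p \<odot>\<^bsub>M\<^esub> (a \<odot>\<^bsub>M\<^esub> g) \<in> Tf R M a P N"
    and "a \<odot>\<^bsub>M\<^esub> g \<in> Tf R M a P N \<longleftrightarrow> (\<exists>r\<in>carrier R. r \<notin> P \<and> (r \<otimes> a) \<odot>\<^bsub>M\<^esub> g \<in> N)"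
proof -
  interpret P: maximalideal P R by fact
  have Ns: "submodule N R M" and N's: "submodule N' R M" using N N' unfolding pure_sub_def by auto
  have Pi: "ideal P R" by (rule P.is_ideal)
  have J: "ideal (aP R a P) R" using aP_ideal[OF Pi a] .
  have Jc: "aP R a P \<subseteq> carrier R" using J ideal.axioms(1) additive_subgroup.a_subset by blast
  let ?G = "gsub M (aP R a P) (carrier M)"
  have Gs: "submodule ?G R M" using gsub_submodule[OF J carrier_is_submodule] .
  have ag: "a \<odot>\<^bsub>M\<^esub> g \<in> carrier M" using a g by simp
  have TN: "submodule (Tf R M a P N) R M" using Tf_sub[OF Pi a Ns] .
  have TN': "submodule (Tf R M a P N') R M" using Tf_sub[OF Pi a N's] .
  have NN': "N \<subseteq> N'" unfolding eq using msum_ub1[OF cyc_sub[OF g] subm(1)[OF Ns]] .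
  have gN': "g \<in> N'" unfolding eq using msum_ub2[OF Ns] cyc_sub[OF g] subm(1) cyc_mem[OF g] by blast
  have sN: "submodule (smul M a N) R M" using smul_sub[OF a Ns] .
  have sN': "submodule (smul M a N') R M" using smul_sub[OF a N's] .
  have smN: "smul M a N \<subseteq> Tf R M a P N" unfolding Tf_def using msum_ub1[OF Gs subm(1)[OF sN]] .
  have GN: "?G \<subseteq> Tf R M a P N" unfolding Tf_def using msum_ub2[OF sN subm(1)[OF Gs]] .
  have smN': "smul M a N' \<subseteq> Tf R M a P N'" unfolding Tf_def using msum_ub1[OF Gs subm(1)[OF sN']] .
  have GN': "?G \<subseteq> Tf R M a P N'" unfolding Tf_def using msum_ub2[OF sN' subm(1)[OF Gs]] .
  have B: "\<forall>p\<in>P. p \<odot>\<^bsub>M\<^esub> (a \<odot>\<^bsub>M\<^esub> g) \<in> Tf R M a P N"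
  proof
    fix p assume p: "p \<in> P"
    have pc: "p \<in> carrier R" using p P.a_subset by auto
    have "p \<odot>\<^bsub>M\<^esub> (a \<odot>\<^bsub>M\<^esub> g) = (a \<otimes> p) \<odot>\<^bsub>M\<^esub> g" using pc a g by (simp add: smult_assoc1[symmetric] m_comm)
    moreover have "(a \<otimes> p) \<odot>\<^bsub>M\<^esub> g \<in> ?G" using gsub_mem[OF carrier_is_submodule _ g Jc] p unfolding aP_def by blast
    ultimately show "p \<odot>\<^bsub>M\<^esub> (a \<odot>\<^bsub>M\<^esub> g) \<in> Tf R M a P N" using GN by auto
  qed
  then show "\<forall>p\<in>P. p \<odot>\<^bsub>M\<^esub> (a \<odot>\<^bsub>M\<^esub> g) \<in> Tf R M a P N" .
  show "Tf R M a P N' = msum M (Tf R M a P N) (cyc R M (a \<odot>\<^bsub>M\<^esub> g))"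
  proof
    let ?K = "msum M (Tf R M a P N) (cyc R M (a \<odot>\<^bsub>M\<^esub> g))"
    have K: "submodule ?K R M" using msum_submodule[OF TN cyc_sub[OF ag]] .
    have TK: "Tf R M a P N \<subseteq> ?K" using msum_ub1[OF cyc_sub[OF ag] subm(1)[OF TN]] .
    have CK: "cyc R M (a \<odot>\<^bsub>M\<^esub> g) \<subseteq> ?K" using msum_ub2[OF TN subm(1)[OF cyc_sub[OF ag]]] .
    have sK: "smul M a N' \<subseteq> ?K"
    proof
      fix x assume "x \<in> smul M a N'"
      then obtain y where y: "y \<in> N'" "x = a \<odot>\<^bsub>M\<^esub> y" unfolding smul_def by auto
      then obtain n r where nr: "n \<in> N" "r \<in> carrier R" "y = n \<oplus>\<^bsub>M\<^esub> r \<odot>\<^bsub>M\<^esub> g" unfolding eq msum_def cyc_def by auto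
      have nc: "n \<in> carrier M" using nr subm(1)[OF Ns] by auto
      have "x = a \<odot>\<^bsub>M\<^esub> n \<oplus>\<^bsub>M\<^esub> r \<odot>\<^bsub>M\<^esub> (a \<odot>\<^bsub>M\<^esub> g)"
        using y nr nc a g by (simp add: smult_r_distr smult_assoc1[symmetric] m_comm)
      moreover have "a \<odot>\<^bsub>M\<^esub> n \<in> ?K" using smN TK nr unfolding smul_def by blast
      moreover have "r \<odot>\<^bsub>M\<^esub> (a \<odot>\<^bsub>M\<^esub> g) \<in> ?K" using CK nr unfolding cyc_def by blast
      ultimately show "x \<in> ?K" using subm(5)[OF K] by simp
    qed
    have GK: "?G \<subseteq> ?K" using GN TK by blast
    show "Tf R M a P N' \<subseteq> ?K" unfolding Tf_def[of R M a P N'] by (rule msum_least[OF K sK GK])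
    have "smul M a N \<subseteq> smul M a N'" unfolding smul_def using NN' by blast
    then have "Tf R M a P N \<subseteq> Tf R M a P N'"
      unfolding Tf_def msum_def by blast
    moreover have "cyc R M (a \<odot>\<^bsub>M\<^esub> g) \<subseteq> Tf R M a P N'"
    proof -
      have "a \<odot>\<^bsub>M\<^esub> g \<in> Tf R M a P N'" using smN' gN' unfolding smul_def by blast
      then show ?thesis unfolding cyc_def using subm(4)[OF TN'] by auto
    qed
    ultimately show "?K \<subseteq> Tf R M a P N'" using msum_least[OF TN'] by blast
  qed
  show "a \<odot>\<^bsub>M\<^esub> g \<in> Tf R M a P N \<longleftrightarrow> (\<exists>r\<in>carrier R. r \<notin> P \<and> (r \<otimes> a) \<odot>\<^bsub>M\<^esub> g \<in> N)"
  proof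
    assume "a \<odot>\<^bsub>M\<^esub> g \<in> Tf R M a P N"
    then obtain n w where nw: "n \<in> N" "w \<in> ?G" "a \<odot>\<^bsub>M\<^esub> g = a \<odot>\<^bsub>M\<^esub> n \<oplus>\<^bsub>M\<^esub> w"
      unfolding Tf_def msum_def smul_def by blast
    have nc: "n \<in> carrier M" using nw subm(1)[OF Ns] by auto
    have wc: "w \<in> carrier M" using nw Gs subm(1) by blast
    have an: "a \<odot>\<^bsub>M\<^esub> n \<in> carrier M" using nc a by simp
    have we: "w = a \<odot>\<^bsub>M\<^esub> g \<ominus>\<^bsub>M\<^esub> a \<odot>\<^bsub>M\<^esub> n" using M.ag_eq_sub[OF ag an wc nw(3)] .
    have "w \<in> N'" unfolding we using subm(6)[OF N's] subm(4)[OF N's] a gN' NN' nw(1) by auto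
    then have "w \<in> gsub M (aP R a P) N'" using pure_gsub[OF N' J] nw(2) by blast
    then obtain p where p: "p \<in> P" "w \<ominus>\<^bsub>M\<^esub> (a \<otimes> p) \<odot>\<^bsub>M\<^esub> g \<in> N"
      using gsub_aP_cyc[OF Ns Pi a g] unfolding eq by blast
    have pc: "p \<in> carrier R" using p P.a_subset by auto
    define r where "r = \<one> \<ominus> p"
    have rc: "r \<in> carrier R" unfolding r_def using pc by simp
    have rP: "r \<notin> P"
    proof
      assume "r \<in> P"
      then have "r \<oplus> p \<in> P" using p P.a_closed by auto
      moreover have "r \<oplus> p = \<one>" unfolding r_def using pc by algebra
      ultimately show False using P.I_notcarr P.one_imp_carrier by auto
    qed
    have "(r \<otimes> a) \<odot>\<^bsub>M\<^esub> g = (w \<ominus>\<^bsub>M\<^esub> (a \<otimes> p) \<odot>\<^bsub>M\<^esub> g) \<oplus>\<^bsub>M\<^esub> a \<odot>\<^bsub>M\<^esub> n"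
    proof -
      have "r \<otimes> a = a \<ominus> a \<otimes> p" unfolding r_def using a pc by algebra
      then have "(r \<otimes> a) \<odot>\<^bsub>M\<^esub> g = a \<odot>\<^bsub>M\<^esub> g \<ominus>\<^bsub>M\<^esub> (a \<otimes> p) \<odot>\<^bsub>M\<^esub> g"
        using smult_minus_l[OF a _ g, of "a \<otimes> p"] a pc by simp
      moreover have "a \<odot>\<^bsub>M\<^esub> g = w \<oplus>\<^bsub>M\<^esub> a \<odot>\<^bsub>M\<^esub> n" using nw(3) an wc M.a_comm by simp
      moreover have "(a \<otimes> p) \<odot>\<^bsub>M\<^esub> g \<in> carrier M" using a pc g by simp
      ultimately show ?thesis using wc an by (simp add: a_minus_def M.a_ac)
    qed
    moreover have "a \<odot>\<^bsub>M\<^esub> n \<in> N" using subm(4)[OF Ns] a nw(1) by auto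
    ultimately have "(r \<otimes> a) \<odot>\<^bsub>M\<^esub> g \<in> N" using subm(5)[OF Ns] p(2) by auto
    then show "\<exists>r\<in>carrier R. r \<notin> P \<and> (r \<otimes> a) \<odot>\<^bsub>M\<^esub> g \<in> N" using rc rP by blast
  next
    assume "\<exists>r\<in>carrier R. r \<notin> P \<and> (r \<otimes> a) \<odot>\<^bsub>M\<^esub> g \<in> N"
    then obtain r where r: "r \<in> carrier R" "r \<notin> P" "(r \<otimes> a) \<odot>\<^bsub>M\<^esub> g \<in> N" by blast
    have PI: "ideal (PIdl a) R" using cgenideal_ideal[OF a] .
    have "(r \<otimes> a) \<odot>\<^bsub>M\<^esub> g \<in> gsub M (PIdl a) (carrier M)"
      using gsub_mem[OF carrier_is_submodule _ g] r a cgenideal_def[of R a] PI ideal.axioms(1) additive_subgroup.a_subset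
      by (metis (mono_tags, lifting) mem_Collect_eq)
    then have "(r \<otimes> a) \<odot>\<^bsub>M\<^esub> g \<in> gsub M (PIdl a) N" using pure_gsub[OF N PI r(3)] by blast
    then obtain n0 where n0: "n0 \<in> N" "(r \<otimes> a) \<odot>\<^bsub>M\<^esub> g = a \<odot>\<^bsub>M\<^esub> n0" using gsub_PIdl[OF Ns a] by blast
    have n0c: "n0 \<in> carrier M" using n0 subm(1)[OF Ns] by auto
    obtain s where s: "s \<in> carrier R" "s \<otimes> r \<ominus> \<one> \<in> P" using maximal_inv[OF P r(1,2)] by blast
    have spc: "s \<otimes> r \<ominus> \<one> \<in> carrier R" using s r by simp
    have e3: "a \<odot>\<^bsub>M\<^esub> g = (s \<otimes> r) \<odot>\<^bsub>M\<^esub> (a \<odot>\<^bsub>M\<^esub> g) \<ominus>\<^bsub>M\<^esub> (s \<otimes> r \<ominus> \<one>) \<odot>\<^bsub>M\<^esub> (a \<odot>\<^bsub>M\<^esub> g)"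
    proof -
      have "(s \<otimes> r) \<odot>\<^bsub>M\<^esub> (a \<odot>\<^bsub>M\<^esub> g) \<ominus>\<^bsub>M\<^esub> (s \<otimes> r \<ominus> \<one>) \<odot>\<^bsub>M\<^esub> (a \<odot>\<^bsub>M\<^esub> g) = ((s \<otimes> r) \<ominus> (s \<otimes> r \<ominus> \<one>)) \<odot>\<^bsub>M\<^esub> (a \<odot>\<^bsub>M\<^esub> g)"
        using smult_minus_l[OF _ spc ag] s r by simp
      also have "(s \<otimes> r) \<ominus> (s \<otimes> r \<ominus> \<one>) = \<one>" using s r by algebra
      finally show ?thesis using ag by simp
    qed
    have "(s \<otimes> r) \<odot>\<^bsub>M\<^esub> (a \<odot>\<^bsub>M\<^esub> g) = a \<odot>\<^bsub>M\<^esub> (s \<odot>\<^bsub>M\<^esub> n0)"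
    proof -
      have "(s \<otimes> r) \<odot>\<^bsub>M\<^esub> (a \<odot>\<^bsub>M\<^esub> g) = s \<odot>\<^bsub>M\<^esub> ((r \<otimes> a) \<odot>\<^bsub>M\<^esub> g)"
        using s r a g by (simp add: smult_assoc1 m_assoc)
      also have "\<dots> = a \<odot>\<^bsub>M\<^esub> (s \<odot>\<^bsub>M\<^esub> n0)" using n0 n0c s a by (simp add: smult_assoc1[symmetric] m_comm)
      finally show ?thesis .
    qed
    moreover have "a \<odot>\<^bsub>M\<^esub> (s \<odot>\<^bsub>M\<^esub> n0) \<in> Tf R M a P N"
      using smN subm(4)[OF Ns] s n0 unfolding smul_def by blast
    ultimately have "(s \<otimes> r) \<odot>\<^bsub>M\<^esub> (a \<odot>\<^bsub>M\<^esub> g) \<in> Tf R M a P N" by simp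
    moreover have "(s \<otimes> r \<ominus> \<one>) \<odot>\<^bsub>M\<^esub> (a \<odot>\<^bsub>M\<^esub> g) \<in> Tf R M a P N" using B s by blast
    ultimately show "a \<odot>\<^bsub>M\<^esub> g \<in> Tf R M a P N" using e3 subm(6)[OF TN] by metis
  qed
qed

end


definition cs :: "('r, 'a) module \<Rightarrow> 'a set \<Rightarrow> 'a \<Rightarrow> 'a set" where
  "cs M H x = {h \<oplus>\<^bsub>M\<^esub> x | h. h \<in> H}"

lemma qm_carrier: "carrier (quot_mod R (M\<lparr>carrier := X\<rparr>) H) = cs M H ` X"
  unfolding quot_mod_def A_RCOSETS_def RCOSETS_def a_r_coset_def r_coset_def cs_def by auto

lemma qm_zero: "\<zero>\<^bsub>quot_mod R (M\<lparr>carrier := X\<rparr>) H\<^esub> = H"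
  unfolding quot_mod_def by simp

lemma qm_add: "U \<oplus>\<^bsub>quot_mod R (M\<lparr>carrier := X\<rparr>) H\<^esub> V = {u \<oplus>\<^bsub>M\<^esub> v | u v. u \<in> U \<and> v \<in> V}"
  unfolding quot_mod_def set_add_def set_mult_def by auto

lemma qm_smult: "r \<odot>\<^bsub>quot_mod R (M\<lparr>carrier := X\<rparr>) H\<^esub> U = cs M H (r \<odot>\<^bsub>M\<^esub> rep U)"
  unfolding quot_mod_def a_r_coset_def r_coset_def cs_def by auto

context mymod
begin

lemma cs_mem: "submodule H R M \<Longrightarrow> x \<in> carrier M \<Longrightarrow> z \<in> carrier M \<Longrightarrow> z \<in> cs M H x \<longleftrightarrow> z \<ominus>\<^bsub>M\<^esub> x \<in> H"
proof
  assume H: "submodule H R M" and x: "x \<in> carrier M" and z: "z \<in> carrier M"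
  assume "z \<in> cs M H x"
  then obtain h where h: "h \<in> H" "z = h \<oplus>\<^bsub>M\<^esub> x" unfolding cs_def by auto
  have hc: "h \<in> carrier M" using h subm(1)[OF H] by auto
  have "z \<ominus>\<^bsub>M\<^esub> x = h" using h(2) M.ag_c2[OF hc x] by simp
  then show "z \<ominus>\<^bsub>M\<^esub> x \<in> H" using h by simp
next
  assume H: "submodule H R M" and x: "x \<in> carrier M" and z: "z \<in> carrier M"
  assume "z \<ominus>\<^bsub>M\<^esub> x \<in> H"
  moreover have "z = (z \<ominus>\<^bsub>M\<^esub> x) \<oplus>\<^bsub>M\<^esub> x" using x z by (simp add: M.ag_c3)
  ultimately show "z \<in> cs M H x" unfolding cs_def by blast
qed

lemma cs_self: "submodule H R M \<Longrightarrow> x \<in> carrier M \<Longrightarrow> x \<in> cs M H x"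
  using cs_mem by (simp add: a_minus_def M.r_neg subm(2))

lemma cs_sub: "submodule H R M \<Longrightarrow> x \<in> carrier M \<Longrightarrow> cs M H x \<subseteq> carrier M"
  unfolding cs_def using subm(1) by auto

lemma cs_eq: "submodule H R M \<Longrightarrow> x \<in> carrier M \<Longrightarrow> y \<in> carrier M \<Longrightarrow> cs M H x = cs M H y \<longleftrightarrow> x \<ominus>\<^bsub>M\<^esub> y \<in> H"
proof
  assume H: "submodule H R M" and x: "x \<in> carrier M" and y: "y \<in> carrier M"
  assume "cs M H x = cs M H y"
  then have "x \<in> cs M H y" using cs_self[OF H x] by simp
  then show "x \<ominus>\<^bsub>M\<^esub> y \<in> H" using cs_mem[OF H y x] by simp
next
  assume H: "submodule H R M" and x: "x \<in> carrier M" and y: "y \<in> carrier M"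
  assume d: "x \<ominus>\<^bsub>M\<^esub> y \<in> H"
  have d': "y \<ominus>\<^bsub>M\<^esub> x \<in> H"
  proof -
    have "y \<ominus>\<^bsub>M\<^esub> x = \<ominus>\<^bsub>M\<^esub> (x \<ominus>\<^bsub>M\<^esub> y)" using x y by (simp add: a_minus_def M.minus_add M.a_comm)
    then show ?thesis using subm(3)[OF H d] by simp
  qed
  have A: "cs M H a \<subseteq> cs M H b" if ab: "a \<in> carrier M" "b \<in> carrier M" "a \<ominus>\<^bsub>M\<^esub> b \<in> H" for a b
  proof
    fix z assume z: "z \<in> cs M H a"
    have zc: "z \<in> carrier M" using cs_sub[OF H ab(1)] z by auto
    have "z \<ominus>\<^bsub>M\<^esub> a \<in> H" using cs_mem[OF H ab(1) zc] z by simp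
    moreover have "z \<ominus>\<^bsub>M\<^esub> b = (z \<ominus>\<^bsub>M\<^esub> a) \<oplus>\<^bsub>M\<^esub> (a \<ominus>\<^bsub>M\<^esub> b)"
      using zc ab by (simp add: a_minus_def M.a_assoc M.l_neg M.r_neg1)
    ultimately have "z \<ominus>\<^bsub>M\<^esub> b \<in> H" using subm(5)[OF H] ab(3) by simp
    then show "z \<in> cs M H b" using cs_mem[OF H ab(2) zc] by simp
  qed
  show "cs M H x = cs M H y" using A[OF x y d] A[OF y x d'] by auto
qed

lemma cs_zero: "submodule H R M \<Longrightarrow> x \<in> carrier M \<Longrightarrow> cs M H x = H \<longleftrightarrow> x \<in> H"
proof -
  assume H: "submodule H R M" and x: "x \<in> carrier M"
  have "cs M H \<zero>\<^bsub>M\<^esub> = H" unfolding cs_def using subm(1)[OF H] by force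
  moreover have "x \<ominus>\<^bsub>M\<^esub> \<zero>\<^bsub>M\<^esub> = x" using M.ag_c2[OF x M.zero_closed] x by simp
  ultimately show ?thesis using cs_eq[OF H x M.zero_closed] by simp
qed

lemma cs_add: "submodule H R M \<Longrightarrow> x \<in> carrier M \<Longrightarrow> y \<in> carrier M \<Longrightarrow>
   {u \<oplus>\<^bsub>M\<^esub> v | u v. u \<in> cs M H x \<and> v \<in> cs M H y} = cs M H (x \<oplus>\<^bsub>M\<^esub> y)"
proof (rule Set.set_eqI, rule iffI)
  fix z assume H: "submodule H R M" and x: "x \<in> carrier M" and y: "y \<in> carrier M"
  assume "z \<in> {u \<oplus>\<^bsub>M\<^esub> v | u v. u \<in> cs M H x \<and> v \<in> cs M H y}"
  then obtain h k where hk: "h \<in> H" "k \<in> H" "z = (h \<oplus>\<^bsub>M\<^esub> x) \<oplus>\<^bsub>M\<^esub> (k \<oplus>\<^bsub>M\<^esub> y)" unfolding cs_def by auto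
  have hkc: "h \<in> carrier M" "k \<in> carrier M" using hk subm(1)[OF H] by auto
  have "z = (h \<oplus>\<^bsub>M\<^esub> k) \<oplus>\<^bsub>M\<^esub> (x \<oplus>\<^bsub>M\<^esub> y)" using hk(3) hkc x y by (simp add: M.a_ac)
  then show "z \<in> cs M H (x \<oplus>\<^bsub>M\<^esub> y)" unfolding cs_def using subm(5)[OF H] hk by blast
next
  fix z assume H: "submodule H R M" and x: "x \<in> carrier M" and y: "y \<in> carrier M"
  assume "z \<in> cs M H (x \<oplus>\<^bsub>M\<^esub> y)"
  then obtain h where h: "h \<in> H" "z = h \<oplus>\<^bsub>M\<^esub> (x \<oplus>\<^bsub>M\<^esub> y)" unfolding cs_def by auto
  have hc: "h \<in> carrier M" using h subm(1)[OF H] by auto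
  have "z = (h \<oplus>\<^bsub>M\<^esub> x) \<oplus>\<^bsub>M\<^esub> (\<zero>\<^bsub>M\<^esub> \<oplus>\<^bsub>M\<^esub> y)" using h(2) hc x y by (simp add: M.a_ac)
  then show "z \<in> {u \<oplus>\<^bsub>M\<^esub> v | u v. u \<in> cs M H x \<and> v \<in> cs M H y}" unfolding cs_def using h subm(2)[OF H] by blast
qed

lemma rep_cs: "submodule H R M \<Longrightarrow> x \<in> carrier M \<Longrightarrow> rep (cs M H x) \<in> cs M H x"
  unfolding rep_def using cs_self by (metis someI_ex)

lemma cs_rep: "submodule H R M \<Longrightarrow> x \<in> carrier M \<Longrightarrow> cs M H (rep (cs M H x)) = cs M H x"
proof -
  assume H: "submodule H R M" and x: "x \<in> carrier M"
  have r: "rep (cs M H x) \<in> cs M H x" using rep_cs[OF H x] .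
  have rc: "rep (cs M H x) \<in> carrier M" using cs_sub[OF H x] r by auto
  show ?thesis using cs_eq[OF H rc x] cs_mem[OF H x rc] r by simp
qed

lemma cs_smult_rep: "submodule H R M \<Longrightarrow> x \<in> carrier M \<Longrightarrow> t \<in> carrier R \<Longrightarrow>
   cs M H (t \<odot>\<^bsub>M\<^esub> rep (cs M H x)) = cs M H (t \<odot>\<^bsub>M\<^esub> x)"
proof -
  assume H: "submodule H R M" and x: "x \<in> carrier M" and t: "t \<in> carrier R"
  have r: "rep (cs M H x) \<in> cs M H x" using rep_cs[OF H x] .
  have rc: "rep (cs M H x) \<in> carrier M" using cs_sub[OF H x] r by auto
  have d: "rep (cs M H x) \<ominus>\<^bsub>M\<^esub> x \<in> H" using cs_mem[OF H x rc] r by simp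
  have "t \<odot>\<^bsub>M\<^esub> rep (cs M H x) \<ominus>\<^bsub>M\<^esub> t \<odot>\<^bsub>M\<^esub> x = t \<odot>\<^bsub>M\<^esub> (rep (cs M H x) \<ominus>\<^bsub>M\<^esub> x)"
    using rc x t by (simp add: a_minus_def smult_r_distr smult_r_minus)
  then have "t \<odot>\<^bsub>M\<^esub> rep (cs M H x) \<ominus>\<^bsub>M\<^esub> t \<odot>\<^bsub>M\<^esub> x \<in> H" using subm(4)[OF H t d] by simp
  then show ?thesis using cs_eq[OF H] rc x t by simp
qed


lemma factor_gen:
  assumes ser: "pc_series R M n Ms" and i: "i \<in> {1..n}" and cy: "cyclic_mod R (factor R M Ms i)"
  shows "\<exists>g. g \<in> Ms i \<and> g \<notin> Ms (i - 1) \<and> Ms i = msum M (Ms (i - 1)) (cyc R M g) \<and>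
     ann R (factor R M Ms i) = {r \<in> carrier R. r \<odot>\<^bsub>M\<^esub> g \<in> Ms (i - 1)} \<and>
     carrier (factor R M Ms i) = {cs M (Ms (i - 1)) (r \<odot>\<^bsub>M\<^esub> g) | r. r \<in> carrier R}"
proof -
  let ?N = "Ms (i - 1)" and ?N' = "Ms i" and ?Q = "factor R M Ms i"
  have N: "submodule ?N R M" and N': "submodule ?N' R M"
    using ser i unfolding pc_series_def pure_sub_def by auto
  have strict: "?N \<subset> ?N'" using ser i unfolding pc_series_def by auto
  have Q: "?Q = quot_mod R (M\<lparr>carrier := ?N'\<rparr>) ?N" unfolding factor_def ..
  obtain G0 where G0: "G0 \<in> carrier ?Q" "carrier ?Q = {r \<odot>\<^bsub>?Q\<^esub> G0 | r. r \<in> carrier R}"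
    using cy unfolding cyclic_mod_def by auto
  obtain x0 where x0: "x0 \<in> ?N'" "G0 = cs M ?N x0" using G0(1) unfolding Q qm_carrier by auto
  have x0c: "x0 \<in> carrier M" using x0 subm(1)[OF N'] by auto
  define g where "g = rep G0"
  have gG: "g \<in> G0" unfolding g_def x0(2) using rep_cs[OF N x0c] .
  have gc: "g \<in> carrier M" using gG x0(2) cs_sub[OF N x0c] by auto
  have gN': "g \<in> ?N'"
  proof -
    obtain h where "h \<in> ?N" "g = h \<oplus>\<^bsub>M\<^esub> x0" using gG x0(2) unfolding cs_def by auto
    then show ?thesis using subm(5)[OF N'] strict x0(1) by auto
  qed
  have sm: "r \<odot>\<^bsub>?Q\<^esub> G0 = cs M ?N (r \<odot>\<^bsub>M\<^esub> g)" for r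
    unfolding Q qm_smult g_def ..
  have carQ: "carrier ?Q = {cs M ?N (r \<odot>\<^bsub>M\<^esub> g) | r. r \<in> carrier R}" using G0(2) sm by simp
  have eq: "?N' = msum M ?N (cyc R M g)"
  proof
    show "?N' \<subseteq> msum M ?N (cyc R M g)"
    proof
      fix y assume y: "y \<in> ?N'"
      have yc: "y \<in> carrier M" using y subm(1)[OF N'] by auto
      have "cs M ?N y \<in> carrier ?Q" unfolding Q qm_carrier using y by auto
      then obtain r where r: "r \<in> carrier R" "cs M ?N y = cs M ?N (r \<odot>\<^bsub>M\<^esub> g)" using carQ by auto
      have rg: "r \<odot>\<^bsub>M\<^esub> g \<in> carrier M" using r gc by simp
      have d: "y \<ominus>\<^bsub>M\<^esub> r \<odot>\<^bsub>M\<^esub> g \<in> ?N" using cs_eq[OF N yc rg] r by simp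
      have "y = (y \<ominus>\<^bsub>M\<^esub> r \<odot>\<^bsub>M\<^esub> g) \<oplus>\<^bsub>M\<^esub> r \<odot>\<^bsub>M\<^esub> g" using yc rg by (simp add: M.ag_c3)
      then show "y \<in> msum M ?N (cyc R M g)" unfolding msum_def cyc_def using d r by blast
    qed
    have "cyc R M g \<subseteq> ?N'" unfolding cyc_def using subm(4)[OF N'] gN' by auto
    then show "msum M ?N (cyc R M g) \<subseteq> ?N'" using msum_least[OF N'] strict by auto
  qed
  have gN: "g \<notin> ?N"
  proof
    assume "g \<in> ?N"
    then have "msum M ?N (cyc R M g) = ?N" using msum_cyc_eq[OF N gc] by simp
    then show False using eq strict by simp
  qed
  have ann: "ann R ?Q = {r \<in> carrier R. r \<odot>\<^bsub>M\<^esub> g \<in> ?N}"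
  proof
    show "ann R ?Q \<subseteq> {r \<in> carrier R. r \<odot>\<^bsub>M\<^esub> g \<in> ?N}"
    proof
      fix r assume r: "r \<in> ann R ?Q"
      then have rc: "r \<in> carrier R" unfolding ann_def by auto
      have "r \<odot>\<^bsub>?Q\<^esub> G0 = \<zero>\<^bsub>?Q\<^esub>" using r G0(1) unfolding ann_def by auto
      then have "cs M ?N (r \<odot>\<^bsub>M\<^esub> g) = ?N" unfolding sm unfolding Q qm_zero .
      then have "r \<odot>\<^bsub>M\<^esub> g \<in> ?N" using cs_zero[OF N] rc gc by simp
      then show "r \<in> {r \<in> carrier R. r \<odot>\<^bsub>M\<^esub> g \<in> ?N}" using rc by simp
    qed
    show "{r \<in> carrier R. r \<odot>\<^bsub>M\<^esub> g \<in> ?N} \<subseteq> ann R ?Q"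
    proof
      fix r assume r: "r \<in> {r \<in> carrier R. r \<odot>\<^bsub>M\<^esub> g \<in> ?N}"
      then have rc: "r \<in> carrier R" and rg: "r \<odot>\<^bsub>M\<^esub> g \<in> ?N" by auto
      have "r \<odot>\<^bsub>?Q\<^esub> X = \<zero>\<^bsub>?Q\<^esub>" if X: "X \<in> carrier ?Q" for X
      proof -
        obtain s where s: "s \<in> carrier R" "X = cs M ?N (s \<odot>\<^bsub>M\<^esub> g)" using X carQ by auto
        have sg: "s \<odot>\<^bsub>M\<^esub> g \<in> carrier M" using s gc by simp
        have "r \<odot>\<^bsub>?Q\<^esub> X = cs M ?N (r \<odot>\<^bsub>M\<^esub> rep (cs M ?N (s \<odot>\<^bsub>M\<^esub> g)))" unfolding Q qm_smult s(2) ..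
        also have "\<dots> = cs M ?N (r \<odot>\<^bsub>M\<^esub> (s \<odot>\<^bsub>M\<^esub> g))" using cs_smult_rep[OF N sg rc] .
        also have "r \<odot>\<^bsub>M\<^esub> (s \<odot>\<^bsub>M\<^esub> g) = s \<odot>\<^bsub>M\<^esub> (r \<odot>\<^bsub>M\<^esub> g)"
          using rc s gc by (simp add: smult_assoc1[symmetric] m_comm)
        also have "cs M ?N (s \<odot>\<^bsub>M\<^esub> (r \<odot>\<^bsub>M\<^esub> g)) = ?N"
          using cs_zero[OF N] subm(4)[OF N s(1) rg] rg subm(1)[OF N] s(1) by auto
        finally show ?thesis unfolding Q qm_zero .
      qed
      then show "r \<in> ann R ?Q" unfolding ann_def using rc by auto
    qed
  qed
  show ?thesis using gN' gN eq ann carQ by blast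
qed

end


context mymod
begin

lemma factor_iso:
  assumes N1: "submodule N1 R M" and g1: "g1 \<in> carrier M"
    and car1: "carrier (quot_mod R (M\<lparr>carrier := N1'\<rparr>) N1) = {cs M N1 (r \<odot>\<^bsub>M\<^esub> g1) | r. r \<in> carrier R}"
    and N2: "submodule N2 R M" and g2: "g2 \<in> carrier M"
    and car2: "carrier (quot_mod R (M\<lparr>carrier := N2'\<rparr>) N2) = {cs M N2 (r \<odot>\<^bsub>M\<^esub> g2) | r. r \<in> carrier R}"
    and A: "{r \<in> carrier R. r \<odot>\<^bsub>M\<^esub> g1 \<in> N1} = {r \<in> carrier R. r \<odot>\<^bsub>M\<^esub> g2 \<in> N2}"
  shows "mod_iso R (quot_mod R (M\<lparr>carrier := N1'\<rparr>) N1) (quot_mod R (M\<lparr>carrier := N2'\<rparr>) N2)"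
proof -
  let ?Q1 = "quot_mod R (M\<lparr>carrier := N1'\<rparr>) N1" and ?Q2 = "quot_mod R (M\<lparr>carrier := N2'\<rparr>) N2"
  have key1: "cs M N1 (r \<odot>\<^bsub>M\<^esub> g1) = cs M N1 (s \<odot>\<^bsub>M\<^esub> g1) \<longleftrightarrow> (r \<ominus> s) \<odot>\<^bsub>M\<^esub> g1 \<in> N1"
    if "r \<in> carrier R" "s \<in> carrier R" for r s
    using cs_eq[OF N1] smult_minus_l[OF that g1] that g1 by simp
  have key2: "cs M N2 (r \<odot>\<^bsub>M\<^esub> g2) = cs M N2 (s \<odot>\<^bsub>M\<^esub> g2) \<longleftrightarrow> (r \<ominus> s) \<odot>\<^bsub>M\<^esub> g2 \<in> N2"
    if "r \<in> carrier R" "s \<in> carrier R" for r s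
    using cs_eq[OF N2] smult_minus_l[OF that g2] that g2 by simp
  have key: "cs M N1 (r \<odot>\<^bsub>M\<^esub> g1) = cs M N1 (s \<odot>\<^bsub>M\<^esub> g1) \<longleftrightarrow> cs M N2 (r \<odot>\<^bsub>M\<^esub> g2) = cs M N2 (s \<odot>\<^bsub>M\<^esub> g2)"
    if rs: "r \<in> carrier R" "s \<in> carrier R" for r s
  proof -
    have "r \<ominus> s \<in> carrier R" using rs by simp
    then have "(r \<ominus> s) \<odot>\<^bsub>M\<^esub> g1 \<in> N1 \<longleftrightarrow> (r \<ominus> s) \<odot>\<^bsub>M\<^esub> g2 \<in> N2" using A by blast
    then show ?thesis using key1[OF rs] key2[OF rs] by simp
  qed
  define f where "f X = cs M N2 ((SOME r. r \<in> carrier R \<and> X = cs M N1 (r \<odot>\<^bsub>M\<^esub> g1)) \<odot>\<^bsub>M\<^esub> g2)" for X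
  have F: "f (cs M N1 (r \<odot>\<^bsub>M\<^esub> g1)) = cs M N2 (r \<odot>\<^bsub>M\<^esub> g2)" if r: "r \<in> carrier R" for r
  proof -
    let ?r = "SOME r'. r' \<in> carrier R \<and> cs M N1 (r \<odot>\<^bsub>M\<^esub> g1) = cs M N1 (r' \<odot>\<^bsub>M\<^esub> g1)"
    have "?r \<in> carrier R \<and> cs M N1 (r \<odot>\<^bsub>M\<^esub> g1) = cs M N1 (?r \<odot>\<^bsub>M\<^esub> g1)"
      by (rule someI[of _ r]) (use r in simp)
    then have "cs M N2 (?r \<odot>\<^bsub>M\<^esub> g2) = cs M N2 (r \<odot>\<^bsub>M\<^esub> g2)" using key[OF r] by auto
    then show ?thesis unfolding f_def .
  qed
  show ?thesis
    unfolding mod_iso_def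
  proof (intro exI conjI ballI)
    show "bij_betw f (carrier ?Q1) (carrier ?Q2)"
      unfolding bij_betw_def
    proof
      show "inj_on f (carrier ?Q1)"
      proof
        fix X Y assume "X \<in> carrier ?Q1" "Y \<in> carrier ?Q1" and e: "f X = f Y"
        then obtain r s where rs: "r \<in> carrier R" "X = cs M N1 (r \<odot>\<^bsub>M\<^esub> g1)" "s \<in> carrier R" "Y = cs M N1 (s \<odot>\<^bsub>M\<^esub> g1)"
          unfolding car1 by auto
        then show "X = Y" using e F key by auto
      qed
      show "f ` carrier ?Q1 = carrier ?Q2"
        unfolding car1 car2 using F by (auto simp: image_iff)
    qed
  next
    fix X Y assume "X \<in> carrier ?Q1" "Y \<in> carrier ?Q1"
    then obtain r s where rs: "r \<in> carrier R" "X = cs M N1 (r \<odot>\<^bsub>M\<^esub> g1)" "s \<in> carrier R" "Y = cs M N1 (s \<odot>\<^bsub>M\<^esub> g1)"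
      unfolding car1 by auto
    have "X \<oplus>\<^bsub>?Q1\<^esub> Y = cs M N1 ((r \<oplus> s) \<odot>\<^bsub>M\<^esub> g1)"
      unfolding qm_add rs using cs_add[OF N1] rs g1 by (simp add: smult_l_distr)
    then have "f (X \<oplus>\<^bsub>?Q1\<^esub> Y) = cs M N2 ((r \<oplus> s) \<odot>\<^bsub>M\<^esub> g2)" using F rs by simp
    also have "\<dots> = f X \<oplus>\<^bsub>?Q2\<^esub> f Y"
      unfolding qm_add using F rs cs_add[OF N2] g2 by (simp add: smult_l_distr)
    finally show "f (X \<oplus>\<^bsub>?Q1\<^esub> Y) = f X \<oplus>\<^bsub>?Q2\<^esub> f Y" .
  next
    fix t X assume t: "t \<in> carrier R" and "X \<in> carrier ?Q1"
    then obtain r where r: "r \<in> carrier R" "X = cs M N1 (r \<odot>\<^bsub>M\<^esub> g1)" unfolding car1 by auto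
    have "t \<odot>\<^bsub>?Q1\<^esub> X = cs M N1 ((t \<otimes> r) \<odot>\<^bsub>M\<^esub> g1)"
      unfolding qm_smult r(2) using cs_smult_rep[OF N1 _ t] r g1 t by (simp add: smult_assoc1)
    then have "f (t \<odot>\<^bsub>?Q1\<^esub> X) = cs M N2 ((t \<otimes> r) \<odot>\<^bsub>M\<^esub> g2)" using F r t by simp
    also have "\<dots> = t \<odot>\<^bsub>?Q2\<^esub> f X"
      unfolding qm_smult r(2) F[OF r(1)] using cs_smult_rep[OF N2 _ t] r g2 t by (simp add: smult_assoc1)
    finally show "f (t \<odot>\<^bsub>?Q1\<^esub> X) = t \<odot>\<^bsub>?Q2\<^esub> f X" .
  qed
qed

end


context mymod
begin

lemma chain_count:
  assumes ser: "pc_series R M n Ms"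
    and gens: "\<forall>i\<in>{1..n}. gs i \<in> carrier M \<and> Ms i = msum M (Ms (i - 1)) (cyc R M (gs i))"
    and P: "maximalideal P R" and a: "a \<in> carrier R"
  shows "L.good (\<lambda>i. Tf R M a P (Ms i)) n \<and>
    L.cnt (\<lambda>i. Tf R M a P (Ms i)) n = card {i \<in> {1..n}. \<forall>r\<in>carrier R. (r \<otimes> a) \<odot>\<^bsub>M\<^esub> gs i \<in> Ms (i - 1) \<longrightarrow> r \<in> P}"
proof -
  interpret P: maximalideal P R by fact
  let ?T = "\<lambda>i. Tf R M a P (Ms i)"
  have pure: "\<And>i. i \<le> n \<Longrightarrow> pure_sub R M (Ms i)" using ser unfolding pc_series_def by auto
  have subs: "\<And>i. i \<le> n \<Longrightarrow> submodule (Ms i) R M" using pure unfolding pure_sub_def by auto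
  have TF: "\<And>i. i \<le> n \<Longrightarrow> ?T i \<in> {X. submodule X R M}" using Tf_sub[OF P.is_ideal a] subs by auto
  have stepi: "?T (Suc i) = ?T i \<or> L.covers (?T i) (?T (Suc i))"
    and neq: "?T i \<noteq> ?T (Suc i) \<longleftrightarrow> (\<forall>r\<in>carrier R. (r \<otimes> a) \<odot>\<^bsub>M\<^esub> gs (Suc i) \<in> Ms i \<longrightarrow> r \<in> P)"
    if i: "i < n" for i
  proof -
    have g: "gs (Suc i) \<in> carrier M" "Ms (Suc i) = msum M (Ms i) (cyc R M (gs (Suc i)))"
      using gens i by auto
    have p1: "pure_sub R M (Ms i)" and p2: "pure_sub R M (Ms (Suc i))" using pure i by auto
    note st = step_T[OF P a p1 p2 g(1) g(2)]
    have agc: "a \<odot>\<^bsub>M\<^esub> gs (Suc i) \<in> carrier M" using a g by simp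
    have Ti: "submodule (?T i) R M" using TF i by auto
    show "?T (Suc i) = ?T i \<or> L.covers (?T i) (?T (Suc i))"
      using cover[OF P Ti agc st(2)] st(1) i by simp
    have e1: "?T i = ?T (Suc i) \<longleftrightarrow> a \<odot>\<^bsub>M\<^esub> gs (Suc i) \<in> ?T i"
    proof -
      have "?T i = ?T (Suc i) \<longleftrightarrow> msum M (?T i) (cyc R M (a \<odot>\<^bsub>M\<^esub> gs (Suc i))) = ?T i"
        using st(1) by (simp add: eq_commute)
      then show ?thesis using msum_cyc_eq[OF Ti agc] by simp
    qed
    show "?T i \<noteq> ?T (Suc i) \<longleftrightarrow> (\<forall>r\<in>carrier R. (r \<otimes> a) \<odot>\<^bsub>M\<^esub> gs (Suc i) \<in> Ms i \<longrightarrow> r \<in> P)"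
      using e1 st(3) by blast
  qed
  have good: "L.good ?T n"
    unfolding L.good_def
  proof (intro conjI allI impI)
    fix i assume "i \<le> n" then show "?T i \<in> {X. submodule X R M}" by (rule TF)
  next
    fix i assume "i < n" then show "?T i = ?T (Suc i) \<or> L.covers (?T i) (?T (Suc i))" using stepi by metis
  qed
  have setE: "{i. i < n \<and> ?T i \<noteq> ?T (Suc i)} = {i. i < n \<and> (\<forall>r\<in>carrier R. (r \<otimes> a) \<odot>\<^bsub>M\<^esub> gs (Suc i) \<in> Ms i \<longrightarrow> r \<in> P)}"
  proof (rule Collect_cong)
    fix i show "(i < n \<and> ?T i \<noteq> ?T (Suc i)) = (i < n \<and> (\<forall>r\<in>carrier R. (r \<otimes> a) \<odot>\<^bsub>M\<^esub> gs (Suc i) \<in> Ms i \<longrightarrow> r \<in> P))"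
      using neq[of i] by blast
  qed
  have imE: "Suc ` {i. i < n \<and> (\<forall>r\<in>carrier R. (r \<otimes> a) \<odot>\<^bsub>M\<^esub> gs (Suc i) \<in> Ms i \<longrightarrow> r \<in> P)}
     = {i \<in> {1..n}. \<forall>r\<in>carrier R. (r \<otimes> a) \<odot>\<^bsub>M\<^esub> gs i \<in> Ms (i - 1) \<longrightarrow> r \<in> P}"
  proof (rule Set.set_eqI, rule iffI)
    fix j assume "j \<in> Suc ` {i. i < n \<and> (\<forall>r\<in>carrier R. (r \<otimes> a) \<odot>\<^bsub>M\<^esub> gs (Suc i) \<in> Ms i \<longrightarrow> r \<in> P)}"
    then obtain i where i: "j = Suc i" "i < n" "\<forall>r\<in>carrier R. (r \<otimes> a) \<odot>\<^bsub>M\<^esub> gs (Suc i) \<in> Ms i \<longrightarrow> r \<in> P"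
      by blast
    then show "j \<in> {i \<in> {1..n}. \<forall>r\<in>carrier R. (r \<otimes> a) \<odot>\<^bsub>M\<^esub> gs i \<in> Ms (i - 1) \<longrightarrow> r \<in> P}" by simp
  next
    fix j assume j: "j \<in> {i \<in> {1..n}. \<forall>r\<in>carrier R. (r \<otimes> a) \<odot>\<^bsub>M\<^esub> gs i \<in> Ms (i - 1) \<longrightarrow> r \<in> P}"
    then have j1: "1 \<le> j" "j \<le> n" and jc: "\<forall>r\<in>carrier R. (r \<otimes> a) \<odot>\<^bsub>M\<^esub> gs j \<in> Ms (j - 1) \<longrightarrow> r \<in> P"
      by auto
    have js: "Suc (j - 1) = j" using j1 by simp
    have "j - 1 < n" using j1 by simp
    then have "j - 1 \<in> {i. i < n \<and> (\<forall>r\<in>carrier R. (r \<otimes> a) \<odot>\<^bsub>M\<^esub> gs (Suc i) \<in> Ms i \<longrightarrow> r \<in> P)}"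
      using jc js by simp
    then show "j \<in> Suc ` {i. i < n \<and> (\<forall>r\<in>carrier R. (r \<otimes> a) \<odot>\<^bsub>M\<^esub> gs (Suc i) \<in> Ms i \<longrightarrow> r \<in> P)}"
      by (rule image_eqI[where f=Suc, OF js[symmetric]])
  qed
  have "L.cnt ?T n = card {i. i < n \<and> (\<forall>r\<in>carrier R. (r \<otimes> a) \<odot>\<^bsub>M\<^esub> gs (Suc i) \<in> Ms i \<longrightarrow> r \<in> P)}"
    unfolding L.cnt_def setE ..
  also have "\<dots> = card (Suc ` {i. i < n \<and> (\<forall>r\<in>carrier R. (r \<otimes> a) \<odot>\<^bsub>M\<^esub> gs (Suc i) \<in> Ms i \<longrightarrow> r \<in> P)})"
    by (rule card_image[symmetric]) (simp add: inj_on_def)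
  also have "\<dots> = card {i \<in> {1..n}. \<forall>r\<in>carrier R. (r \<otimes> a) \<odot>\<^bsub>M\<^esub> gs i \<in> Ms (i - 1) \<longrightarrow> r \<in> P}"
    unfolding imE ..
  finally show ?thesis using good by blast
qed

lemma counts_eq:
  assumes ser: "pc_series R M n Ms"
    and gens: "\<forall>i\<in>{1..n}. gs i \<in> carrier M \<and> Ms i = msum M (Ms (i - 1)) (cyc R M (gs i))"
    and ser': "pc_series R M m Ns"
    and gens': "\<forall>i\<in>{1..m}. hs i \<in> carrier M \<and> Ns i = msum M (Ns (i - 1)) (cyc R M (hs i))"
    and P: "maximalideal P R" and a: "a \<in> carrier R"
  shows "card {i \<in> {1..n}. \<forall>r\<in>carrier R. (r \<otimes> a) \<odot>\<^bsub>M\<^esub> gs i \<in> Ms (i - 1) \<longrightarrow> r \<in> P}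
       = card {i \<in> {1..m}. \<forall>r\<in>carrier R. (r \<otimes> a) \<odot>\<^bsub>M\<^esub> hs i \<in> Ns (i - 1) \<longrightarrow> r \<in> P}"
proof -
  note c1 = chain_count[OF ser gens P a] and c2 = chain_count[OF ser' gens' P a]
  have "Ms 0 = Ns 0" "Ms n = Ns m" using ser ser' unfolding pc_series_def by auto
  then have "L.cnt (\<lambda>i. Tf R M a P (Ms i)) n = L.cnt (\<lambda>i. Tf R M a P (Ns i)) m"
    using L.jordan_hoelder[of "\<lambda>i. Tf R M a P (Ms i)" n "\<lambda>i. Tf R M a P (Ns i)" m] c1 c2 by simp
  then show ?thesis using c1 c2 by simp
qed

end


lemma chain_max:
  assumes "finite S" "S \<noteq> {}" "\<forall>i\<in>S. \<forall>j\<in>S. A i \<subseteq> A j \<or> A j \<subseteq> A i"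
  shows "\<exists>k\<in>S. \<forall>i\<in>S. A i \<subseteq> A k"
  using assms
proof (induction S rule: finite_ne_induct)
  case (singleton x) then show ?case by auto
next
  case (insert x F)
  then obtain k where k: "k \<in> F" "\<forall>i\<in>F. A i \<subseteq> A k" by auto
  have "A x \<subseteq> A k \<or> A k \<subseteq> A x" using insert.prems k(1) by auto
  then show ?case
  proof
    assume "A x \<subseteq> A k" then show ?thesis using k by auto
  next
    assume "A k \<subseteq> A x" then show ?thesis using k by (intro bexI[of _ x]) auto
  qed
qed

lemma chain_min:
  assumes "finite S" "S \<noteq> {}" "\<forall>i\<in>S. \<forall>j\<in>S. A i \<subseteq> A j \<or> A j \<subseteq> A i"
  shows "\<exists>k\<in>S. \<forall>i\<in>S. A k \<subseteq> A i"
  using assms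
proof (induction S rule: finite_ne_induct)
  case (singleton x) then show ?case by auto
next
  case (insert x F)
  then obtain k where k: "k \<in> F" "\<forall>i\<in>F. A k \<subseteq> A i" by auto
  have "A x \<subseteq> A k \<or> A k \<subseteq> A x" using insert.prems k(1) by auto
  then show ?case
  proof
    assume "A k \<subseteq> A x" then show ?thesis using k by auto
  next
    assume "A x \<subseteq> A k" then show ?thesis using k by (intro bexI[of _ x]) auto
  qed
qed

lemma card_notin_remove:
  assumes "finite I" "k \<in> I"
  shows "card {i \<in> I - {k}. a \<notin> A i} = card {i \<in> I. a \<notin> A i} - (if a \<notin> A k then 1 else 0)"
proof -
  have "{i \<in> I - {k}. a \<notin> A i} = {i \<in> I. a \<notin> A i} - {k}" by auto
  then show ?thesis using assms by (auto simp: card_Diff_singleton_if)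
qed

lemma match:
  assumes "finite I" "finite J" "card I = card J"
    "\<forall>i\<in>I. \<forall>j\<in>I. A i \<subseteq> A j \<or> A j \<subseteq> A i" "\<forall>i\<in>J. \<forall>j\<in>J. C i \<subseteq> C j \<or> C j \<subseteq> C i"
    "\<forall>i\<in>I. A i \<subseteq> K" "\<forall>j\<in>J. C j \<subseteq> K"
    "\<forall>a\<in>K. card {i\<in>I. a \<notin> A i} = card {j\<in>J. a \<notin> C j}"
  shows "\<exists>\<sigma>. bij_betw \<sigma> I J \<and> (\<forall>i\<in>I. A i = C (\<sigma> i))"
  using assms
proof (induction "card I" arbitrary: I J)
  case 0
  then have "I = {}" "J = {}" by auto
  then show ?case by (auto simp: bij_betw_def)
next
  case (Suc c)
  have In: "I \<noteq> {}" using Suc.hyps(2) by auto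
  have Jn: "J \<noteq> {}" using Suc.hyps(2) Suc.prems(3) by auto
  obtain k where k: "k \<in> I" "\<forall>i\<in>I. A k \<subseteq> A i" using chain_min[OF Suc.prems(1) In Suc.prems(4)] by blast
  obtain k' where k': "k' \<in> J" "\<forall>i\<in>J. C k' \<subseteq> C i" using chain_min[OF Suc.prems(2) Jn Suc.prems(5)] by blast
  have Ak: "A k = {a \<in> K. card {i\<in>I. a \<notin> A i} = 0}"
  proof (rule Set.set_eqI, rule iffI)
    fix a assume a: "a \<in> A k"
    then have e: "{i\<in>I. a \<notin> A i} = {}" using k by auto
    have "card {i\<in>I. a \<notin> A i} = 0" unfolding e by simp
    moreover have "a \<in> K" using a k(1) Suc.prems(6) by auto
    ultimately show "a \<in> {a \<in> K. card {i\<in>I. a \<notin> A i} = 0}" by simp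
  next
    fix a assume "a \<in> {a \<in> K. card {i\<in>I. a \<notin> A i} = 0}"
    then have "{i\<in>I. a \<notin> A i} = {}" using Suc.prems(1) by auto
    then show "a \<in> A k" using k by auto
  qed
  have Ck: "C k' = {a \<in> K. card {j\<in>J. a \<notin> C j} = 0}"
  proof (rule Set.set_eqI, rule iffI)
    fix a assume a: "a \<in> C k'"
    then have e: "{j\<in>J. a \<notin> C j} = {}" using k' by auto
    have "card {j\<in>J. a \<notin> C j} = 0" unfolding e by simp
    moreover have "a \<in> K" using a k'(1) Suc.prems(7) by auto
    ultimately show "a \<in> {a \<in> K. card {j\<in>J. a \<notin> C j} = 0}" by simp
  next
    fix a assume "a \<in> {a \<in> K. card {j\<in>J. a \<notin> C j} = 0}"
    then have "{j\<in>J. a \<notin> C j} = {}" using Suc.prems(2) by auto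
    then show "a \<in> C k'" using k' by auto
  qed
  have AC: "A k = C k'" unfolding Ak Ck using Suc.prems(8) by auto
  have "\<exists>\<sigma>. bij_betw \<sigma> (I - {k}) (J - {k'}) \<and> (\<forall>i\<in>I - {k}. A i = C (\<sigma> i))"
  proof (rule Suc.hyps(1))
    show "c = card (I - {k})" using Suc.hyps(2) k(1) Suc.prems(1) by simp
    show "finite (I - {k})" "finite (J - {k'})" using Suc.prems by auto
    show "card (I - {k}) = card (J - {k'})" using Suc.prems(1,2,3) k(1) k'(1) by simp
    show "\<forall>i\<in>I - {k}. \<forall>j\<in>I - {k}. A i \<subseteq> A j \<or> A j \<subseteq> A i" using Suc.prems(4) by auto
    show "\<forall>i\<in>J - {k'}. \<forall>j\<in>J - {k'}. C i \<subseteq> C j \<or> C j \<subseteq> C i" using Suc.prems(5) by auto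
    show "\<forall>i\<in>I - {k}. A i \<subseteq> K" "\<forall>j\<in>J - {k'}. C j \<subseteq> K" using Suc.prems(6,7) by auto
    show "\<forall>a\<in>K. card {i \<in> I - {k}. a \<notin> A i} = card {j \<in> J - {k'}. a \<notin> C j}"
    proof
      fix a assume a: "a \<in> K"
      have "card {i \<in> I - {k}. a \<notin> A i} = card {i \<in> I. a \<notin> A i} - (if a \<notin> A k then 1 else 0)"
        by (rule card_notin_remove[OF Suc.prems(1) k(1)])
      also have "\<dots> = card {j \<in> J. a \<notin> C j} - (if a \<notin> C k' then 1 else 0)"
        using Suc.prems(8) a AC by simp
      also have "\<dots> = card {j \<in> J - {k'}. a \<notin> C j}"
        by (rule card_notin_remove[OF Suc.prems(2) k'(1), symmetric])
      finally show "card {i \<in> I - {k}. a \<notin> A i} = card {j \<in> J - {k'}. a \<notin> C j}" .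
    qed
  qed
  then obtain \<sigma> where s: "bij_betw \<sigma> (I - {k}) (J - {k'})" "\<forall>i\<in>I - {k}. A i = C (\<sigma> i)" by blast
  define \<tau> where "\<tau> = \<sigma>(k := k')"
  have "bij_betw \<tau> (I - {k}) (J - {k'})"
    using s(1) unfolding \<tau>_def by (rule bij_betw_cong[THEN iffD1, rotated]) auto
  moreover have "bij_betw \<tau> {k} {k'}" unfolding \<tau>_def by (simp add: bij_betw_def)
  ultimately have "bij_betw \<tau> ((I - {k}) \<union> {k}) ((J - {k'}) \<union> {k'})"
    by (rule bij_betw_combine) auto
  moreover have "(I - {k}) \<union> {k} = I" "(J - {k'}) \<union> {k'} = J" using k(1) k'(1) by auto
  ultimately have "bij_betw \<tau> I J" by simp
  moreover have "\<forall>i\<in>I. A i = C (\<tau> i)" using s(2) AC unfolding \<tau>_def by auto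
  ultimately show ?case by blast
qed


context mymod
begin

lemma colon_ideal:
  assumes A: "ideal A R" and a: "a \<in> carrier R"
  shows "ideal {r \<in> carrier R. r \<otimes> a \<in> A} R"
proof -
  interpret A: ideal A R by fact
  show ?thesis
  proof (rule idealI)
    show "ring R" by (rule ring_axioms)
    show "subgroup {r \<in> carrier R. r \<otimes> a \<in> A} (add_monoid R)"
    proof
      show "{r \<in> carrier R. r \<otimes> a \<in> A} \<subseteq> carrier (add_monoid R)" by auto
      show "\<one>\<^bsub>add_monoid R\<^esub> \<in> {r \<in> carrier R. r \<otimes> a \<in> A}" using a A.zero_closed by simp
      fix x y assume x: "x \<in> {r \<in> carrier R. r \<otimes> a \<in> A}" and y: "y \<in> {r \<in> carrier R. r \<otimes> a \<in> A}"
      have "(x \<oplus> y) \<otimes> a = x \<otimes> a \<oplus> y \<otimes> a" using x y a by (simp add: l_distr)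
      then show "x \<otimes>\<^bsub>add_monoid R\<^esub> y \<in> {r \<in> carrier R. r \<otimes> a \<in> A}" using x y A.a_closed by simp
    next
      fix x assume x: "x \<in> {r \<in> carrier R. r \<otimes> a \<in> A}"
      have "inv\<^bsub>add_monoid R\<^esub> x = \<ominus> x" by (simp add: a_inv_def)
      moreover have "(\<ominus> x) \<otimes> a = \<ominus> (x \<otimes> a)" using x a by (simp add: l_minus)
      ultimately show "inv\<^bsub>add_monoid R\<^esub> x \<in> {r \<in> carrier R. r \<otimes> a \<in> A}" using x A.a_inv_closed by simp
    qed
  next
    fix x r assume x: "x \<in> {r \<in> carrier R. r \<otimes> a \<in> A}" and r: "r \<in> carrier R"
    have "(r \<otimes> x) \<otimes> a = r \<otimes> (x \<otimes> a)" using x r a by (simp add: m_assoc)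
    then show "r \<otimes> x \<in> {r \<in> carrier R. r \<otimes> a \<in> A}" using x r A.I_l_closed by simp
    have "(x \<otimes> r) \<otimes> a = r \<otimes> (x \<otimes> a)" using x r a by (simp add: m_ac)
    then show "x \<otimes> r \<in> {r \<in> carrier R. r \<otimes> a \<in> A}" using x r A.I_l_closed by simp
  qed
qed

lemma ann_ideal:
  assumes N: "submodule N R M" and g: "g \<in> carrier M"
  shows "ideal {r \<in> carrier R. r \<odot>\<^bsub>M\<^esub> g \<in> N} R"
proof (rule idealI)
  show "ring R" by (rule ring_axioms)
  show "subgroup {r \<in> carrier R. r \<odot>\<^bsub>M\<^esub> g \<in> N} (add_monoid R)"
  proof
    show "{r \<in> carrier R. r \<odot>\<^bsub>M\<^esub> g \<in> N} \<subseteq> carrier (add_monoid R)" by auto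
    show "\<one>\<^bsub>add_monoid R\<^esub> \<in> {r \<in> carrier R. r \<odot>\<^bsub>M\<^esub> g \<in> N}" using g subm(2)[OF N] by simp
    fix x y assume x: "x \<in> {r \<in> carrier R. r \<odot>\<^bsub>M\<^esub> g \<in> N}" and y: "y \<in> {r \<in> carrier R. r \<odot>\<^bsub>M\<^esub> g \<in> N}"
    have "(x \<oplus> y) \<odot>\<^bsub>M\<^esub> g = x \<odot>\<^bsub>M\<^esub> g \<oplus>\<^bsub>M\<^esub> y \<odot>\<^bsub>M\<^esub> g" using x y g by (simp add: smult_l_distr)
    then show "x \<otimes>\<^bsub>add_monoid R\<^esub> y \<in> {r \<in> carrier R. r \<odot>\<^bsub>M\<^esub> g \<in> N}" using x y subm(5)[OF N] by simp
  next
    fix x assume x: "x \<in> {r \<in> carrier R. r \<odot>\<^bsub>M\<^esub> g \<in> N}"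
    have "inv\<^bsub>add_monoid R\<^esub> x = \<ominus> x" by (simp add: a_inv_def)
    moreover have "(\<ominus> x) \<odot>\<^bsub>M\<^esub> g = \<ominus>\<^bsub>M\<^esub> (x \<odot>\<^bsub>M\<^esub> g)" using x g by (simp add: smult_l_minus)
    ultimately show "inv\<^bsub>add_monoid R\<^esub> x \<in> {r \<in> carrier R. r \<odot>\<^bsub>M\<^esub> g \<in> N}" using x subm(3)[OF N] by simp
  qed
next
  fix x r assume x: "x \<in> {r \<in> carrier R. r \<odot>\<^bsub>M\<^esub> g \<in> N}" and r: "r \<in> carrier R"
  have "(r \<otimes> x) \<odot>\<^bsub>M\<^esub> g = r \<odot>\<^bsub>M\<^esub> (x \<odot>\<^bsub>M\<^esub> g)" using x r g by (simp add: smult_assoc1)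
  then show "r \<otimes> x \<in> {r \<in> carrier R. r \<odot>\<^bsub>M\<^esub> g \<in> N}" using x r subm(4)[OF N] by simp
  have "(x \<otimes> r) \<odot>\<^bsub>M\<^esub> g = r \<odot>\<^bsub>M\<^esub> (x \<odot>\<^bsub>M\<^esub> g)" using x r g by (simp add: smult_assoc1 m_comm)
  then show "x \<otimes> r \<in> {r \<in> carrier R. r \<odot>\<^bsub>M\<^esub> g \<in> N}" using x r subm(4)[OF N] by simp
qed

lemma notin_le:
  fixes A C :: "nat \<Rightarrow> 'r set" and n m :: nat
  assumes chA: "\<forall>i\<in>{1..n}. \<forall>j\<in>{1..n}. A i \<subseteq> A j \<or> A j \<subseteq> A i"
    and idA: "\<forall>i\<in>{1..n}. ideal (A i) R"
    and cntEq: "\<And>P. maximalideal P R \<Longrightarrow>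
       card {i\<in>{1..n}. \<forall>r\<in>carrier R. r \<otimes> a \<in> A i \<longrightarrow> r \<in> P} = card {j\<in>{1..m}. \<forall>r\<in>carrier R. r \<otimes> a \<in> C j \<longrightarrow> r \<in> P}"
    and a: "a \<in> carrier R"
  shows "card {i\<in>{1..n}. a \<notin> A i} \<le> card {j\<in>{1..m}. a \<notin> C j}"
proof (cases "{i\<in>{1..n}. a \<notin> A i} = {}")
  case True
  then have "card {i\<in>{1..n}. a \<notin> A i} = 0" by (simp only: card.empty)
  then show ?thesis by linarith
next
  case False
  let ?S = "{i\<in>{1..n}. a \<notin> A i}"
  have chS: "\<forall>i\<in>?S. \<forall>j\<in>?S. A i \<subseteq> A j \<or> A j \<subseteq> A i" using chA by auto
  have finS: "finite ?S" by (rule finite_subset[of _ "{1..n}"]) auto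
  obtain k where k: "k \<in> ?S" "\<forall>i\<in>?S. A i \<subseteq> A k" using chain_max[OF finS False chS] by blast
  have idk: "ideal (A k) R" using idA k(1) by auto
  let ?B = "{r \<in> carrier R. r \<otimes> a \<in> A k}"
  have B: "ideal ?B R" using colon_ideal[OF idk a] .
  have oneB: "\<one> \<notin> ?B" using k(1) a by simp
  obtain P where P: "maximalideal P R" "?B \<subseteq> P" using krull[OF B oneB] by blast
  have oneP: "\<one> \<notin> P"
    using P(1) maximalideal.I_notcarr ideal.one_imp_carrier maximalideal.axioms(1) by metis
  have "?S = {i\<in>{1..n}. \<forall>r\<in>carrier R. r \<otimes> a \<in> A i \<longrightarrow> r \<in> P}"
  proof (rule Set.set_eqI, rule iffI)
    fix i assume i: "i \<in> ?S"
    then have "A i \<subseteq> A k" using k by auto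
    then show "i \<in> {i\<in>{1..n}. \<forall>r\<in>carrier R. r \<otimes> a \<in> A i \<longrightarrow> r \<in> P}" using i P(2) by auto
  next
    fix i assume i: "i \<in> {i\<in>{1..n}. \<forall>r\<in>carrier R. r \<otimes> a \<in> A i \<longrightarrow> r \<in> P}"
    then have "a \<notin> A i" using oneP a by (metis (no_types, lifting) R.one_closed l_one mem_Collect_eq)
    then show "i \<in> ?S" using i by auto
  qed
  then have "card ?S = card {j\<in>{1..m}. \<forall>r\<in>carrier R. r \<otimes> a \<in> C j \<longrightarrow> r \<in> P}" using cntEq[OF P(1)] by simp
  also have "\<dots> \<le> card {j\<in>{1..m}. a \<notin> C j}"
  proof (rule card_mono)
    show "finite {j\<in>{1..m}. a \<notin> C j}" by simp
    show "{j\<in>{1..m}. \<forall>r\<in>carrier R. r \<otimes> a \<in> C j \<longrightarrow> r \<in> P} \<subseteq> {j\<in>{1..m}. a \<notin> C j}"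
    proof
      fix j assume j: "j \<in> {j\<in>{1..m}. \<forall>r\<in>carrier R. r \<otimes> a \<in> C j \<longrightarrow> r \<in> P}"
      have "a \<notin> C j"
      proof
        assume "a \<in> C j"
        then have "\<one> \<otimes> a \<in> C j" using a by simp
        then have "\<one> \<in> P" using j by blast
        then show False using oneP by simp
      qed
      then show "j \<in> {j\<in>{1..m}. a \<notin> C j}" using j by blast
    qed
  qed
  finally show ?thesis .
qed

end

theorem theorem1p5:
  fixes R :: "'r ring" and M :: "('r, 'a) module"
    and n m :: nat and Ms Ns :: "nat \<Rightarrow> 'a set"
  assumes "cring R" and "arithmetic R"
    and "module R M" and "fin_gen R M"
    and "pc_series R M n Ms" and "\<forall>i\<in>{1..n}. cyclic_mod R (factor R M Ms i)"
    and "ann_tot_ordered R M n Ms"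
    and "pc_series R M m Ns" and "\<forall>j\<in>{1..m}. cyclic_mod R (factor R M Ns j)"
    and "ann_tot_ordered R M m Ns"
  shows "series_iso R M n Ms m Ns"
proof -
  interpret mymod R M by (rule mymodI) (rule assms(3))
  have "\<forall>i\<in>{1..n}. \<exists>g. g \<in> Ms i \<and> g \<notin> Ms (i - 1) \<and> Ms i = msum M (Ms (i - 1)) (cyc R M g) \<and>
     ann R (factor R M Ms i) = {r \<in> carrier R. r \<odot>\<^bsub>M\<^esub> g \<in> Ms (i - 1)} \<and>
     carrier (factor R M Ms i) = {cs M (Ms (i - 1)) (r \<odot>\<^bsub>M\<^esub> g) | r. r \<in> carrier R}"
    using factor_gen[OF assms(5)] assms(6) by blast
  from bchoice[OF this] obtain gs where gs: "\<forall>i\<in>{1..n}. gs i \<in> Ms i \<and> gs i \<notin> Ms (i - 1) \<and> Ms i = msum M (Ms (i - 1)) (cyc R M (gs i)) \<and>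
     ann R (factor R M Ms i) = {r \<in> carrier R. r \<odot>\<^bsub>M\<^esub> gs i \<in> Ms (i - 1)} \<and>
     carrier (factor R M Ms i) = {cs M (Ms (i - 1)) (r \<odot>\<^bsub>M\<^esub> gs i) | r. r \<in> carrier R}" by blast
  have "\<forall>i\<in>{1..m}. \<exists>g. g \<in> Ns i \<and> g \<notin> Ns (i - 1) \<and> Ns i = msum M (Ns (i - 1)) (cyc R M g) \<and>
     ann R (factor R M Ns i) = {r \<in> carrier R. r \<odot>\<^bsub>M\<^esub> g \<in> Ns (i - 1)} \<and>
     carrier (factor R M Ns i) = {cs M (Ns (i - 1)) (r \<odot>\<^bsub>M\<^esub> g) | r. r \<in> carrier R}"
    using factor_gen[OF assms(8)] assms(9) by blast
  from bchoice[OF this] obtain hs where hs: "\<forall>i\<in>{1..m}. hs i \<in> Ns i \<and> hs i \<notin> Ns (i - 1) \<and> Ns i = msum M (Ns (i - 1)) (cyc R M (hs i)) \<and>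
     ann R (factor R M Ns i) = {r \<in> carrier R. r \<odot>\<^bsub>M\<^esub> hs i \<in> Ns (i - 1)} \<and>
     carrier (factor R M Ns i) = {cs M (Ns (i - 1)) (r \<odot>\<^bsub>M\<^esub> hs i) | r. r \<in> carrier R}" by blast
  define A where "A i = ann R (factor R M Ms i)" for i
  define C where "C i = ann R (factor R M Ns i)" for i
  have subMs: "\<And>i. i \<le> n \<Longrightarrow> submodule (Ms i) R M" using assms(5) unfolding pc_series_def pure_sub_def by auto
  have subNs: "\<And>i. i \<le> m \<Longrightarrow> submodule (Ns i) R M" using assms(8) unfolding pc_series_def pure_sub_def by auto
  have gsc: "\<And>i. i \<in> {1..n} \<Longrightarrow> gs i \<in> carrier M" using gs subMs subm(1) by fastforce
  have hsc: "\<And>i. i \<in> {1..m} \<Longrightarrow> hs i \<in> carrier M" using hs subNs subm(1) by fastforce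
  have gens: "\<forall>i\<in>{1..n}. gs i \<in> carrier M \<and> Ms i = msum M (Ms (i - 1)) (cyc R M (gs i))" using gs gsc by blast
  have hens: "\<forall>i\<in>{1..m}. hs i \<in> carrier M \<and> Ns i = msum M (Ns (i - 1)) (cyc R M (hs i))" using hs hsc by blast
  have Aeq: "\<And>i. i \<in> {1..n} \<Longrightarrow> A i = {r \<in> carrier R. r \<odot>\<^bsub>M\<^esub> gs i \<in> Ms (i - 1)}" unfolding A_def using gs by blast
  have Ceq: "\<And>i. i \<in> {1..m} \<Longrightarrow> C i = {r \<in> carrier R. r \<odot>\<^bsub>M\<^esub> hs i \<in> Ns (i - 1)}" unfolding C_def using hs by blast
  have idA: "\<forall>i\<in>{1..n}. ideal (A i) R"
  proof
    fix i assume i: "i \<in> {1..n}"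
    then show "ideal (A i) R" using Aeq[OF i] ann_ideal[OF subMs gsc[OF i], of "i - 1"] by auto
  qed
  have idC: "\<forall>i\<in>{1..m}. ideal (C i) R"
  proof
    fix i assume i: "i \<in> {1..m}"
    then show "ideal (C i) R" using Ceq[OF i] ann_ideal[OF subNs hsc[OF i], of "i - 1"] by auto
  qed
  have chA: "\<forall>i\<in>{1..n}. \<forall>j\<in>{1..n}. A i \<subseteq> A j \<or> A j \<subseteq> A i"
    using assms(7) unfolding ann_tot_ordered_def A_def by blast
  have chC: "\<forall>i\<in>{1..m}. \<forall>j\<in>{1..m}. C i \<subseteq> C j \<or> C j \<subseteq> C i"
    using assms(10) unfolding ann_tot_ordered_def C_def by blast
  have cntEq: "card {i\<in>{1..n}. \<forall>r\<in>carrier R. r \<otimes>\<^bsub>R\<^esub> a \<in> A i \<longrightarrow> r \<in> P} = card {j\<in>{1..m}. \<forall>r\<in>carrier R. r \<otimes>\<^bsub>R\<^esub> a \<in> C j \<longrightarrow> r \<in> P}"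
    if P: "maximalideal P R" and a: "a \<in> carrier R" for P a
  proof -
    have e1: "{i\<in>{1..n}. \<forall>r\<in>carrier R. r \<otimes>\<^bsub>R\<^esub> a \<in> A i \<longrightarrow> r \<in> P} = {i\<in>{1..n}. \<forall>r\<in>carrier R. (r \<otimes>\<^bsub>R\<^esub> a) \<odot>\<^bsub>M\<^esub> gs i \<in> Ms (i - 1) \<longrightarrow> r \<in> P}"
      using Aeq a by auto
    have e2: "{i\<in>{1..m}. \<forall>r\<in>carrier R. r \<otimes>\<^bsub>R\<^esub> a \<in> C i \<longrightarrow> r \<in> P} = {i\<in>{1..m}. \<forall>r\<in>carrier R. (r \<otimes>\<^bsub>R\<^esub> a) \<odot>\<^bsub>M\<^esub> hs i \<in> Ns (i - 1) \<longrightarrow> r \<in> P}"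
      using Ceq a by auto
    show ?thesis unfolding e1 e2 by (rule counts_eq[OF assms(5) gens assms(8) hens P a])
  qed
  have notin: "\<forall>a\<in>carrier R. card {i\<in>{1..n}. a \<notin> A i} = card {j\<in>{1..m}. a \<notin> C j}"
  proof
    fix a assume a: "a \<in> carrier R"
    have "card {i\<in>{1..n}. a \<notin> A i} \<le> card {j\<in>{1..m}. a \<notin> C j}"
      by (rule notin_le[OF chA idA cntEq a]) (use a in auto)
    moreover have "card {j\<in>{1..m}. a \<notin> C j} \<le> card {i\<in>{1..n}. a \<notin> A i}"
      by (rule notin_le[OF chC idC cntEq[symmetric] a]) (use a in auto)
    ultimately show "card {i\<in>{1..n}. a \<notin> A i} = card {j\<in>{1..m}. a \<notin> C j}" by simp
  qed
  have oneA: "{i\<in>{1..n}. \<one>\<^bsub>R\<^esub> \<notin> A i} = {1..n}"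
  proof -
    have "\<one>\<^bsub>R\<^esub> \<notin> A i" if i: "i \<in> {1..n}" for i
      using Aeq[OF i] gs i gsc[OF i] by auto
    then show ?thesis by auto
  qed
  have oneC: "{i\<in>{1..m}. \<one>\<^bsub>R\<^esub> \<notin> C i} = {1..m}"
  proof -
    have "\<one>\<^bsub>R\<^esub> \<notin> C i" if i: "i \<in> {1..m}" for i
      using Ceq[OF i] hs i hsc[OF i] by auto
    then show ?thesis by auto
  qed
  have nm: "n = m" using notin oneA oneC by (metis R.one_closed card_atLeastAtMost diff_Suc_1)
  have "\<exists>\<sigma>. bij_betw \<sigma> {1..n} {1..m} \<and> (\<forall>i\<in>{1..n}. A i = C (\<sigma> i))"
  proof (rule match[where K="carrier R"])
    show "finite {1..n}" "finite {1..m}" "card {1..n} = card {1..m}" using nm by auto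
    show "\<forall>i\<in>{1..n}. \<forall>j\<in>{1..n}. A i \<subseteq> A j \<or> A j \<subseteq> A i" by (rule chA)
    show "\<forall>i\<in>{1..m}. \<forall>j\<in>{1..m}. C i \<subseteq> C j \<or> C j \<subseteq> C i" by (rule chC)
    show "\<forall>i\<in>{1..n}. A i \<subseteq> carrier R" "\<forall>j\<in>{1..m}. C j \<subseteq> carrier R"
      unfolding A_def C_def ann_def by auto
    show "\<forall>a\<in>carrier R. card {i\<in>{1..n}. a \<notin> A i} = card {j\<in>{1..m}. a \<notin> C j}" by (rule notin)
  qed
  then obtain \<sigma> where s: "bij_betw \<sigma> {1..n} {1..m}" "\<forall>i\<in>{1..n}. A i = C (\<sigma> i)" by blast
  show ?thesis
    unfolding series_iso_def
  proof (intro exI conjI ballI)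
    show "bij_betw \<sigma> {1..n} {1..m}" by (rule s(1))
    fix i assume i: "i \<in> {1..n}"
    have j: "\<sigma> i \<in> {1..m}" using bij_betw_apply[OF s(1) i] .
    have N1: "submodule (Ms (i - 1)) R M" using subMs i by auto
    have N2: "submodule (Ns (\<sigma> i - 1)) R M" using subNs j by auto
    have car1: "carrier (quot_mod R (M\<lparr>carrier := Ms i\<rparr>) (Ms (i - 1))) = {cs M (Ms (i - 1)) (r \<odot>\<^bsub>M\<^esub> gs i) | r. r \<in> carrier R}"
      using gs i unfolding factor_def by blast
    have car2: "carrier (quot_mod R (M\<lparr>carrier := Ns (\<sigma> i)\<rparr>) (Ns (\<sigma> i - 1))) = {cs M (Ns (\<sigma> i - 1)) (r \<odot>\<^bsub>M\<^esub> hs (\<sigma> i)) | r. r \<in> carrier R}"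
      using hs j unfolding factor_def by blast
    have AA: "{r \<in> carrier R. r \<odot>\<^bsub>M\<^esub> gs i \<in> Ms (i - 1)} = {r \<in> carrier R. r \<odot>\<^bsub>M\<^esub> hs (\<sigma> i) \<in> Ns (\<sigma> i - 1)}"
      using Aeq[OF i] Ceq[OF j] s(2) i by auto
    show "mod_iso R (factor R M Ms i) (factor R M Ns (\<sigma> i))"
      unfolding factor_def by (rule factor_iso[OF N1 gsc[OF i] car1 N2 hsc[OF j] car2 AA])
  qed
qed


end
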